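(* There is a unique linear map $\Delta:\mathcal{A}\to\mathcal{A}\otimes\mathcal{A}$ such that $(\mathcal{A},*,|,\Delta,\varepsilon)$ is a graded connected bialgebra (grading $\mathcal A_n=\mathbb K T_n$) and $\Delta(x\ltimes y)=\Delta(x)\ltimes\Delta(y)$ for all $x,y\in\mathcal{A}^+$ and $\ltimes\in\{\prec,\cdot,\succ\}$ (products on the right computed in $\mathcal A\overline\otimes\mathcal A$). It is given by $\Delta(|)=|\otimes|$ and, for every tree $t\neq|$, $$\Delta(t)=\sum_{c\text{ admissible cut of }t}G^c(t)\otimes P^c(t).$$
   Context: A tridendriform algebra over a field $\mathbb{K}$ is a vector space with products $\prec,\cdot,\succ$ such that, with $a*b=a\prec b+a\cdot b+a\succ b$: $(a\prec b)\prec c=a\prec(b*c)$, $(a\succ b)\prec c=a\succ(b\prec c)$, $(a*b)\succ c=a\succ(b\succ c)$, $(a\succ b)\cdot c=a\succ(b\cdot c)$, $(a\prec b)\cdot c=a\cdot(b\succ c)$, $(a\cdot b)\prec c=a\cdot(b\prec c)$, $(a\cdot b)\cdot c=a\cdot(b\cdot c)$. Trees: planar rooted trees in which every internal vertex has at least two children; the root vertex hangs from a trunk edge; leaves are edges without upper vertex. $|$ is the tree with one leaf and no internal vertex. $T_n$ = trees with $n+1$ leaves, $\mathcal{A}=\bigoplus_{n\ge0}\mathbb{K}T_n$, $\mathcal{A}^+=\bigoplus_{n\ge1}\mathbb{K}T_n$. For trees $x_0,\dots,x_k$ ($k\ge1$), $x_0\vee\cdots\vee x_k$ grafts them left to right on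 a new root vertex; each tree $x\ne|$ is uniquely $x^{(0)}\vee\cdots\vee x^{(k)}$. $Y=|\vee|$. Recursively: $x\prec y=x^{(0)}\vee\cdots\vee x^{(k-1)}\vee(x^{(k)}*y)$, $x\cdot y=x^{(0)}\vee\cdots\vee x^{(k-1)}\vee(x^{(k)}*y^{(0)})\vee y^{(1)}\vee\cdots\vee y^{(l)}$, $x\succ y=(x*y^{(0)})\vee y^{(1)}\vee\cdots\vee y^{(l)}$ for $x=x^{(0)}\vee\cdots\vee x^{(k)}$, $y=y^{(0)}\vee\cdots\vee y^{(l)}$, with $*=\prec+\cdot+\succ$ and $|*z=z*|=z$. $\mathcal A^+$ is the free tridendriform algebra on $Y$; $\mathcal A$ is its augmentation: $|$ is the unit of $*$ and for $a\in\mathcal A^+$: $|\prec a=0$, $a\prec|=a$, $|\succ a=a$, $a\succ|=0$, $|\cdot a=a\cdot|=0$. $\varepsilon:\mathcal A\to\mathbb K$ is $\varepsilon(|)=1$, $\varepsilon(\mathcal A^+)=0$. $\mathcal A\overline{\otimes}\mathcal A:=(\mathcal A^+\otimes\mathcal A^+)\oplus(\mathbb K|\otimes\mathcal A^+)\oplus(\mathcal A^+\otimes\mathbb K|)$ with products: $(a\otimes|)\ltimes(c\otimes|)=(a\ltimes c)\otimes|$, and $(a\otimes b)\ltimes(c\otimes d)=(a*c)\otimes(b\ltimes d)$ when $b,d$ are not both $|$. Cuts: an internal edge of a tree is an edge joining two internal vertices. A cut of $t$ is a nonempty set of internal edges; in addition there are the empty cut and the total cut (cutting the trunk below the root). A cut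 is admissible if every path from the root to a leaf meets at most one chosen edge; the empty and total cuts are admissible. For an admissible cut $c$ other than empty and total, removing the chosen edges yields $P^c(t)$, the component containing the root, and trees $G^c_1(t),\dots,G^c_m(t)$ ordered from left to right; $G^c(t)=G^c_1(t)*\cdots*G^c_m(t)$. For the empty cut $P^c(t)=t$, $G^c(t)=|$; for the total cut $P^c(t)=|$, $G^c(t)=t$. *)

theory Defs
  imports Main "HOL-Library.Poly_Mapping"
begin

text \<open>Leaf is the tree with one leaf and no internal vertex. Node ts is the grafting
  of the list ts (left to right) on a new root vertex.\<close>
datatype tree = Leaf | Node "tree list"

fun valid :: "tree \<Rightarrow> bool" where
  "valid Leaf = True"
| "valid (Node ts) = (2 \<le> length ts \<and> (\<forall>s\<in>set ts. valid s))"

fun leaves :: "tree \<Rightarrow> nat" where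
  "leaves Leaf = 1"
| "leaves (Node ts) = sum_list (map leaves ts)"

text \<open>degree: a tree in T_n has n+1 leaves\<close>
definition deg :: "tree \<Rightarrow> nat" where
  "deg t = leaves t - 1"

type_synonym 'k vec = "tree \<Rightarrow>\<^sub>0 'k"
type_synonym 'k vec2 = "(tree \<times> tree) \<Rightarrow>\<^sub>0 'k"

definition scale :: "'k::field \<Rightarrow> ('a \<Rightarrow>\<^sub>0 'k) \<Rightarrow> ('a \<Rightarrow>\<^sub>0 'k)" where
  "scale c p = Poly_Mapping.map (\<lambda>v. c * v) p"

definition tvec :: "tree \<Rightarrow> 'k::field vec" where
  "tvec t = Poly_Mapping.single t 1"

definition Aspace :: "'k::field vec set" where
  "Aspace = {a. Poly_Mapping.keys a \<subseteq> {t. valid t}}"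

definition Aplus :: "'k::field vec set" where
  "Aplus = {a. Poly_Mapping.keys a \<subseteq> {t. valid t \<and> t \<noteq> Leaf}}"

definition A2space :: "'k::field vec2 set" where
  "A2space = {p. Poly_Mapping.keys p \<subseteq> {(s, t). valid s \<and> valid t}}"

definition unitA :: "'k::field vec" where
  "unitA = tvec Leaf"

definition eps :: "'k::field vec \<Rightarrow> 'k" where
  "eps a = Poly_Mapping.lookup a Leaf"

definition tens :: "('a \<Rightarrow>\<^sub>0 'k::field) \<Rightarrow> ('b \<Rightarrow>\<^sub>0 'k) \<Rightarrow> ('a \<times> 'b \<Rightarrow>\<^sub>0 'k)" where
  "tens a b = (\<Sum>s\<in>Poly_Mapping.keys a. \<Sum>t\<in>Poly_Mapping.keys b. Poly_Mapping.single (s, t) (Poly_Mapping.lookup a s * Poly_Mapping.lookup b t))"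

fun lcomb :: "'k::field vec list \<Rightarrow> (tree list \<Rightarrow>\<^sub>0 'k)" where
  "lcomb [] = Poly_Mapping.single [] 1"
| "lcomb (a # as) = (\<Sum>t\<in>Poly_Mapping.keys a. \<Sum>ts\<in>Poly_Mapping.keys (lcomb as).
      Poly_Mapping.single (t # ts) (Poly_Mapping.lookup a t * Poly_Mapping.lookup (lcomb as) ts))"

definition graft :: "'k::field vec list \<Rightarrow> 'k vec" where
  "graft as = (\<Sum>ts\<in>Poly_Mapping.keys (lcomb as). Poly_Mapping.single (Node ts) (Poly_Mapping.lookup (lcomb as) ts))"

text \<open>Operation code: 0 = prec, 1 = dot (middle product), 2 = succ, 3 = star
  (the associative product, star = prec + dot + succ), including the augmentation
  conventions for the tree Leaf. The products Leaf prec Leaf, Leaf dot Leaf,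
  Leaf succ Leaf are not defined in the paper; they are set to 0 here and are never used.\<close>

lemma size_nth_less: "i < length ts \<Longrightarrow> size (ts ! i) < Suc (size_list size ts)"
  by (meson le_imp_less_Suc nth_mem size_list_estimation' order_refl)

lemma size_last_less: "ts \<noteq> [] \<Longrightarrow> size (last ts) < Suc (size_list size ts)"
  by (meson last_in_set le_imp_less_Suc size_list_estimation' order_refl)

lemma size_hd_less: "ts \<noteq> [] \<Longrightarrow> size (hd ts) < Suc (size_list size ts)"
  by (meson hd_in_set le_imp_less_Suc size_list_estimation' order_refl)

lemma size_last_hd_less: "xs \<noteq> [] \<Longrightarrow> ys \<noteq> [] \<Longrightarrow>
  size (last xs) + size (hd ys) < Suc (Suc (size_list size xs + size_list size ys))"
  using size_last_less[of xs] size_hd_less[of ys] by linarith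

function tp :: "nat \<Rightarrow> tree \<Rightarrow> tree \<Rightarrow> 'k::field vec" where
  "tp op x y =
    (if op = 3 then
       (if x = Leaf then tvec y else if y = Leaf then tvec x
        else tp 0 x y + tp 1 x y + tp 2 x y)
     else (case x of
       Leaf \<Rightarrow> (if y \<noteq> Leaf \<and> op = 2 then tvec y else 0)
     | Node xs \<Rightarrow> (case y of
         Leaf \<Rightarrow> (if op = 0 then tvec x else 0)
       | Node ys \<Rightarrow>
           (if xs = [] \<or> ys = [] then 0
            else if op = 0 then graft (map tvec (butlast xs) @ [tp 3 (last xs) y])
            else if op = 1 then graft (map tvec (butlast xs) @ [tp 3 (last xs) (hd ys)] @ map tvec (tl ys))
            else graft (tp 3 x (hd ys) # map tvec (tl ys))))))"
  by pat_completeness auto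
termination
  by (relation "measures [\<lambda>(op, x, y). size x + size y, \<lambda>(op, x, y). if op = 3 then 1 else 0]")
     (auto simp: size_last_less size_hd_less size_last_hd_less)

definition prodA :: "nat \<Rightarrow> 'k::field vec \<Rightarrow> 'k vec \<Rightarrow> 'k vec" where
  "prodA op a b = (\<Sum>s\<in>Poly_Mapping.keys a. \<Sum>t\<in>Poly_Mapping.keys b. scale (Poly_Mapping.lookup a s * Poly_Mapping.lookup b t) (tp op s t))"

abbreviation starA :: "'k::field vec \<Rightarrow> 'k vec \<Rightarrow> 'k vec" where
  "starA \<equiv> prodA 3"

text \<open>(a\<otimes>|) op (c\<otimes>|) = (a op c)\<otimes>|, and (a\<otimes>b) op (c\<otimes>d) = (a*c)\<otimes>(b op d) if b, d
  are not both |. Basis pairs outside A bar-tensor A (|\<otimes>|) are sent to 0 (never used).\<close>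
definition bar_basis :: "nat \<Rightarrow> tree \<times> tree \<Rightarrow> tree \<times> tree \<Rightarrow> 'k::field vec2" where
  "bar_basis op p q = (case (p, q) of ((a, b), (c, d)) \<Rightarrow>
     (if b = Leaf \<and> d = Leaf then
        (if a \<noteq> Leaf \<and> c \<noteq> Leaf then tens (tp op a c) unitA else 0)
      else tens (tp 3 a c) (tp op b d)))"

definition barprod :: "nat \<Rightarrow> 'k::field vec2 \<Rightarrow> 'k vec2 \<Rightarrow> 'k vec2" where
  "barprod op p q = (\<Sum>u\<in>Poly_Mapping.keys p. \<Sum>v\<in>Poly_Mapping.keys q. scale (Poly_Mapping.lookup p u * Poly_Mapping.lookup q v) (bar_basis op u v))"

definition prod2 :: "'k::field vec2 \<Rightarrow> 'k vec2 \<Rightarrow> 'k vec2" where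
  "prod2 p q = (\<Sum>(a, b)\<in>Poly_Mapping.keys p. \<Sum>(c, d)\<in>Poly_Mapping.keys q.
      scale (Poly_Mapping.lookup p (a, b) * Poly_Mapping.lookup q (c, d)) (tens (tp 3 a c) (tp 3 b d)))"

definition homog :: "nat \<Rightarrow> 'k::field vec \<Rightarrow> bool" where
  "homog n a \<longleftrightarrow> (\<forall>t\<in>Poly_Mapping.keys a. deg t = n)"

definition Delta_id :: "('k::field vec \<Rightarrow> 'k vec2) \<Rightarrow> 'k vec2 \<Rightarrow> ((tree \<times> tree) \<times> tree \<Rightarrow>\<^sub>0 'k)" where
  "Delta_id D p = (\<Sum>(s, t)\<in>Poly_Mapping.keys p. scale (Poly_Mapping.lookup p (s, t)) (tens (D (tvec s)) (tvec t)))"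

definition id_Delta :: "('k::field vec \<Rightarrow> 'k vec2) \<Rightarrow> 'k vec2 \<Rightarrow> (tree \<times> (tree \<times> tree) \<Rightarrow>\<^sub>0 'k)" where
  "id_Delta D p = (\<Sum>(s, t)\<in>Poly_Mapping.keys p. scale (Poly_Mapping.lookup p (s, t)) (tens (tvec s) (D (tvec t))))"

text \<open>(\<epsilon> \<otimes> id) and (id \<otimes> \<epsilon>), identifying K \<otimes> A and A \<otimes> K with A\<close>
definition eps_id :: "'k::field vec2 \<Rightarrow> 'k vec" where
  "eps_id p = (\<Sum>(s, t)\<in>Poly_Mapping.keys p. scale (Poly_Mapping.lookup p (s, t) * eps (tvec s)) (tvec t))"

definition id_eps :: "'k::field vec2 \<Rightarrow> 'k vec" where
  "id_eps p = (\<Sum>(s, t)\<in>Poly_Mapping.keys p. scale (Poly_Mapping.lookup p (s, t) * eps (tvec t)) (tvec s))"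

definition linear_A :: "('k::field vec \<Rightarrow> 'k vec2) \<Rightarrow> bool" where
  "linear_A D \<longleftrightarrow> (\<forall>a\<in>Aspace. D a \<in> A2space) \<and>
     (\<forall>a\<in>Aspace. \<forall>b\<in>Aspace. D (a + b) = D a + D b) \<and>
     (\<forall>a\<in>Aspace. \<forall>c. D (scale c a) = scale c (D a))"

definition graded_connected_bialgebra :: "('k::field vec \<Rightarrow> 'k vec2) \<Rightarrow> bool" where
  "graded_connected_bialgebra D \<longleftrightarrow>
     \<comment> \<open>associative unital algebra\<close>
     (\<forall>a\<in>(Aspace :: 'k vec set). \<forall>b\<in>(Aspace :: 'k vec set). \<forall>c\<in>(Aspace :: 'k vec set). starA (starA a b) c = starA a (starA b c)) \<and>
     (\<forall>a\<in>(Aspace :: 'k vec set). starA unitA a = a \<and> starA a unitA = a) \<and>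
     \<comment> \<open>coassociative counital coalgebra\<close>
     (\<forall>a\<in>(Aspace :: 'k vec set). \<forall>u v w. Poly_Mapping.lookup (Delta_id D (D a)) ((u, v), w) = Poly_Mapping.lookup (id_Delta D (D a)) (u, (v, w))) \<and>
     (\<forall>a\<in>(Aspace :: 'k vec set). eps_id (D a) = a \<and> id_eps (D a) = a) \<and>
     \<comment> \<open>compatibility: D and \<epsilon> are unital algebra morphisms\<close>
     (\<forall>a\<in>(Aspace :: 'k vec set). \<forall>b\<in>(Aspace :: 'k vec set). D (starA a b) = prod2 (D a) (D b)) \<and>
     D unitA = tens unitA unitA \<and>
     (\<forall>a\<in>(Aspace :: 'k vec set). \<forall>b\<in>(Aspace :: 'k vec set). eps (starA a b) = eps a * eps b) \<and>
     eps (unitA :: 'k vec) = 1 \<and>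
     \<comment> \<open>graded\<close>
     (\<forall>n m (a :: 'k vec) b. a \<in> (Aspace :: 'k vec set) \<longrightarrow> b \<in> (Aspace :: 'k vec set) \<longrightarrow> homog n a \<longrightarrow> homog m b \<longrightarrow> homog (n + m) (starA a b)) \<and>
     (\<forall>n a. a \<in> (Aspace :: 'k vec set) \<longrightarrow> homog n a \<longrightarrow> (\<forall>(s, t)\<in>Poly_Mapping.keys (D a). deg s + deg t = n)) \<and>
     (\<forall>n (a :: 'k vec). a \<in> (Aspace :: 'k vec set) \<longrightarrow> homog n a \<longrightarrow> 0 < n \<longrightarrow> eps a = 0) \<and>
     \<comment> \<open>connected: A_0 = K |\<close>
     {a \<in> (Aspace :: 'k vec set). homog 0 a} = range (\<lambda>c. scale c unitA)"

definition tridendriform_compatible :: "('k::field vec \<Rightarrow> 'k vec2) \<Rightarrow> bool" where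
  "tridendriform_compatible D \<longleftrightarrow>
     (\<forall>x\<in>Aplus. \<forall>y\<in>Aplus. \<forall>op < 3. D (prodA op x y) = barprod op (D x) (D y))"

fun valid_path :: "tree \<Rightarrow> nat list \<Rightarrow> bool" where
  "valid_path t [] = True"
| "valid_path Leaf (i # p) = False"
| "valid_path (Node ts) (i # p) = (i < length ts \<and> valid_path (ts ! i) p)"

fun subtree_at :: "tree \<Rightarrow> nat list \<Rightarrow> tree" where
  "subtree_at t [] = t"
| "subtree_at Leaf (i # p) = Leaf"
| "subtree_at (Node ts) (i # p) = (if i < length ts then subtree_at (ts ! i) p else Leaf)"

text \<open>Positions of internal vertices. The position p \<noteq> [] stands for the (internal) edge
  below the internal vertex at p; the position [] stands for the trunk (total cut).\<close>
definition ipos :: "tree \<Rightarrow> nat list set" where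
  "ipos t = {p. valid_path t p \<and> subtree_at t p \<noteq> Leaf}"

text \<open>admissible cuts: empty cut {}, total cut {[]}, and nonempty sets of internal edges
  such that each root-to-leaf path meets at most one of them (prefix antichains)\<close>
definition admissible_cuts :: "tree \<Rightarrow> nat list set set" where
  "admissible_cuts t = {C. C \<subseteq> ipos t \<and>
     (\<forall>p\<in>C. \<forall>q\<in>C. p \<noteq> q \<longrightarrow> \<not> (\<exists>r. q = p @ r))}"

function prune :: "nat list set \<Rightarrow> tree \<Rightarrow> tree" where
  "prune C t = (if [] \<in> C then Leaf else (case t of Leaf \<Rightarrow> Leaf
     | Node ts \<Rightarrow> Node (map (\<lambda>i. prune {p. i # p \<in> C} (ts ! i)) [0..<length ts])))"
  by pat_completeness auto
termination
  by (relation "measure (\<lambda>(C, t). size t)") (auto simp: size_nth_less)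

function forest :: "nat list set \<Rightarrow> tree \<Rightarrow> tree list" where
  "forest C t = (if [] \<in> C then [t] else (case t of Leaf \<Rightarrow> []
     | Node ts \<Rightarrow> concat (map (\<lambda>i. forest {p. i # p \<in> C} (ts ! i)) [0..<length ts])))"
  by pat_completeness auto
termination
  by (relation "measure (\<lambda>(C, t). size t)") (auto simp: size_nth_less)

text \<open>P^c(t): the part containing the root; each cut edge becomes a leaf of P^c(t)
  (and the trunk of the corresponding G^c_i(t)).\<close>
definition Pcut :: "nat list set \<Rightarrow> tree \<Rightarrow> tree" where
  "Pcut C t = prune C t"

text \<open>G^c(t) = G^c_1(t) * ... * G^c_m(t) (left to right), | for the empty cut\<close>
definition Gcut :: "nat list set \<Rightarrow> tree \<Rightarrow> 'k::field vec" where
  "Gcut C t = foldr (\<lambda>s acc. starA (tvec s) acc) (forest C t) unitA"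

definition Delta_tree :: "tree \<Rightarrow> 'k::field vec2" where
  "Delta_tree t = (if t = Leaf then tens unitA unitA
     else (\<Sum>C\<in>admissible_cuts t. tens (Gcut C t) (tvec (Pcut C t))))"

definition Delta_cut :: "'k::field vec \<Rightarrow> 'k vec2" where
  "Delta_cut a = (\<Sum>t\<in>Poly_Mapping.keys a. scale (Poly_Mapping.lookup a t) (Delta_tree t))"

end

theory Submission
  imports Defs
begin

lemma lookup_scale [simp]: "Poly_Mapping.lookup (scale c p) x = c * Poly_Mapping.lookup p x"
  unfolding scale_def by transfer (simp add: when_def)

lemma scale_add_right: "scale c (p + q) = scale c p + scale c q"
  by (rule poly_mapping_eqI) (simp add: lookup_add algebra_simps)

lemma scale_add_left: "scale (c + d) p = scale c p + scale d p"
  by (rule poly_mapping_eqI) (simp add: lookup_add algebra_simps)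

lemma scale_scale [simp]: "scale c (scale d p) = scale (c * d) p"
  by (rule poly_mapping_eqI) (simp add: algebra_simps)

lemma scale_one [simp]: "scale 1 p = p"
  by (rule poly_mapping_eqI) simp

lemma scale_zero_left [simp]: "scale 0 p = 0"
  by (rule poly_mapping_eqI) simp

lemma scale_zero_right [simp]: "scale c 0 = 0"
  by (rule poly_mapping_eqI) simp

lemma scale_sum: "scale c (sum f I) = (\<Sum>i\<in>I. scale c (f i))"
  by (rule poly_mapping_eqI) (simp add: lookup_sum sum_distrib_left)

lemma scale_single [simp]: "scale c (Poly_Mapping.single x d) = Poly_Mapping.single x (c * d)"
  by (rule poly_mapping_eqI) (simp add: lookup_single when_def)

lemma keys_scale: "Poly_Mapping.keys (scale c p) \<subseteq> Poly_Mapping.keys p"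
  by (auto simp: in_keys_iff)

lemma lookup_tvec: "Poly_Mapping.lookup (tvec t) x = (if x = t then 1 else 0)"
  by (simp add: tvec_def lookup_single when_def)

lemma keys_tvec [simp]: "Poly_Mapping.keys (tvec t :: 'k::field vec) = {t}"
  by (simp add: tvec_def)

definition lin :: "('a \<Rightarrow> ('b \<Rightarrow>\<^sub>0 'k::field)) \<Rightarrow> ('a \<Rightarrow>\<^sub>0 'k) \<Rightarrow> ('b \<Rightarrow>\<^sub>0 'k)" where
  "lin f a = (\<Sum>x\<in>Poly_Mapping.keys a. scale (Poly_Mapping.lookup a x) (f x))"

lemma lin_superset:
  assumes "finite S" "Poly_Mapping.keys a \<subseteq> S"
  shows "lin f a = (\<Sum>x\<in>S. scale (Poly_Mapping.lookup a x) (f x))"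
  unfolding lin_def
  by (rule sum.mono_neutral_left) (use assms in \<open>auto simp: in_keys_iff\<close>)

lemma lin_add: "lin f (a + b) = lin f a + lin f b"
proof -
  let ?S = "Poly_Mapping.keys a \<union> Poly_Mapping.keys b"
  have "lin f (a + b) = (\<Sum>x\<in>?S. scale (Poly_Mapping.lookup (a + b) x) (f x))"
    by (rule lin_superset) (use keys_add[of a b] in auto)
  also have "\<dots> = (\<Sum>x\<in>?S. scale (Poly_Mapping.lookup a x) (f x)) + (\<Sum>x\<in>?S. scale (Poly_Mapping.lookup b x) (f x))"
    by (simp add: lookup_add scale_add_left sum.distrib)
  also have "\<dots> = lin f a + lin f b"
    by (subst (1 2) lin_superset[of ?S]) auto
  finally show ?thesis .
qed

lemma lin_scale: "lin f (scale c a) = scale c (lin f a)"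
proof -
  have "lin f (scale c a) = (\<Sum>x\<in>Poly_Mapping.keys a. scale (Poly_Mapping.lookup (scale c a) x) (f x))"
    by (rule lin_superset) (auto simp: keys_scale[THEN subsetD])
  then show ?thesis by (simp add: lin_def scale_sum)
qed

lemma lin_zero [simp]: "lin f 0 = 0"
  by (simp add: lin_def)

lemma lin_single [simp]: "lin f (Poly_Mapping.single x c) = scale c (f x)"
  by (subst lin_superset[of "{x}"]) auto

lemma lin_tvec [simp]: "lin f (tvec t) = f t"
  by (simp add: tvec_def)

lemma lin_sum: "lin f (sum g I) = (\<Sum>i\<in>I. lin f (g i))"
  by (induction I rule: infinite_finite_induct) (auto simp: lin_add)

lemma lin_fadd: "lin (\<lambda>x. f x + g x) a = lin f a + lin g a"
  by (simp add: lin_def scale_add_right sum.distrib)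

lemma lin_fscale: "lin (\<lambda>x. scale c (f x)) a = scale c (lin f a)"
  by (simp add: lin_def scale_sum mult.commute)

lemma lin_fsum: "lin (\<lambda>x. \<Sum>i\<in>I. f i x) a = (\<Sum>i\<in>I. lin (f i) a)"
  unfolding lin_def scale_sum by (rule sum.swap)

lemma lin_fzero [simp]: "lin (\<lambda>x. 0) a = 0"
  by (simp add: lin_def)

lemma lin_cong: "(\<And>x. x \<in> Poly_Mapping.keys a \<Longrightarrow> f x = g x) \<Longrightarrow> lin f a = lin g a"
  by (simp add: lin_def)

lemma lin_lin: "lin g (lin f a) = lin (\<lambda>x. lin g (f x)) a"
proof -
  have "lin g (lin f a) = lin g (\<Sum>x\<in>Poly_Mapping.keys a. scale (Poly_Mapping.lookup a x) (f x))"
    by (simp only: lin_def[of f a])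
  also have "\<dots> = lin (\<lambda>x. lin g (f x)) a"
    by (simp only: lin_sum lin_scale lin_def[of "\<lambda>x. lin g (f x)" a])
  finally show ?thesis .
qed

lemma lookup_lin: "Poly_Mapping.lookup (lin f a) y = (\<Sum>x\<in>Poly_Mapping.keys a. Poly_Mapping.lookup a x * Poly_Mapping.lookup (f x) y)"
  by (simp add: lin_def lookup_sum)

lemma keys_lin: "Poly_Mapping.keys (lin f a) \<subseteq> (\<Union>x\<in>Poly_Mapping.keys a. Poly_Mapping.keys (f x))"
proof
  fix y assume "y \<in> Poly_Mapping.keys (lin f a)"
  then have "(\<Sum>x\<in>Poly_Mapping.keys a. Poly_Mapping.lookup a x * Poly_Mapping.lookup (f x) y) \<noteq> 0"
    by (simp add: in_keys_iff lookup_lin)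
  then obtain x where "x \<in> Poly_Mapping.keys a" "Poly_Mapping.lookup (f x) y \<noteq> 0"
    by (metis (no_types, lifting) mult_zero_right sum.neutral)
  then show "y \<in> (\<Union>x\<in>Poly_Mapping.keys a. Poly_Mapping.keys (f x))" by (auto simp: in_keys_iff)
qed

lemma keys_linI: "(\<And>x. x \<in> Poly_Mapping.keys a \<Longrightarrow> Poly_Mapping.keys (f x) \<subseteq> S) \<Longrightarrow> Poly_Mapping.keys (lin f a) \<subseteq> S"
  using keys_lin by fastforce

lemma lin_id: "lin (\<lambda>x. Poly_Mapping.single x 1) a = a"
proof (rule poly_mapping_eqI)
  fix y
  have "(\<Sum>x\<in>Poly_Mapping.keys a. Poly_Mapping.lookup a x * Poly_Mapping.lookup (Poly_Mapping.single x 1) y)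
      = (\<Sum>x\<in>Poly_Mapping.keys a. if x = y then Poly_Mapping.lookup a x else 0)"
    by (rule sum.cong) (auto simp: lookup_single when_def)
  also have "\<dots> = Poly_Mapping.lookup a y" by (simp add: sum.delta in_keys_iff)
  finally show "Poly_Mapping.lookup (lin (\<lambda>x. Poly_Mapping.single x 1) a) y = Poly_Mapping.lookup a y"
    by (simp add: lookup_lin)
qed

lemma lin_id_tvec: "lin tvec a = a"
  unfolding tvec_def[abs_def] by (rule lin_id)

lemma lin_swap: "lin (\<lambda>x. lin (\<lambda>y. h x y) b) a = lin (\<lambda>y. lin (\<lambda>x. h x y) a) b"
  unfolding lin_def scale_sum scale_scale
  by (subst sum.swap) (simp add: mult.commute)

lemma lin_eq_zero: "(\<And>x. x \<in> Poly_Mapping.keys a \<Longrightarrow> f x = 0) \<Longrightarrow> lin f a = 0"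
  by (simp add: lin_def)

lemma prodA_lin: "prodA op a b = lin (\<lambda>s. lin (\<lambda>t. tp op s t) b) a"
  by (simp add: prodA_def lin_def scale_sum)

lemma tens_lin: "tens a b = lin (\<lambda>s. lin (\<lambda>t. Poly_Mapping.single (s, t) 1) b) a"
  by (simp add: tens_def lin_def scale_sum mult.commute)

lemma barprod_lin: "barprod op p q = lin (\<lambda>u. lin (\<lambda>v. bar_basis op u v) q) p"
  by (simp add: barprod_def lin_def scale_sum)

lemma prod2_lin: "prod2 p q = lin (\<lambda>u. lin (\<lambda>v. tens (tp 3 (fst u) (fst v)) (tp 3 (snd u) (snd v))) q) p"
  by (simp add: prod2_def lin_def scale_sum case_prod_beta)

lemma Delta_id_lin: "Delta_id D p = lin (\<lambda>u. tens (D (tvec (fst u))) (tvec (snd u))) p"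
  by (simp add: Delta_id_def lin_def case_prod_beta)

lemma id_Delta_lin: "id_Delta D p = lin (\<lambda>u. tens (tvec (fst u)) (D (tvec (snd u)))) p"
  by (simp add: id_Delta_def lin_def case_prod_beta)

lemma eps_id_lin: "eps_id p = lin (\<lambda>u. scale (eps (tvec (fst u))) (tvec (snd u))) p"
  by (simp add: eps_id_def lin_def case_prod_beta)

lemma id_eps_lin: "id_eps p = lin (\<lambda>u. scale (eps (tvec (snd u))) (tvec (fst u))) p"
  by (simp add: id_eps_def lin_def case_prod_beta)

lemma Delta_cut_lin: "Delta_cut a = lin Delta_tree a"
  by (simp add: Delta_cut_def lin_def)

lemma lcomb_Cons_lin: "lcomb (a # as) = lin (\<lambda>t. lin (\<lambda>ts. Poly_Mapping.single (t # ts) 1) (lcomb as)) a"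
  by (simp add: lin_def scale_sum mult.commute)

declare lcomb.simps(2) [simp del]

lemma graft_lin: "graft as = lin (\<lambda>ts. tvec (Node ts)) (lcomb as)"
  by (simp add: graft_def lin_def tvec_def)

lemma tens_tvec [simp]: "tens (tvec s) (tvec t) = Poly_Mapping.single (s, t) 1"
  by (simp add: tens_lin)

lemma prodA_tvec [simp]: "prodA op (tvec s) (tvec t) = tp op s t"
  by (simp add: prodA_lin)

lemma eps_tvec: "eps (tvec t) = (if t = Leaf then 1 else 0)"
  by (simp add: eps_def lookup_tvec)

lemma eps_lin: "eps (lin f a) = (\<Sum>x\<in>Poly_Mapping.keys a. Poly_Mapping.lookup a x * eps (f x))"
  by (simp add: eps_def lookup_lin)

definition H1 :: "tree list \<Rightarrow> 'k::field vec \<Rightarrow> tree list \<Rightarrow> 'k vec" where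
  "H1 pre v post = lin (\<lambda>t. tvec (Node (pre @ t # post))) v"

lemma lcomb_tvecs: "lcomb (map tvec ts) = Poly_Mapping.single ts 1"
  by (induction ts) (simp_all add: lcomb_Cons_lin)

lemma lcomb_hole: "lcomb (map tvec pre @ v # map tvec post) = lin (\<lambda>t. Poly_Mapping.single (pre @ t # post) 1) v"
proof (induction pre)
  case Nil
  then show ?case by (simp add: lcomb_Cons_lin lcomb_tvecs)
next
  case (Cons p pre)
  then show ?case by (simp add: lcomb_Cons_lin lin_lin)
qed

lemma graft_hole: "graft (map tvec pre @ v # map tvec post) = H1 pre v post"
  by (simp add: graft_lin lcomb_hole lin_lin H1_def)

lemma graft_tvecs: "graft (map tvec ts) = tvec (Node ts)"
  by (simp add: graft_lin lcomb_tvecs)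

lemma H1_tvec [simp]: "H1 pre (tvec t) post = tvec (Node (pre @ t # post))"
  by (simp add: H1_def)

declare tp.simps [simp del]

fun kids :: "tree \<Rightarrow> tree list" where
  "kids Leaf = []"
| "kids (Node ts) = ts"

definition nl :: "tree \<Rightarrow> bool" where
  "nl t \<longleftrightarrow> valid t \<and> t \<noteq> Leaf"

lemma nl_Node: "nl t \<Longrightarrow> t = Node (kids t) \<and> 2 \<le> length (kids t) \<and> (\<forall>s\<in>set (kids t). valid s)"
  by (cases t) (auto simp: nl_def)

lemma nl_kids_ne: "nl t \<Longrightarrow> kids t \<noteq> []"
  using nl_Node by fastforce

lemma tp3_Leaf_left [simp]: "tp 3 Leaf y = tvec y"
  by (rule trans[OF tp.simps]) simp

lemma tp3_Leaf_right [simp]: "tp 3 x Leaf = tvec x"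
  by (rule trans[OF tp.simps]) simp

lemma tp3_split: "x \<noteq> Leaf \<Longrightarrow> y \<noteq> Leaf \<Longrightarrow> tp 3 x y = tp 0 x y + tp 1 x y + tp 2 x y"
  by (rule trans[OF tp.simps]) simp

lemma tp0_Leaf_left [simp]: "tp 0 Leaf y = 0"
  by (rule trans[OF tp.simps]) simp

lemma tp1_Leaf_left [simp]: "tp 1 Leaf y = 0"
  by (rule trans[OF tp.simps]) simp

lemma tp2_Leaf_left: "y \<noteq> Leaf \<Longrightarrow> tp 2 Leaf y = tvec y"
  by (rule trans[OF tp.simps]) simp

lemma tp2_Leaf_Leaf [simp]: "tp 2 Leaf Leaf = 0"
  by (rule trans[OF tp.simps]) simp

lemma tp0_Leaf_right: "x \<noteq> Leaf \<Longrightarrow> tp 0 x Leaf = tvec x"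
  by (rule trans[OF tp.simps]) (cases x; simp)

lemma tp1_Leaf_right [simp]: "tp 1 x Leaf = 0"
  by (rule trans[OF tp.simps]) (cases x; simp)

lemma tp2_Leaf_right [simp]: "tp 2 x Leaf = 0"
  by (rule trans[OF tp.simps]) (cases x; simp)

lemma tp0_gen: "x \<noteq> Leaf \<Longrightarrow> y \<noteq> Leaf \<Longrightarrow> kids x \<noteq> [] \<Longrightarrow> kids y \<noteq> [] \<Longrightarrow>
  tp 0 x y = H1 (butlast (kids x)) (tp 3 (last (kids x)) y) []"
  by (rule trans[OF tp.simps]) (cases x; cases y; simp add: graft_hole[of _ _ "[]", simplified])

lemma tp1_gen: "x \<noteq> Leaf \<Longrightarrow> y \<noteq> Leaf \<Longrightarrow> kids x \<noteq> [] \<Longrightarrow> kids y \<noteq> [] \<Longrightarrow>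
  tp 1 x y = H1 (butlast (kids x)) (tp 3 (last (kids x)) (hd (kids y))) (tl (kids y))"
  by (rule trans[OF tp.simps]) (cases x; cases y; simp add: graft_hole)

lemma tp2_gen: "x \<noteq> Leaf \<Longrightarrow> y \<noteq> Leaf \<Longrightarrow> kids x \<noteq> [] \<Longrightarrow> kids y \<noteq> [] \<Longrightarrow>
  tp 2 x y = H1 [] (tp 3 x (hd (kids y))) (tl (kids y))"
  by (rule trans[OF tp.simps]) (cases x; cases y; simp add: graft_hole[of "[]", simplified])

lemma H1_lin: "H1 pre (lin f v) post = lin (\<lambda>t. H1 pre (f t) post) v"
  by (simp add: H1_def lin_lin)

lemma H1_add: "H1 pre (a + b) post = H1 pre a post + H1 pre b post"
  by (simp add: H1_def lin_add)

lemma H1_zero [simp]: "H1 pre 0 post = 0"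
  by (simp add: H1_def)

lemma keys_H1: "Poly_Mapping.keys (H1 pre v post) \<subseteq> (\<lambda>t. Node (pre @ t # post)) ` Poly_Mapping.keys v"
  unfolding H1_def by (rule keys_linI) auto

lemma prodA_lin_left: "prodA op (lin f a) b = lin (\<lambda>x. prodA op (f x) b) a"
  by (simp add: prodA_lin lin_lin)

lemma prodA_lin_right: "prodA op a (lin f b) = lin (\<lambda>y. prodA op a (f y)) b"
proof -
  have "prodA op a (lin f b) = lin (\<lambda>s. lin (\<lambda>y. lin (\<lambda>t. tp op s t) (f y)) b) a"
    by (simp add: prodA_lin lin_lin)
  also have "\<dots> = lin (\<lambda>y. lin (\<lambda>s. lin (\<lambda>t. tp op s t) (f y)) a) b"
    by (rule lin_swap)
  finally show ?thesis by (simp add: prodA_lin)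
qed

lemma prodA_tvec_left: "prodA op (tvec s) b = lin (tp op s) b"
  by (simp add: prodA_lin)

lemma prodA_tvec_right: "prodA op a (tvec t) = lin (\<lambda>s. tp op s t) a"
  by (simp add: prodA_lin)

lemma prodA_add_left: "prodA op (a + b) c = prodA op a c + prodA op b c"
  by (simp add: prodA_lin lin_add)

lemma prodA_add_right: "prodA op a (b + c) = prodA op a b + prodA op a c"
  by (simp add: prodA_lin lin_add lin_fadd)

lemma prodA_scale_left: "prodA op (scale k a) c = scale k (prodA op a c)"
  by (simp add: prodA_lin lin_scale)

lemma prodA_scale_right: "prodA op a (scale k c) = scale k (prodA op a c)"
  by (simp add: prodA_lin lin_scale lin_fscale)

lemma prodA_zero_left [simp]: "prodA op 0 c = 0"
  by (simp add: prodA_lin)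

lemma prodA_zero_right [simp]: "prodA op a 0 = 0"
  by (simp add: prodA_lin)

lemma prodA_H1_left: "prodA op (H1 pre v post) (tvec z) = lin (\<lambda>t. tp op (Node (pre @ t # post)) z) v"
  by (simp add: H1_def prodA_tvec_right lin_lin)

lemma prodA_H1_right: "prodA op (tvec x) (H1 pre v post) = lin (\<lambda>t. tp op x (Node (pre @ t # post))) v"
  by (simp add: H1_def prodA_lin_right)

lemma in_keys_addD: "x \<in> Poly_Mapping.keys (a + b) \<Longrightarrow> x \<in> Poly_Mapping.keys a \<or> x \<in> Poly_Mapping.keys b"
  using keys_add[of a b] by blast

lemma leaves_pos: "valid t \<Longrightarrow> 1 \<le> leaves t"
proof (induction t)
  case Leaf
  then show ?case by simp
next
  case (Node ts)
  then obtain s where "s \<in> set ts" by (cases ts) auto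
  with Node have "1 \<le> leaves s" by auto
  also have "leaves s \<le> sum_list (map leaves ts)"
    using \<open>s \<in> set ts\<close> by (simp add: member_le_sum_list)
  finally show ?case by simp
qed

lemma sum_list_leaves_pos: "xs \<noteq> [] \<Longrightarrow> \<forall>s\<in>set xs. valid s \<Longrightarrow> 1 \<le> sum_list (map leaves xs)"
  by (cases xs) (auto dest: leaves_pos)

lemma valid_Node_iff: "valid (Node ts) \<longleftrightarrow> 2 \<le> length ts \<and> (\<forall>s\<in>set ts. valid s)"
  by simp

lemma tp_keys_aux:
  "\<forall>x y op w. size x + size y = n \<longrightarrow> valid x \<longrightarrow> valid y \<longrightarrow> w \<in> Poly_Mapping.keys (tp op x y :: 'k::field vec) \<longrightarrow>
     valid w \<and> leaves w + 1 = leaves x + leaves y \<and> (w = Leaf \<longrightarrow> x = Leaf \<and> y = Leaf)"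
proof (induction n rule: less_induct)
  case (less n)
  have ne: "op \<noteq> 3 \<Longrightarrow> valid x \<Longrightarrow> valid y \<Longrightarrow> size x + size y = n \<Longrightarrow> w \<in> Poly_Mapping.keys (tp op x y :: 'k vec) \<Longrightarrow>
     valid w \<and> leaves w + 1 = leaves x + leaves y \<and> (w = Leaf \<longrightarrow> x = Leaf \<and> y = Leaf)" for op x y w
  proof (cases x)
    case Leaf
    assume "op \<noteq> 3" "w \<in> Poly_Mapping.keys (tp op x y :: 'k vec)" "valid y"
    then show ?thesis using Leaf
      by (subst (asm) tp.simps) (auto split: if_splits)
  next
    case (Node xs)
    assume a: "op \<noteq> 3" "valid x" "valid y" "size x + size y = n" "w \<in> Poly_Mapping.keys (tp op x y :: 'k vec)"
    show ?thesis
    proof (cases y)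
      case Leaf
      then show ?thesis using a Node
        by (subst (asm) tp.simps) (auto split: if_splits)
    next
      case Node2: (Node ys)
      from a Node Node2 have xs: "2 \<le> length xs" "\<forall>s\<in>set xs. valid s" and ys: "2 \<le> length ys" "\<forall>s\<in>set ys. valid s"
        by auto
      then have xsne: "xs \<noteq> []" and ysne: "ys \<noteq> []" by auto
      have bl: "butlast xs \<noteq> []" using xs by (cases xs rule: rev_cases) auto
      have tlne: "tl ys \<noteq> []" using ys by (cases ys) auto
      have svx: "size (last xs) < size x" using Node size_last_less[OF xsne] by simp
      have svy: "size (hd ys) < size y" using Node2 size_hd_less[OF ysne] by simp
      have vlast: "valid (last xs)" using xs xsne by simp
      have vhd: "valid (hd ys)" using ys ysne by simp
      have lx: "leaves x = sum_list (map leaves (butlast xs)) + leaves (last xs)"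
      proof -
        from xsne obtain bx xk where "xs = bx @ [xk]" by (cases xs rule: rev_cases) auto
        then show ?thesis using Node by simp
      qed
      have ly: "leaves y = leaves (hd ys) + sum_list (map leaves (tl ys))"
      proof -
        from ysne obtain y0 ty where "ys = y0 # ty" by (cases ys) auto
        then show ?thesis using Node2 by simp
      qed
      have vb: "\<forall>s\<in>set (butlast xs). valid s" using xs by (meson in_set_butlastD)
      have vt: "\<forall>s\<in>set (tl ys). valid s" using ys by (meson list.set_sel(2) ysne)
      have lb: "1 \<le> sum_list (map leaves (butlast xs))" using sum_list_leaves_pos[OF bl vb] .
      have lt: "1 \<le> sum_list (map leaves (tl ys))" using sum_list_leaves_pos[OF tlne vt] .
      have lenb: "length (butlast xs) + 1 = length xs" using xsne by simp
      have lent: "length (tl ys) + 1 = length ys" using ysne by (cases ys) auto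
      consider "op = 0" | "op = 1" | "op \<noteq> 0 \<and> op \<noteq> 1" by blast
      then show ?thesis
      proof cases
        case 1
        have "tp op x y = (H1 (butlast xs) (tp 3 (last xs) y) [] :: 'k vec)"
          using 1 Node Node2 xsne ysne by (simp add: tp0_gen)
        then have "w \<in> Poly_Mapping.keys (H1 (butlast xs) (tp 3 (last xs) y) [] :: 'k vec)" using a(5) by simp
        then have "w \<in> (\<lambda>t. Node (butlast xs @ t # [])) ` Poly_Mapping.keys (tp 3 (last xs) y :: 'k vec)"
          using keys_H1 by blast
        then obtain t where t: "w = Node (butlast xs @ [t])" "t \<in> Poly_Mapping.keys (tp 3 (last xs) y :: 'k vec)"
          by blast
        from less.IH[rule_format, OF _ refl vlast a(3) t(2)] svx a(4)
        have "valid t \<and> leaves t + 1 = leaves (last xs) + leaves y" by auto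
        then show ?thesis using t vb lenb xs lx by auto
      next
        case 2
        have "tp op x y = (H1 (butlast xs) (tp 3 (last xs) (hd ys)) (tl ys) :: 'k vec)"
          unfolding 2 using tp1_gen[of x y] Node Node2 xsne ysne by simp
        then have "w \<in> Poly_Mapping.keys (H1 (butlast xs) (tp 3 (last xs) (hd ys)) (tl ys) :: 'k vec)" using a(5) by simp
        then have "w \<in> (\<lambda>t. Node (butlast xs @ t # tl ys)) ` Poly_Mapping.keys (tp 3 (last xs) (hd ys) :: 'k vec)"
          using keys_H1 by blast
        then obtain t where t: "w = Node (butlast xs @ t # tl ys)" "t \<in> Poly_Mapping.keys (tp 3 (last xs) (hd ys) :: 'k vec)"
          by blast
        from less.IH[rule_format, OF _ refl vlast vhd t(2)] svx svy a(4)
        have "valid t \<and> leaves t + 1 = leaves (last xs) + leaves (hd ys)" by auto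
        then show ?thesis using t vb vt lenb xs lx ly by auto
      next
        case 3
        have "tp op x y = (H1 [] (tp 3 x (hd ys)) (tl ys) :: 'k vec)"
          using 3 a(1) Node Node2 xsne ysne by (subst tp.simps) (simp add: graft_hole[of "[]", simplified])
        then have "w \<in> Poly_Mapping.keys (H1 [] (tp 3 x (hd ys)) (tl ys) :: 'k vec)" using a(5) by simp
        then have "w \<in> (\<lambda>t. Node ([] @ t # tl ys)) ` Poly_Mapping.keys (tp 3 x (hd ys) :: 'k vec)"
          using keys_H1 by blast
        then obtain t where t: "w = Node (t # tl ys)" "t \<in> Poly_Mapping.keys (tp 3 x (hd ys) :: 'k vec)"
          by auto
        from less.IH[rule_format, OF _ refl a(2) vhd t(2)] svy a(4)
        have "valid t \<and> leaves t + 1 = leaves x + leaves (hd ys)" by auto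
        then show ?thesis using t vt lent ys ly by auto
      qed
    qed
  qed
  show ?case
  proof (intro allI impI)
    fix x y op w
    assume a: "size x + size y = n" "valid x" "valid y" "w \<in> Poly_Mapping.keys (tp op x y :: 'k vec)"
    show "valid w \<and> leaves w + 1 = leaves x + leaves y \<and> (w = Leaf \<longrightarrow> x = Leaf \<and> y = Leaf)"
    proof (cases "op = 3")
      case False
      then show ?thesis using ne a by blast
    next
      case True
      show ?thesis
      proof (cases "x = Leaf \<or> y = Leaf")
        case True
        then show ?thesis using a \<open>op = 3\<close> by auto
      next
        case False
        then have e: "tp op x y = (tp 0 x y + tp 1 x y + tp 2 x y :: 'k vec)"
          using \<open>op = 3\<close> tp3_split by auto
        have "w \<in> Poly_Mapping.keys (tp 0 x y :: 'k vec) \<union> Poly_Mapping.keys (tp 1 x y :: 'k vec) \<union> Poly_Mapping.keys (tp 2 x y :: 'k vec)"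
          using a(4) unfolding e by (auto dest!: in_keys_addD)
        then obtain op' where op': "op' \<noteq> 3" "w \<in> Poly_Mapping.keys (tp op' x y :: 'k vec)" by (elim UnE) force+
        from ne[OF op'(1) a(2) a(3) a(1) op'(2)] show ?thesis using False by auto
      qed
    qed
  qed
qed

lemma tp_keys:
  assumes "valid x" "valid y" "w \<in> Poly_Mapping.keys (tp op x y :: 'k::field vec)"
  shows "valid w" "leaves w + 1 = leaves x + leaves y" "w = Leaf \<Longrightarrow> x = Leaf \<and> y = Leaf"
  using tp_keys_aux[rule_format, OF refl assms] by auto

lemma tp_keys_nl:
  assumes "valid x" "valid y" "x \<noteq> Leaf \<or> y \<noteq> Leaf" "w \<in> Poly_Mapping.keys (tp op x y :: 'k::field vec)"
  shows "nl w"
  using tp_keys[OF assms(1,2,4)] assms(3) by (auto simp: nl_def)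

section \<open>Associativity of the products on trees\<close>

declare One_nat_def [simp del]

lemma nl_decomp_last:
  assumes "nl x"
  obtains bx xk where "x = Node (bx @ [xk])" "bx \<noteq> []" "valid xk" "\<forall>s\<in>set bx. valid s" "leaves xk < leaves x"
proof -
  from nl_Node[OF assms] have x: "x = Node (kids x)" "2 \<le> length (kids x)" "\<forall>s\<in>set (kids x). valid s" by auto
  then obtain bx xk where e: "kids x = bx @ [xk]" by (cases "kids x" rule: rev_cases) auto
  with x have "bx \<noteq> []" by auto
  moreover have "1 \<le> sum_list (map leaves bx)" using sum_list_leaves_pos[OF \<open>bx \<noteq> []\<close>] x e by auto
  ultimately show ?thesis using that[of bx xk] x e by auto
qed

lemma nl_decomp_first:
  assumes "nl y"
  obtains y0 ty where "y = Node (y0 # ty)" "ty \<noteq> []" "valid y0" "\<forall>s\<in>set ty. valid s" "leaves y0 < leaves y"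
proof -
  from nl_Node[OF assms] have y: "y = Node (kids y)" "2 \<le> length (kids y)" "\<forall>s\<in>set (kids y). valid s" by auto
  then obtain y0 ty where e: "kids y = y0 # ty" by (cases "kids y") auto
  with y have "ty \<noteq> []" by auto
  moreover have "1 \<le> sum_list (map leaves ty)" using sum_list_leaves_pos[OF \<open>ty \<noteq> []\<close>] y e by auto
  ultimately show ?thesis using that[of y0 ty] y e by auto
qed

lemma nl_decomp_both:
  assumes "nl y"
  obtains y0 bty ly where "y = Node (y0 # bty @ [ly])" "valid y0" "valid ly" "\<forall>s\<in>set bty. valid s"
proof -
  obtain y0 ty where y: "y = Node (y0 # ty)" "ty \<noteq> []" "valid y0" "\<forall>s\<in>set ty. valid s"
    using nl_decomp_first[OF assms] by blast
  then obtain bty ly where "ty = bty @ [ly]" by (cases ty rule: rev_cases) auto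
  then show ?thesis using that y by auto
qed

lemma nl_not_Leaf: "nl x \<Longrightarrow> x \<noteq> Leaf" by (simp add: nl_def)
lemma nl_valid: "nl x \<Longrightarrow> valid x" by (simp add: nl_def)

lemma tp0_nl: "nl x \<Longrightarrow> nl y \<Longrightarrow> tp 0 x y = H1 (butlast (kids x)) (tp 3 (last (kids x)) y) []"
  using tp0_gen nl_kids_ne nl_not_Leaf by blast
lemma tp1_nl: "nl x \<Longrightarrow> nl y \<Longrightarrow> tp 1 x y = H1 (butlast (kids x)) (tp 3 (last (kids x)) (hd (kids y))) (tl (kids y))"
  using tp1_gen nl_kids_ne nl_not_Leaf by blast
lemma tp2_nl: "nl x \<Longrightarrow> nl y \<Longrightarrow> tp 2 x y = H1 [] (tp 3 x (hd (kids y))) (tl (kids y))"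
  using tp2_gen nl_kids_ne nl_not_Leaf by blast

lemmas tp_gens = tp0_gen tp1_gen tp2_gen

lemma ax1:
  assumes x: "x = Node (bx @ [xk])" "bx \<noteq> []" and y: "nl y" and z: "nl z"
    and IH: "prodA 3 (tp 3 xk y) (tvec z) = prodA 3 (tvec xk) (tp 3 y z :: 'k::field vec)"
  shows "prodA 0 (tp 0 x y) (tvec z) = prodA 0 (tvec x) (tp 3 y z :: 'k vec)"
proof -
  have yz: "y \<noteq> Leaf" "z \<noteq> Leaf" "kids y \<noteq> []" "kids z \<noteq> []"
    using y z nl_kids_ne nl_not_Leaf by auto
  have "prodA 0 (tp 0 x y) (tvec z) = prodA 0 (H1 bx (tp 3 xk y) []) (tvec z :: 'k vec)"
    using x yz by (simp add: tp0_gen)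
  also have "\<dots> = lin (\<lambda>t. H1 bx (tp 3 t z) []) (tp 3 xk y)"
    using yz by (simp add: prodA_H1_left tp0_gen)
  also have "\<dots> = H1 bx (prodA 3 (tp 3 xk y) (tvec z)) []"
    by (simp add: H1_lin prodA_tvec_right)
  also have "\<dots> = H1 bx (prodA 3 (tvec xk) (tp 3 y z)) []"
    using IH by simp
  also have "\<dots> = lin (\<lambda>w. H1 bx (tp 3 xk w) []) (tp 3 y z)"
    by (simp add: H1_lin prodA_tvec_left)
  also have "\<dots> = lin (\<lambda>w. tp 0 x w) (tp 3 y z)"
  proof (rule lin_cong)
    fix w assume "w \<in> Poly_Mapping.keys (tp 3 y z :: 'k vec)"
    then have "nl w" using tp_keys_nl y z nl_valid nl_not_Leaf by blast
    then show "H1 bx (tp 3 xk w) [] = tp 0 x w"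
      using x by (simp add: tp0_gen nl_kids_ne nl_not_Leaf)
  qed
  also have "\<dots> = prodA 0 (tvec x) (tp 3 y z)"
    by (simp add: prodA_tvec_left)
  finally show ?thesis .
qed

lemma ax2:
  assumes x: "nl x" and y: "y = Node (y0 # bty @ [ly])" and z: "nl z"
  shows "prodA 0 (tp 2 x y) (tvec z) = prodA 2 (tvec x) (tp 0 y z :: 'k::field vec)"
proof -
  have xz: "x \<noteq> Leaf" "z \<noteq> Leaf" "kids x \<noteq> []" "kids z \<noteq> []"
    using x z nl_kids_ne nl_not_Leaf by auto
  have "prodA 0 (tp 2 x y) (tvec z) = lin (\<lambda>t. H1 (t # bty) (tp 3 ly z) []) (tp 3 x y0 :: 'k vec)"
    using xz y by (simp add: tp_gens prodA_H1_left)
  also have "\<dots> = lin (\<lambda>u. H1 [] (tp 3 x y0) (bty @ [u])) (tp 3 ly z)"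
    by (simp add: H1_def, rule lin_swap)
  also have "\<dots> = prodA 2 (tvec x) (tp 0 y z)"
    using xz y by (simp add: tp_gens prodA_H1_right)
  finally show ?thesis .
qed

lemma ax3:
  assumes x: "nl x" and y: "nl y" and z: "z = Node (z0 # tz)" "tz \<noteq> []"
    and IH: "prodA 3 (tp 3 x y) (tvec z0) = prodA 3 (tvec x) (tp 3 y z0 :: 'k::field vec)"
  shows "prodA 2 (tp 3 x y) (tvec z) = prodA 2 (tvec x) (tp 2 y z :: 'k vec)"
proof -
  have xy: "x \<noteq> Leaf" "y \<noteq> Leaf" "kids x \<noteq> []" "kids y \<noteq> []"
    using x y nl_kids_ne nl_not_Leaf by auto
  have "prodA 2 (tp 3 x y) (tvec z) = lin (\<lambda>w. tp 2 w z) (tp 3 x y :: 'k vec)"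
    by (simp add: prodA_tvec_right)
  also have "\<dots> = lin (\<lambda>w. H1 [] (tp 3 w z0) tz) (tp 3 x y)"
  proof (rule lin_cong)
    fix w assume "w \<in> Poly_Mapping.keys (tp 3 x y :: 'k vec)"
    then have "nl w" using tp_keys_nl x y nl_valid nl_not_Leaf by blast
    then show "tp 2 w z = H1 [] (tp 3 w z0) tz"
      using z by (simp add: tp2_gen nl_kids_ne nl_not_Leaf)
  qed
  also have "\<dots> = H1 [] (prodA 3 (tp 3 x y) (tvec z0)) tz"
    by (simp add: H1_lin prodA_tvec_right)
  also have "\<dots> = H1 [] (prodA 3 (tvec x) (tp 3 y z0)) tz"
    using IH by simp
  also have "\<dots> = lin (\<lambda>u. H1 [] (tp 3 x u) tz) (tp 3 y z0)"
    by (simp add: H1_lin prodA_tvec_left)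
  also have "\<dots> = prodA 2 (tvec x) (tp 2 y z)"
    using xy z by (simp add: tp_gens prodA_H1_right)
  finally show ?thesis .
qed

lemma ax4:
  assumes x: "nl x" and y: "y = Node (y0 # bty @ [ly])" and z: "z = Node (z0 # tz)"
  shows "prodA 1 (tp 2 x y) (tvec z) = prodA 2 (tvec x) (tp 1 y z :: 'k::field vec)"
proof -
  have xz: "x \<noteq> Leaf" "kids x \<noteq> []"
    using x nl_kids_ne nl_not_Leaf by auto
  have "prodA 1 (tp 2 x y) (tvec z) = lin (\<lambda>t. H1 (t # bty) (tp 3 ly z0) tz) (tp 3 x y0 :: 'k vec)"
    using xz y z by (simp add: tp_gens prodA_H1_left)
  also have "\<dots> = lin (\<lambda>u. H1 [] (tp 3 x y0) (bty @ u # tz)) (tp 3 ly z0)"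
    by (simp add: H1_def, rule lin_swap)
  also have "\<dots> = prodA 2 (tvec x) (tp 1 y z)"
    using xz y z by (simp add: tp_gens prodA_H1_right)
  finally show ?thesis .
qed

lemma ax5:
  assumes x: "x = Node (bx @ [xk])" "bx \<noteq> []" and y: "nl y" and z: "z = Node (z0 # tz)" "tz \<noteq> []"
    and IH: "prodA 3 (tp 3 xk y) (tvec z0) = prodA 3 (tvec xk) (tp 3 y z0 :: 'k::field vec)"
  shows "prodA 1 (tp 0 x y) (tvec z) = prodA 1 (tvec x) (tp 2 y z :: 'k vec)"
proof -
  have yy: "y \<noteq> Leaf" "kids y \<noteq> []"
    using y nl_kids_ne nl_not_Leaf by auto
  have "prodA 1 (tp 0 x y) (tvec z) = lin (\<lambda>t. H1 bx (tp 3 t z0) tz) (tp 3 xk y :: 'k vec)"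
    using x yy z by (simp add: tp_gens prodA_H1_left)
  also have "\<dots> = H1 bx (prodA 3 (tp 3 xk y) (tvec z0)) tz"
    by (simp add: H1_lin prodA_tvec_right)
  also have "\<dots> = H1 bx (prodA 3 (tvec xk) (tp 3 y z0)) tz"
    using IH by simp
  also have "\<dots> = lin (\<lambda>u. H1 bx (tp 3 xk u) tz) (tp 3 y z0)"
    by (simp add: H1_lin prodA_tvec_left)
  also have "\<dots> = prodA 1 (tvec x) (tp 2 y z)"
    using x yy z by (simp add: tp_gens prodA_H1_right)
  finally show ?thesis .
qed

lemma ax6:
  assumes x: "x = Node (bx @ [xk])" "bx \<noteq> []" and y: "y = Node (y0 # bty @ [ly])" and z: "nl z"
  shows "prodA 0 (tp 1 x y) (tvec z) = prodA 1 (tvec x) (tp 0 y z :: 'k::field vec)"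
proof -
  have zz: "z \<noteq> Leaf" "kids z \<noteq> []"
    using z nl_kids_ne nl_not_Leaf by auto
  have "prodA 0 (tp 1 x y) (tvec z) = lin (\<lambda>t. H1 (bx @ t # bty) (tp 3 ly z) []) (tp 3 xk y0 :: 'k vec)"
    using x y zz by (simp add: tp_gens prodA_H1_left butlast_append last_append)
  also have "\<dots> = lin (\<lambda>u. H1 bx (tp 3 xk y0) (bty @ [u])) (tp 3 ly z)"
    by (simp add: H1_def, rule lin_swap)
  also have "\<dots> = prodA 1 (tvec x) (tp 0 y z)"
    using x y zz by (simp add: tp_gens prodA_H1_right)
  finally show ?thesis .
qed

lemma ax7:
  assumes x: "x = Node (bx @ [xk])" "bx \<noteq> []" and y: "y = Node (y0 # bty @ [ly])" and z: "z = Node (z0 # tz)"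
  shows "prodA 1 (tp 1 x y) (tvec z) = prodA 1 (tvec x) (tp 1 y z :: 'k::field vec)"
proof -
  have "prodA 1 (tp 1 x y) (tvec z) = lin (\<lambda>t. H1 (bx @ t # bty) (tp 3 ly z0) tz) (tp 3 xk y0 :: 'k vec)"
    using x y z by (simp add: tp_gens prodA_H1_left butlast_append last_append)
  also have "\<dots> = lin (\<lambda>u. H1 bx (tp 3 xk y0) (bty @ u # tz)) (tp 3 ly z0)"
    by (simp add: H1_def, rule lin_swap)
  also have "\<dots> = prodA 1 (tvec x) (tp 1 y z)"
    using x y z by (simp add: tp_gens prodA_H1_right)
  finally show ?thesis .
qed


lemma tp3_Leaf_fun: "tp 3 Leaf = tvec"
  by (rule ext) simp

lemma tp3_nl: "nl x \<Longrightarrow> nl y \<Longrightarrow> tp 3 x y = tp 0 x y + tp 1 x y + tp 2 x y"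
  using tp3_split nl_not_Leaf by blast

lemma star_right_split:
  assumes "valid x" "valid y" "x \<noteq> Leaf \<or> y \<noteq> Leaf" "nl z"
  shows "prodA 3 (tp 3 x y) (tvec z) = prodA 0 (tp 3 x y) (tvec z) + prodA 1 (tp 3 x y) (tvec z) + prodA 2 (tp 3 x y) (tvec z :: 'k::field vec)"
proof -
  have "prodA 3 (tp 3 x y) (tvec z) = lin (\<lambda>w. tp 0 w z + tp 1 w z + tp 2 w z) (tp 3 x y :: 'k vec)"
    unfolding prodA_tvec_right
  proof (rule lin_cong)
    fix w assume "w \<in> Poly_Mapping.keys (tp 3 x y :: 'k vec)"
    then have "nl w" using tp_keys_nl assms by blast
    then show "tp 3 w z = tp 0 w z + tp 1 w z + tp 2 w z" using tp3_nl assms by blast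
  qed
  then show ?thesis by (simp add: lin_fadd prodA_tvec_right)
qed

lemma star_left_split:
  assumes "valid y" "valid z" "y \<noteq> Leaf \<or> z \<noteq> Leaf" "nl x"
  shows "prodA 3 (tvec x) (tp 3 y z) = prodA 0 (tvec x) (tp 3 y z) + prodA 1 (tvec x) (tp 3 y z) + prodA 2 (tvec x) (tp 3 y z :: 'k::field vec)"
proof -
  have "prodA 3 (tvec x) (tp 3 y z) = lin (\<lambda>w. tp 0 x w + tp 1 x w + tp 2 x w) (tp 3 y z :: 'k vec)"
    unfolding prodA_tvec_left
  proof (rule lin_cong)
    fix w assume "w \<in> Poly_Mapping.keys (tp 3 y z :: 'k vec)"
    then have "nl w" using tp_keys_nl assms by blast
    then show "tp 3 x w = tp 0 x w + tp 1 x w + tp 2 x w" using tp3_nl assms by blast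
  qed
  then show ?thesis by (simp add: lin_fadd prodA_tvec_left)
qed

lemma assoc_tree_aux:
  "\<forall>x y z. leaves x + leaves y + leaves z = n \<longrightarrow> valid x \<longrightarrow> valid y \<longrightarrow> valid z \<longrightarrow>
     prodA 3 (tp 3 x y) (tvec z) = prodA 3 (tvec x) (tp 3 y z :: 'k::field vec)"
proof (induction n rule: less_induct)
  case (less n)
  show ?case
  proof (intro allI impI)
    fix x y z
    assume n: "leaves x + leaves y + leaves z = n" and v: "valid x" "valid y" "valid z"
    show "prodA 3 (tp 3 x y) (tvec z) = prodA 3 (tvec x) (tp 3 y z :: 'k vec)"
    proof (cases "x = Leaf \<or> y = Leaf \<or> z = Leaf")
      case True
      then show ?thesis
        by (auto simp: prodA_tvec_left prodA_tvec_right lin_id_tvec tp3_Leaf_fun)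
    next
      case False
      then have nx: "nl x" and ny: "nl y" and nz: "nl z" using v by (auto simp: nl_def)
      obtain bx xk where x: "x = Node (bx @ [xk])" "bx \<noteq> []" "valid xk" "leaves xk < leaves x"
        using nl_decomp_last[OF nx] by metis
      obtain y0 bty ly where y: "y = Node (y0 # bty @ [ly])"
        using nl_decomp_both[OF ny] by metis
      obtain z0 tz where z: "z = Node (z0 # tz)" "tz \<noteq> []" "valid z0" "leaves z0 < leaves z"
        using nl_decomp_first[OF nz] by metis
      have IH1: "prodA 3 (tp 3 xk y) (tvec z) = prodA 3 (tvec xk) (tp 3 y z :: 'k vec)"
        using less.IH[rule_format, OF _ refl x(3) v(2) v(3)] n x(4) by simp
      have IH3: "prodA 3 (tp 3 x y) (tvec z0) = prodA 3 (tvec x) (tp 3 y z0 :: 'k vec)"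
        using less.IH[rule_format, OF _ refl v(1) v(2) z(3)] n z(4) by simp
      have IH5: "prodA 3 (tp 3 xk y) (tvec z0) = prodA 3 (tvec xk) (tp 3 y z0 :: 'k vec)"
        using less.IH[rule_format, OF _ refl x(3) v(2) z(3)] n x(4) z(4) by simp
      note A1 = ax1[OF x(1,2) ny nz IH1]
      note A2 = ax2[OF nx y nz, where 'k='k]
      note A3 = ax3[OF nx ny z(1,2) IH3]
      note A4 = ax4[OF nx y z(1), where 'k='k]
      note A5 = ax5[OF x(1,2) ny z(1,2) IH5]
      note A6 = ax6[OF x(1,2) y nz, where 'k='k]
      note A7 = ax7[OF x(1,2) y z(1), where 'k='k]
      have L: "prodA 3 (tp 3 x y) (tvec z) =
          (prodA 0 (tp 0 x y) (tvec z) + prodA 0 (tp 1 x y) (tvec z) + prodA 0 (tp 2 x y) (tvec z))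
        + (prodA 1 (tp 0 x y) (tvec z) + prodA 1 (tp 1 x y) (tvec z) + prodA 1 (tp 2 x y) (tvec z))
        + prodA 2 (tp 3 x y) (tvec z :: 'k vec)"
      proof -
        have e: "\<And>op. prodA op (tp 3 x y) (tvec z) = prodA op (tp 0 x y) (tvec z) + prodA op (tp 1 x y) (tvec z) + prodA op (tp 2 x y) (tvec z :: 'k vec)"
          by (simp only: tp3_nl[OF nx ny] prodA_add_left)
        have s: "prodA 3 (tp 3 x y) (tvec z) = prodA 0 (tp 3 x y) (tvec z) + prodA 1 (tp 3 x y) (tvec z) + prodA 2 (tp 3 x y) (tvec z :: 'k vec)"
          using star_right_split[OF v(1,2) _ nz] False by blast
        show ?thesis unfolding s e[of 0] e[of 1] by (simp add: ac_simps)
      qed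
      have R: "prodA 3 (tvec x) (tp 3 y z) =
          prodA 0 (tvec x) (tp 3 y z)
        + (prodA 1 (tvec x) (tp 0 y z) + prodA 1 (tvec x) (tp 1 y z) + prodA 1 (tvec x) (tp 2 y z))
        + (prodA 2 (tvec x) (tp 0 y z) + prodA 2 (tvec x) (tp 1 y z) + prodA 2 (tvec x) (tp 2 y z :: 'k vec))"
      proof -
        have e: "\<And>op. prodA op (tvec x) (tp 3 y z) = prodA op (tvec x) (tp 0 y z) + prodA op (tvec x) (tp 1 y z) + prodA op (tvec x) (tp 2 y z :: 'k vec)"
          by (simp only: tp3_nl[OF ny nz] prodA_add_right)
        have s: "prodA 3 (tvec x) (tp 3 y z) = prodA 0 (tvec x) (tp 3 y z) + prodA 1 (tvec x) (tp 3 y z) + prodA 2 (tvec x) (tp 3 y z :: 'k vec)"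
          using star_left_split[OF v(2,3) _ nx] False by blast
        show ?thesis unfolding s e[of 1] e[of 2] by (simp add: ac_simps)
      qed
      show ?thesis unfolding L R A1 A2 A3 A4 A5 A6 A7 by (simp add: ac_simps)
    qed
  qed
qed

lemma assoc_tree:
  "valid x \<Longrightarrow> valid y \<Longrightarrow> valid z \<Longrightarrow> prodA 3 (tp 3 x y) (tvec z) = prodA 3 (tvec x) (tp 3 y z :: 'k::field vec)"
  using assoc_tree_aux by blast

lemma prodA_expand_left: "prodA op a b = lin (\<lambda>s. prodA op (tvec s) b) a"
  by (subst (1) lin_id_tvec[symmetric, of a]) (simp only: prodA_lin_left)

lemma prodA_expand_right: "prodA op a b = lin (\<lambda>t. prodA op a (tvec t)) b"
  by (subst (1) lin_id_tvec[symmetric, of b]) (simp only: prodA_lin_right)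

lemma AspaceI: "(\<And>t. t \<in> Poly_Mapping.keys a \<Longrightarrow> valid t) \<Longrightarrow> a \<in> Aspace"
  by (auto simp: Aspace_def)

lemma AspaceD: "a \<in> Aspace \<Longrightarrow> t \<in> Poly_Mapping.keys a \<Longrightarrow> valid t"
  by (auto simp: Aspace_def)

lemma tvec_Aspace: "valid t \<Longrightarrow> tvec t \<in> Aspace"
  by (simp add: Aspace_def)

lemma tp_Aspace: "valid x \<Longrightarrow> valid y \<Longrightarrow> tp op x y \<in> Aspace"
  using tp_keys(1) by (blast intro: AspaceI)

lemma lin_Aspace: "(\<And>x. x \<in> Poly_Mapping.keys a \<Longrightarrow> f x \<in> Aspace) \<Longrightarrow> lin f a \<in> Aspace"
  unfolding Aspace_def mem_Collect_eq by (rule keys_linI) auto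

lemma prodA_Aspace: "a \<in> Aspace \<Longrightarrow> b \<in> Aspace \<Longrightarrow> prodA op a b \<in> Aspace"
  unfolding prodA_lin by (intro lin_Aspace tp_Aspace) (auto dest: AspaceD)

lemma unitA_Aspace: "unitA \<in> Aspace"
  by (simp add: unitA_def tvec_Aspace)

lemma H1_Aspace: "v \<in> Aspace \<Longrightarrow> 2 \<le> length pre + length post + 1 \<Longrightarrow> \<forall>s\<in>set pre. valid s \<Longrightarrow> \<forall>s\<in>set post. valid s \<Longrightarrow> H1 pre v post \<in> Aspace"
  unfolding H1_def by (intro lin_Aspace tvec_Aspace) (auto dest: AspaceD)

lemma star_unit_left [simp]: "prodA 3 unitA a = a"
  by (simp add: unitA_def prodA_tvec_left tp3_Leaf_fun lin_id_tvec)

lemma star_unit_right [simp]: "prodA 3 a unitA = a"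
  by (simp add: unitA_def prodA_tvec_right lin_id_tvec)

lemma star_assoc:
  assumes "a \<in> Aspace" "b \<in> Aspace" "c \<in> Aspace"
  shows "prodA 3 (prodA 3 a b) c = prodA 3 a (prodA 3 b (c :: 'k::field vec))"
proof -
  have "prodA 3 (prodA 3 a b) c = lin (\<lambda>s. lin (\<lambda>t. prodA 3 (tp 3 s t) c) b) a"
    by (simp only: prodA_lin[of 3 a b] prodA_lin_left)
  also have "\<dots> = lin (\<lambda>s. lin (\<lambda>t. lin (\<lambda>u. prodA 3 (tvec s) (tp 3 t u)) c) b) a"
  proof (intro lin_cong)
    fix s t assume st: "s \<in> Poly_Mapping.keys a" "t \<in> Poly_Mapping.keys b"
    have "prodA 3 (tp 3 s t) c = lin (\<lambda>u. prodA 3 (tp 3 s t) (tvec u)) c"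
      by (rule prodA_expand_right)
    also have "\<dots> = lin (\<lambda>u. prodA 3 (tvec s) (tp 3 t u)) c"
      using assms st by (intro lin_cong) (simp add: assoc_tree AspaceD)
    finally show "prodA 3 (tp 3 s t) c = lin (\<lambda>u. prodA 3 (tvec s) (tp 3 t u)) c" .
  qed
  also have "\<dots> = lin (\<lambda>s. prodA 3 (tvec s) (prodA 3 b c)) a"
    by (simp only: prodA_lin[of 3 b c] prodA_lin_right)
  also have "\<dots> = prodA 3 a (prodA 3 b c)"
    by (rule prodA_expand_left[symmetric])
  finally show ?thesis .
qed

section \<open>Positions and admissible cuts\<close>

lemma ipos_Leaf [simp]: "ipos Leaf = {}"
proof -
  { fix p assume "p \<in> ipos Leaf" then have False by (cases p) (auto simp: ipos_def) }
  then show ?thesis by blast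
qed

lemma ipos_Node: "ipos (Node ts) = insert [] {i # p | i p. i < length ts \<and> p \<in> ipos (ts ! i)}"
proof (intro set_eqI iffI)
  fix q assume "q \<in> ipos (Node ts)"
  then show "q \<in> insert [] {i # p | i p. i < length ts \<and> p \<in> ipos (ts ! i)}"
    by (cases q) (auto simp: ipos_def split: if_splits)
next
  fix q assume "q \<in> insert [] {i # p | i p. i < length ts \<and> p \<in> ipos (ts ! i)}"
  then show "q \<in> ipos (Node ts)"
    by (auto simp: ipos_def)
qed

lemma finite_ipos: "finite (ipos t)"
proof (induction t)
  case Leaf
  then show ?case by simp
next
  case (Node ts)
  have "{i # p | i p. i < length ts \<and> p \<in> ipos (ts ! i)} = (\<Union>i<length ts. (\<lambda>p. i # p) ` ipos (ts ! i))"
    by auto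
  moreover have "finite (\<Union>i<length ts. (\<lambda>p. i # p) ` ipos (ts ! i))"
    using Node by auto
  ultimately show ?case by (simp add: ipos_Node)
qed

definition acut :: "nat list set \<Rightarrow> bool" where
  "acut C \<longleftrightarrow> (\<forall>p\<in>C. \<forall>q\<in>C. p \<noteq> q \<longrightarrow> \<not> (\<exists>r. q = p @ r))"

lemma adm_iff: "C \<in> admissible_cuts t \<longleftrightarrow> C \<subseteq> ipos t \<and> acut C"
  by (simp add: admissible_cuts_def acut_def)

lemma finite_adm: "finite (admissible_cuts t)"
proof -
  have "admissible_cuts t \<subseteq> Pow (ipos t)" by (auto simp: adm_iff)
  then show ?thesis using finite_ipos finite_subset by blast
qed

lemma adm_Leaf: "admissible_cuts Leaf = {{}}"
  by (auto simp: adm_iff acut_def)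

declare prune.simps [simp del] forest.simps [simp del]

lemma prune_top: "[] \<in> C \<Longrightarrow> prune C t = Leaf"
  by (subst prune.simps) simp

lemma prune_Leaf [simp]: "prune C Leaf = Leaf"
  by (subst prune.simps) simp

lemma prune_Node: "[] \<notin> C \<Longrightarrow> prune C (Node ts) = Node (map (\<lambda>i. prune {p. i # p \<in> C} (ts ! i)) [0..<length ts])"
  by (subst prune.simps) simp

lemma forest_top: "[] \<in> C \<Longrightarrow> forest C t = [t]"
  by (subst forest.simps) simp

lemma forest_Leaf: "[] \<notin> C \<Longrightarrow> forest C Leaf = []"
  by (subst forest.simps) simp

lemma forest_Node: "[] \<notin> C \<Longrightarrow> forest C (Node ts) = concat (map (\<lambda>i. forest {p. i # p \<in> C} (ts ! i)) [0..<length ts])"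
  by (subst forest.simps) simp

lemma prune_empty [simp]: "prune {} t = t"
proof (induction t)
  case Leaf
  then show ?case by simp
next
  case (Node ts)
  have "map (\<lambda>i. prune {} (ts ! i)) [0..<length ts] = map (\<lambda>i. ts ! i) [0..<length ts]"
    using Node by (auto intro!: map_cong)
  then show ?case by (simp add: prune_Node map_nth)
qed

lemma forest_empty [simp]: "forest {} t = []"
proof (induction t)
  case Leaf
  then show ?case by (simp add: forest_Leaf)
next
  case (Node ts)
  then show ?case by (auto simp: forest_Node)
qed

lemma forest_valid: "valid t \<Longrightarrow> s \<in> set (forest C t) \<Longrightarrow> valid s"
proof (induction C t rule: forest.induct)
  case (1 C t)
  show ?case
  proof (cases "[] \<in> C")
    case True
    then show ?thesis using 1 by (simp add: forest_top)
  next
    case False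
    show ?thesis
    proof (cases t)
      case Leaf
      then show ?thesis using 1 False by (simp add: forest_Leaf)
    next
      case (Node ts)
      with 1(3) False obtain i where i: "i < length ts" "s \<in> set (forest {p. i # p \<in> C} (ts ! i))"
        by (auto simp: forest_Node)
      have "valid (ts ! i)" using 1(2) Node i by auto
      then show ?thesis using 1(1)[OF False Node _ _ i(2)] i by simp
    qed
  qed
qed

definition PiL :: "tree list \<Rightarrow> 'k::field vec" where
  "PiL l = foldr (\<lambda>s acc. prodA 3 (tvec s) acc) l unitA"

lemma Gcut_Pi: "Gcut C t = PiL (forest C t)"
  by (simp add: Gcut_def PiL_def)

lemma Pi_Nil [simp]: "PiL [] = unitA" by (simp add: PiL_def)
lemma Pi_Cons: "PiL (s # l) = prodA 3 (tvec s) (PiL l)" by (simp add: PiL_def)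

lemma Pi_Aspace: "\<forall>s\<in>set l. valid s \<Longrightarrow> PiL l \<in> Aspace"
  by (induction l) (auto simp: Pi_Cons unitA_Aspace intro!: prodA_Aspace tvec_Aspace)

lemma Pi_append: "\<forall>s\<in>set l1. valid s \<Longrightarrow> \<forall>s\<in>set l2. valid s \<Longrightarrow> PiL (l1 @ l2) = prodA 3 (PiL l1) (PiL l2 :: 'k::field vec)"
  by (induction l1) (auto simp: Pi_Cons star_assoc tvec_Aspace Pi_Aspace)

fun PP :: "'k::field vec list \<Rightarrow> 'k vec" where
  "PP [] = unitA"
| "PP (a # as) = prodA 3 a (PP as)"

lemma Pi_concat: "\<forall>l\<in>set ls. \<forall>s\<in>set l. valid s \<Longrightarrow> PiL (concat ls) = PP (map PiL ls :: 'k::field vec list)"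
  by (induction ls) (auto simp: Pi_append)

fun zw :: "('a \<Rightarrow> 'b \<Rightarrow> 'c) \<Rightarrow> 'a list \<Rightarrow> 'b list \<Rightarrow> 'c list" where
  "zw f (c # cs) (t # ts) = f c t # zw f cs ts"
| "zw f _ _ = []"

lemma zw_map_upt: "length cs = length ts \<Longrightarrow> map (\<lambda>i. f (cs ! i) (ts ! i)) [0..<length ts] = zw f cs ts"
proof (induction cs arbitrary: ts)
  case Nil
  then show ?case by simp
next
  case (Cons c cs)
  then obtain t ts' where "ts = t # ts'" by (cases ts) auto
  with Cons show ?case by (simp add: map_upt_Suc del: upt_Suc)
qed

lemma map_zw: "map g (zw f cs ts) = zw (\<lambda>c t. g (f c t)) cs ts"
  by (induction f cs ts rule: zw.induct) auto

definition lset :: "'a set list \<Rightarrow> 'a list set" where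
  "lset As = {cs. length cs = length As \<and> (\<forall>i<length As. cs ! i \<in> As ! i)}"

lemma lset_Nil [simp]: "lset [] = {[]}"
  by (auto simp: lset_def)

lemma lset_Cons: "lset (A # As) = (\<lambda>(a, cs). a # cs) ` (A \<times> lset As)"
proof (intro set_eqI iffI)
  fix x assume "x \<in> lset (A # As)"
  then obtain a cs where "x = a # cs" by (cases x) (auto simp: lset_def)
  with \<open>x \<in> lset (A # As)\<close> show "x \<in> (\<lambda>(a, cs). a # cs) ` (A \<times> lset As)"
    by (force simp: lset_def)
next
  fix x assume "x \<in> (\<lambda>(a, cs). a # cs) ` (A \<times> lset As)"
  then show "x \<in> lset (A # As)"
    by (auto simp: lset_def nth_Cons split: nat.splits)
qed

lemma finite_lset: "\<forall>A\<in>set As. finite A \<Longrightarrow> finite (lset As)"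
  by (induction As) (auto simp: lset_Cons)

lemma sum_lset_Cons:
  assumes "finite A" "\<forall>B\<in>set As. finite B"
  shows "sum f (lset (A # As)) = (\<Sum>a\<in>A. \<Sum>cs\<in>lset As. f (a # cs))"
proof -
  have inj: "inj_on (\<lambda>(a, cs). a # cs) (A \<times> lset As)" by (auto simp: inj_on_def)
  have "sum f (lset (A # As)) = sum (f \<circ> (\<lambda>(a, cs). a # cs)) (A \<times> lset As)"
    unfolding lset_Cons by (rule sum.reindex[OF inj])
  also have "\<dots> = (\<Sum>x\<in>A \<times> lset As. f (fst x # snd x))"
    by (simp add: case_prod_beta comp_def)
  also have "\<dots> = (\<Sum>a\<in>A. \<Sum>cs\<in>lset As. f (a # cs))"
    using assms finite_lset by (simp add: sum.cartesian_product case_prod_beta)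
  finally show ?thesis .
qed

definition cjoin :: "nat list set list \<Rightarrow> nat list set" where
  "cjoin cs = {i # p | i p. i < length cs \<and> p \<in> cs ! i}"

lemma cjoin_nth: "i < length cs \<Longrightarrow> {p. i # p \<in> cjoin cs} = cs ! i"
  by (auto simp: cjoin_def)

lemma cjoin_nil: "[] \<notin> cjoin cs"
  by (auto simp: cjoin_def)

lemma cjoin_inj: "inj_on cjoin (lset As)"
proof (rule inj_onI)
  fix cs ds assume a: "cs \<in> lset As" "ds \<in> lset As" "cjoin cs = cjoin ds"
  then have l: "length cs = length ds" by (simp add: lset_def)
  have "cs ! i = ds ! i" if "i < length cs" for i
    using cjoin_nth[of i cs] cjoin_nth[of i ds] that l a(3) by simp
  then show "cs = ds" using l by (simp add: nth_equalityI)
qed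

lemma cjoin_image:
  "cjoin ` lset (map admissible_cuts ts) = admissible_cuts (Node ts) - {{[]}}"
proof (intro set_eqI iffI)
  fix C assume "C \<in> cjoin ` lset (map admissible_cuts ts)"
  then obtain cs where cs: "cs \<in> lset (map admissible_cuts ts)" "C = cjoin cs" by blast
  then have l: "length cs = length ts" and ci: "\<And>i. i < length ts \<Longrightarrow> cs ! i \<subseteq> ipos (ts ! i) \<and> acut (cs ! i)"
    by (auto simp: lset_def adm_iff)
  have "C \<subseteq> ipos (Node ts)"
    using cs(2) ci l by (auto simp: cjoin_def ipos_Node)
  moreover have "acut C"
  proof (unfold acut_def, intro ballI impI notI)
    fix p q assume pq: "p \<in> C" "q \<in> C" "p \<noteq> q" "\<exists>r. q = p @ r"
    from pq(1) cs(2) obtain i p' where p: "p = i # p'" "i < length cs" "p' \<in> cs ! i" by (auto simp: cjoin_def)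
    from pq(2) cs(2) obtain j q' where q: "q = j # q'" "j < length cs" "q' \<in> cs ! j" by (auto simp: cjoin_def)
    from pq(4) p q obtain r where r: "j = i" "q' = p' @ r" by auto
    with p q pq(3) have "p' \<in> cs ! i" "p' @ r \<in> cs ! i" "p' \<noteq> p' @ r" by auto
    moreover have "acut (cs ! i)" using ci[of i] p(2) l by simp
    ultimately show False unfolding acut_def by blast
  qed
  moreover have "C \<noteq> {[]}" using cs(2) cjoin_nil by blast
  ultimately show "C \<in> admissible_cuts (Node ts) - {{[]}}" by (simp add: adm_iff)
next
  fix C assume C: "C \<in> admissible_cuts (Node ts) - {{[]}}"
  then have sub: "C \<subseteq> ipos (Node ts)" and ac: "acut C" and ne: "C \<noteq> {[]}" by (auto simp: adm_iff)
  have nil: "[] \<notin> C"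
  proof
    assume "[] \<in> C"
    with ne obtain q where "q \<in> C" "q \<noteq> []" by blast
    with ac \<open>[] \<in> C\<close> show False unfolding acut_def by (metis append_Nil)
  qed
  define cs where "cs = map (\<lambda>i. {p. i # p \<in> C}) [0..<length ts]"
  have "cs \<in> lset (map admissible_cuts ts)"
  proof -
    have "{p. i # p \<in> C} \<in> admissible_cuts (ts ! i)" if "i < length ts" for i
    proof -
      have "{p. i # p \<in> C} \<subseteq> ipos (ts ! i)" using sub by (auto simp: ipos_Node)
      moreover have "acut {p. i # p \<in> C}"
        unfolding acut_def
      proof (intro ballI impI notI)
        fix p q assume "p \<in> {p. i # p \<in> C}" "q \<in> {p. i # p \<in> C}" "p \<noteq> q" "\<exists>r. q = p @ r"
        then have "i # p \<in> C" "i # q \<in> C" "i # p \<noteq> i # q" "\<exists>r. i # q = (i # p) @ r" by auto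
        with ac show False unfolding acut_def by blast
      qed
      ultimately show ?thesis by (simp add: adm_iff)
    qed
    then show ?thesis by (simp add: lset_def cs_def)
  qed
  moreover have "C = cjoin cs"
  proof (intro set_eqI iffI)
    fix q assume "q \<in> C"
    with nil sub obtain i p where "q = i # p" "i < length ts" by (auto simp: ipos_Node)
    with \<open>q \<in> C\<close> show "q \<in> cjoin cs" by (auto simp: cjoin_def cs_def)
  next
    fix q assume "q \<in> cjoin cs"
    then show "q \<in> C" by (auto simp: cjoin_def cs_def)
  qed
  ultimately show "C \<in> cjoin ` lset (map admissible_cuts ts)" by blast
qed

type_synonym 'k fvec = "(tree \<times> tree list) \<Rightarrow>\<^sub>0 'k"

lemma tens_lin_left: "tens (lin f a) b = lin (\<lambda>s. tens (f s) b) a"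
  by (simp add: tens_lin lin_lin)

lemma tens_lin_right: "tens a (lin f b) = lin (\<lambda>t. tens a (f t)) b"
proof -
  have "tens a (lin f b) = lin (\<lambda>s. lin (\<lambda>t. lin (\<lambda>q. Poly_Mapping.single (s, q) 1) (f t)) b) a"
    by (simp add: tens_lin lin_lin)
  also have "\<dots> = lin (\<lambda>t. lin (\<lambda>s. lin (\<lambda>q. Poly_Mapping.single (s, q) 1) (f t)) a) b"
    by (rule lin_swap)
  finally show ?thesis by (simp add: tens_lin)
qed

lemma lin_tens: "lin h (tens a b) = lin (\<lambda>s. lin (\<lambda>t. h (s, t)) b) a"
  by (simp add: tens_lin lin_lin)

lemma tens_single_right: "tens a (Poly_Mapping.single q 1) = lin (\<lambda>s. Poly_Mapping.single (s, q) 1) a"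
  by (simp add: tens_lin)

lemma tens_add_left: "tens (a + b) c = tens a c + tens b c"
  by (simp add: tens_lin lin_add)

lemma tens_add_right: "tens a (b + c) = tens a b + tens a c"
  by (simp add: tens_lin lin_add lin_fadd)

lemma tens_sum_left: "tens (sum f I) b = (\<Sum>i\<in>I. tens (f i) b)"
  by (simp add: tens_lin lin_sum)

lemma tens_sum_right: "tens a (sum f I) = (\<Sum>i\<in>I. tens a (f i))"
  by (simp add: tens_lin lin_sum lin_fsum)

lemma tens_zero_left [simp]: "tens 0 b = 0" by (simp add: tens_lin)
lemma tens_zero_right [simp]: "tens a 0 = 0" by (simp add: tens_lin)

lemma tens_scale_left: "tens (scale c a) b = scale c (tens a b)"
  by (simp add: tens_lin lin_scale)

lemma tens_scale_right: "tens a (scale c b) = scale c (tens a b)"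
  by (simp add: tens_lin lin_scale lin_fscale)

section \<open>The forest coproduct\<close>

definition odot :: "'k::field fvec \<Rightarrow> 'k fvec \<Rightarrow> 'k fvec" where
  "odot E E' = lin (\<lambda>u. lin (\<lambda>v. tens (tp 3 (fst u) (fst v)) (Poly_Mapping.single (snd u @ snd v) 1)) E') E"

definition Lw :: "'k::field vec2 \<Rightarrow> 'k fvec" where
  "Lw P = lin (\<lambda>u. Poly_Mapping.single (fst u, [snd u]) 1) P"

definition NodeMap :: "'k::field fvec \<Rightarrow> 'k vec2" where
  "NodeMap E = lin (\<lambda>u. Poly_Mapping.single (fst u, Node (snd u)) 1) E"

fun F :: "tree list \<Rightarrow> 'k::field fvec" where
  "F [] = Poly_Mapping.single (Leaf, []) 1"
| "F (t # ts) = odot (Lw (Delta_tree t)) (F ts)"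

definition CS :: "tree \<Rightarrow> 'k::field vec2" where
  "CS t = (\<Sum>C\<in>admissible_cuts t. tens (Gcut C t) (tvec (Pcut C t)))"

lemma odot_tens:
  "odot (tens a (Poly_Mapping.single ps 1)) (tens b (Poly_Mapping.single qs 1)) = tens (prodA 3 a b) (Poly_Mapping.single (ps @ qs) 1)"
  by (simp add: odot_def lin_tens prodA_lin tens_lin_left)

lemma odot_sum_left: "odot (sum f I) E = (\<Sum>i\<in>I. odot (f i) E)"
  by (simp add: odot_def lin_sum)

lemma odot_sum_right: "odot E (sum f I) = (\<Sum>i\<in>I. odot E (f i))"
  by (simp add: odot_def lin_sum lin_fsum)

lemma Lw_sum: "Lw (sum f I) = (\<Sum>i\<in>I. Lw (f i))"
  by (simp add: Lw_def lin_sum)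

lemma NodeMap_sum: "NodeMap (sum f I) = (\<Sum>i\<in>I. NodeMap (f i))"
  by (simp add: NodeMap_def lin_sum)

lemma Lw_tens: "Lw (tens a (tvec p)) = tens a (Poly_Mapping.single [p] 1)"
  by (simp add: Lw_def lin_tens tens_single_right)

lemma NodeMap_tens: "NodeMap (tens a (Poly_Mapping.single ps 1)) = tens a (tvec (Node ps))"
  by (simp add: NodeMap_def tens_single_right tvec_def lin_lin)

lemma tens_unit_single: "tens unitA (Poly_Mapping.single q 1) = Poly_Mapping.single (Leaf, q) 1"
  by (simp add: unitA_def tens_single_right)

lemma Delta_tree_Leaf: "Delta_tree Leaf = tens unitA unitA"
  by (simp add: Delta_tree_def)

lemma Delta_tree_CS: "Delta_tree t = CS t"
proof (cases "t = Leaf")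
  case True
  then show ?thesis
    by (simp add: Delta_tree_def CS_def adm_Leaf Gcut_Pi Pcut_def unitA_def)
next
  case False
  then show ?thesis by (simp add: Delta_tree_def CS_def)
qed

definition S :: "tree list \<Rightarrow> 'k::field fvec" where
  "S ts = (\<Sum>cs\<in>lset (map admissible_cuts ts). tens (PP (zw Gcut cs ts)) (Poly_Mapping.single (zw Pcut cs ts) 1))"

lemma S_F: "S ts = (F ts :: 'k::field fvec)"
proof (induction ts)
  case Nil
  then show ?case by (simp add: S_def tens_unit_single)
next
  case (Cons t ts)
  have fin: "\<forall>B\<in>set (map admissible_cuts ts). finite B" by (simp add: finite_adm)
  have "(S (t # ts) :: 'k fvec) = (\<Sum>c\<in>admissible_cuts t. \<Sum>cs\<in>lset (map admissible_cuts ts).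
      odot (Lw (tens (Gcut c t) (tvec (Pcut c t)))) (tens (PP (zw Gcut cs ts)) (Poly_Mapping.single (zw Pcut cs ts) 1)))"
    unfolding S_def using fin by (simp add: sum_lset_Cons finite_adm Lw_tens odot_tens)
  also have "\<dots> = odot (Lw (CS t)) (S ts)"
    by (simp add: CS_def S_def Lw_sum odot_sum_left odot_sum_right; rule sum.swap)
  finally show ?case using Cons by (simp add: Delta_tree_CS)
qed

lemma set_zw: "x \<in> set (zw f cs ts) \<Longrightarrow> \<exists>c t. t \<in> set ts \<and> x = f c t"
  by (induction f cs ts rule: zw.induct) auto

lemma CS_Node:
  assumes v: "valid (Node ts)"
  shows "CS (Node ts) = Poly_Mapping.single (Node ts, Leaf) 1 + NodeMap (S ts :: 'k::field fvec)"
proof -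
  let ?f = "\<lambda>C. tens (Gcut C (Node ts)) (tvec (Pcut C (Node ts))) :: 'k vec2"
  have top: "{[]} \<in> admissible_cuts (Node ts)"
    by (simp add: adm_iff ipos_Node acut_def)
  have "CS (Node ts) = ?f {[]} + sum ?f (admissible_cuts (Node ts) - {{[]}})"
    unfolding CS_def using top finite_adm by (simp add: sum.remove)
  also have "?f {[]} = Poly_Mapping.single (Node ts, Leaf) 1"
    by (simp add: Gcut_Pi Pcut_def forest_top prune_top Pi_Cons unitA_def[symmetric])
       (simp add: unitA_def)
  also have "sum ?f (admissible_cuts (Node ts) - {{[]}}) = sum (?f \<circ> cjoin) (lset (map admissible_cuts ts))"
    by (simp only: cjoin_image[symmetric] sum.reindex[OF cjoin_inj])
  also have "\<dots> = (\<Sum>cs\<in>lset (map admissible_cuts ts). NodeMap (tens (PP (zw Gcut cs ts)) (Poly_Mapping.single (zw Pcut cs ts) 1)))"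
  proof (rule sum.cong[OF refl])
    fix cs assume cs: "cs \<in> lset (map admissible_cuts ts)"
    then have l: "length cs = length ts" by (simp add: lset_def)
    have P: "Pcut (cjoin cs) (Node ts) = Node (zw Pcut cs ts)"
    proof -
      have "map (\<lambda>i. prune {p. i # p \<in> cjoin cs} (ts ! i)) [0..<length ts] = map (\<lambda>i. prune (cs ! i) (ts ! i)) [0..<length ts]"
        using l by (auto simp: cjoin_nth)
      then show ?thesis using l by (simp add: Pcut_def prune_Node cjoin_nil zw_map_upt Pcut_def[abs_def])
    qed
    have fo: "forest (cjoin cs) (Node ts) = concat (zw forest cs ts)"
    proof -
      have "map (\<lambda>i. forest {p. i # p \<in> cjoin cs} (ts ! i)) [0..<length ts] = map (\<lambda>i. forest (cs ! i) (ts ! i)) [0..<length ts]"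
        using l by (auto simp: cjoin_nth)
      then show ?thesis using l by (simp add: forest_Node cjoin_nil zw_map_upt)
    qed
    have vl: "\<forall>l\<in>set (zw forest cs ts). \<forall>s\<in>set l. valid s"
    proof (intro ballI)
      fix l s assume "l \<in> set (zw forest cs ts)" "s \<in> set l"
      then obtain c t where "t \<in> set ts" "l = forest c t" using set_zw by metis
      then show "valid s" using v \<open>s \<in> set l\<close> forest_valid by auto
    qed
    have G: "Gcut (cjoin cs) (Node ts) = (PP (zw Gcut cs ts) :: 'k vec)"
      using vl by (simp add: Gcut_Pi fo Pi_concat map_zw Gcut_Pi[abs_def])
    show "(?f \<circ> cjoin) cs = NodeMap (tens (PP (zw Gcut cs ts)) (Poly_Mapping.single (zw Pcut cs ts) 1))"
      by (simp add: P G NodeMap_tens)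
  qed
  also have "\<dots> = NodeMap (S ts)"
    by (simp add: S_def NodeMap_sum)
  finally show ?thesis .
qed

theorem Delta_rec:
  assumes "valid (Node ts)"
  shows "Delta_tree (Node ts) = Poly_Mapping.single (Node ts, Leaf) 1 + NodeMap (F ts :: 'k::field fvec)"
  using CS_Node[OF assms] by (simp add: Delta_tree_CS S_F)

lemma keys_tens: "Poly_Mapping.keys (tens a b) \<subseteq> Poly_Mapping.keys a \<times> Poly_Mapping.keys b"
  unfolding tens_lin by (intro keys_linI) (auto dest: keys_lin[THEN subsetD])

lemma keys_odot: "Poly_Mapping.keys (odot (A :: 'k::field fvec) B) \<subseteq>
   {(h, ps @ qs) | g ps G qs h. (g, ps) \<in> Poly_Mapping.keys A \<and> (G, qs) \<in> Poly_Mapping.keys B \<and> h \<in> Poly_Mapping.keys (tp 3 g G :: 'k vec)}"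
proof
  fix x assume "x \<in> Poly_Mapping.keys (odot A B)"
  then have "x \<in> (\<Union>u\<in>Poly_Mapping.keys A. Poly_Mapping.keys (lin (\<lambda>v. tens (tp 3 (fst u) (fst v) :: 'k vec) (Poly_Mapping.single (snd u @ snd v) 1)) B))"
    unfolding odot_def by (rule keys_lin[THEN subsetD])
  then obtain u where u: "u \<in> Poly_Mapping.keys A"
    "x \<in> Poly_Mapping.keys (lin (\<lambda>v. tens (tp 3 (fst u) (fst v) :: 'k vec) (Poly_Mapping.single (snd u @ snd v) 1)) B)"
    by (rule UN_E)
  then have "x \<in> (\<Union>v\<in>Poly_Mapping.keys B. Poly_Mapping.keys (tens (tp 3 (fst u) (fst v) :: 'k vec) (Poly_Mapping.single (snd u @ snd v) (1::'k))))"
    by (intro keys_lin[THEN subsetD])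
  then obtain v where v: "v \<in> Poly_Mapping.keys B"
    "x \<in> Poly_Mapping.keys (tens (tp 3 (fst u) (fst v) :: 'k vec) (Poly_Mapping.single (snd u @ snd v) (1::'k)))"
    by (rule UN_E)
  from keys_tens[THEN subsetD, OF v(2)] have "fst x \<in> Poly_Mapping.keys (tp 3 (fst u) (fst v) :: 'k vec)" "snd x = snd u @ snd v"
    by auto
  then show "x \<in> {(h, ps @ qs) | g ps G qs h. (g, ps) \<in> Poly_Mapping.keys A \<and> (G, qs) \<in> Poly_Mapping.keys B \<and> h \<in> Poly_Mapping.keys (tp 3 g G :: 'k vec)}"
    using u(1) v(1) by (intro CollectI exI[of _ "fst u"] exI[of _ "snd u"] exI[of _ "fst v"] exI[of _ "snd v"] exI[of _ "fst x"]) (auto simp: prod_eq_iff)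
qed

lemma keys_Lw: "Poly_Mapping.keys (Lw P) \<subseteq> {(g, [p]) | g p. (g, p) \<in> Poly_Mapping.keys P}"
  unfolding Lw_def by (intro keys_linI) auto

lemma keys_NodeMap: "Poly_Mapping.keys (NodeMap E) \<subseteq> {(g, Node ps) | g ps. (g, ps) \<in> Poly_Mapping.keys E}"
  unfolding NodeMap_def by (intro keys_linI) auto

definition KF :: "tree list \<Rightarrow> 'k::field fvec \<Rightarrow> bool" where
  "KF ts E \<longleftrightarrow> (\<forall>(g, ps)\<in>Poly_Mapping.keys E. valid g \<and> length ps = length ts \<and> (\<forall>p\<in>set ps. valid p) \<and>
      leaves g + sum_list (map leaves ps) = sum_list (map leaves ts) + 1)"

definition KD :: "tree \<Rightarrow> 'k::field vec2 \<Rightarrow> bool" where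
  "KD t P \<longleftrightarrow> (\<forall>(g, p)\<in>Poly_Mapping.keys P. valid g \<and> valid p \<and> leaves g + leaves p = leaves t + 1)"

lemma KF_Nil: "KF [] (F [] :: 'k::field fvec)"
  by (simp add: KF_def)

lemma KF_Cons:
  assumes "KD t (Delta_tree t :: 'k::field vec2)" "KF ts (F ts :: 'k fvec)"
  shows "KF (t # ts) (F (t # ts) :: 'k fvec)"
  unfolding KF_def
proof (intro ballI)
  fix u assume "u \<in> Poly_Mapping.keys (F (t # ts) :: 'k fvec)"
  then obtain g ps G qs h where u: "u = (h, ps @ qs)" "(g, ps) \<in> Poly_Mapping.keys (Lw (Delta_tree t) :: 'k fvec)"
    "(G, qs) \<in> Poly_Mapping.keys (F ts :: 'k fvec)" "h \<in> Poly_Mapping.keys (tp 3 g G :: 'k vec)"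
    using keys_odot by fastforce
  from u(2) obtain p where p: "ps = [p]" "(g, p) \<in> Poly_Mapping.keys (Delta_tree t :: 'k vec2)"
    using keys_Lw by blast
  from assms(1) p have g: "valid g" "valid p" "leaves g + leaves p = leaves t + 1"
    by (auto simp: KD_def)
  from assms(2) u(3) have G: "valid G" "length qs = length ts" "\<forall>p\<in>set qs. valid p"
    "leaves G + sum_list (map leaves qs) = sum_list (map leaves ts) + 1"
    by (auto simp: KF_def)
  from tp_keys[OF g(1) G(1) u(4)] have h: "valid h" "leaves h + 1 = leaves g + leaves G" by auto
  show "case u of (g, ps) \<Rightarrow> valid g \<and> length ps = length (t # ts) \<and> (\<forall>p\<in>set ps. valid p) \<and>
      leaves g + sum_list (map leaves ps) = sum_list (map leaves (t # ts)) + 1"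
    using u(1) p(1) g G h by auto
qed

lemma KF_of_KD: "(\<And>t. t \<in> set ts \<Longrightarrow> KD t (Delta_tree t :: 'k::field vec2)) \<Longrightarrow> KF ts (F ts :: 'k fvec)"
proof (induction ts)
  case Nil
  show ?case by (rule KF_Nil)
next
  case (Cons a ts)
  then show ?case by (intro KF_Cons) auto
qed

lemma KD_Delta: "valid t \<Longrightarrow> KD t (Delta_tree t :: 'k::field vec2)"
proof (induction t)
  case Leaf
  then show ?case by (simp add: Delta_tree_Leaf KD_def unitA_def)
next
  case (Node ts)
  have KFts: "KF ts (F ts :: 'k fvec)"
    using Node by (intro KF_of_KD) auto
  show ?case unfolding KD_def
  proof (intro ballI)
    fix u assume "u \<in> Poly_Mapping.keys (Delta_tree (Node ts) :: 'k vec2)"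
    moreover have e: "Delta_tree (Node ts) = Poly_Mapping.single (Node ts, Leaf) (1::'k) + NodeMap (F ts)"
      using Delta_rec[OF Node.prems] .
    ultimately have "u \<in> Poly_Mapping.keys (Poly_Mapping.single (Node ts, Leaf) (1::'k)) \<or> u \<in> Poly_Mapping.keys (NodeMap (F ts :: 'k fvec))"
      by (simp only: e in_keys_addD)
    then show "case u of (g, p) \<Rightarrow> valid g \<and> valid p \<and> leaves g + leaves p = leaves (Node ts) + 1"
    proof
      assume "u \<in> Poly_Mapping.keys (Poly_Mapping.single (Node ts, Leaf) (1::'k))"
      then show ?thesis using Node.prems by auto
    next
      assume "u \<in> Poly_Mapping.keys (NodeMap (F ts :: 'k fvec))"
      then obtain g ps where "u = (g, Node ps)" "(g, ps) \<in> Poly_Mapping.keys (F ts :: 'k fvec)"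
        using keys_NodeMap by blast
      with KFts Node.prems show ?thesis by (auto simp: KF_def)
    qed
  qed
qed

lemma KF_F: "\<forall>t\<in>set ts. valid t \<Longrightarrow> KF ts (F ts :: 'k::field fvec)"
proof (induction ts)
  case Nil
  show ?case by (rule KF_Nil)
next
  case (Cons a ts)
  then show ?case by (intro KF_Cons KD_Delta) auto
qed

lemma Delta_keys:
  assumes "valid t" "(g, p) \<in> Poly_Mapping.keys (Delta_tree t :: 'k::field vec2)"
  shows "valid g" "valid p" "leaves g + leaves p = leaves t + 1"
  using KD_Delta[OF assms(1), where 'k='k] assms(2) by (auto simp: KD_def)

lemma F_keys:
  assumes "\<forall>t\<in>set ts. valid t" "(g, ps) \<in> Poly_Mapping.keys (F ts :: 'k::field fvec)"
  shows "valid g" "length ps = length ts" "\<forall>p\<in>set ps. valid p"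
    "leaves g + sum_list (map leaves ps) = sum_list (map leaves ts) + 1"
  using KF_F[OF assms(1), where 'k='k] assms(2) by (auto simp: KF_def)

lemma odot_lin_left: "odot (lin f E) E' = lin (\<lambda>u. odot (f u) E') E"
  by (simp add: odot_def lin_lin)

lemma odot_lin_right: "odot E (lin f E') = lin (\<lambda>v. odot E (f v)) E'"
proof -
  have "odot E (lin f E') = lin (\<lambda>u. lin (\<lambda>v. lin (\<lambda>w. tens (tp 3 (fst u) (fst w)) (Poly_Mapping.single (snd u @ snd w) 1)) (f v)) E') E"
    by (simp add: odot_def lin_lin)
  also have "\<dots> = lin (\<lambda>v. lin (\<lambda>u. lin (\<lambda>w. tens (tp 3 (fst u) (fst w)) (Poly_Mapping.single (snd u @ snd w) 1)) (f v)) E) E'"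
    by (rule lin_swap)
  finally show ?thesis by (simp add: odot_def)
qed

lemma single_pair_tens: "Poly_Mapping.single (g, ps) (1::'k::field) = tens (tvec g) (Poly_Mapping.single ps 1)"
  by (simp add: tens_single_right)

lemma odot_single: "odot (Poly_Mapping.single u 1) (Poly_Mapping.single v 1) =
   tens (tp 3 (fst u) (fst v)) (Poly_Mapping.single (snd u @ snd v) (1::'k::field))"
  by (simp add: odot_def)

lemma odot_unit_left: "odot (Poly_Mapping.single (Leaf, []) 1) E = (E :: 'k::field fvec)"
proof -
  have "odot (Poly_Mapping.single (Leaf, []) 1) E = lin (\<lambda>v. Poly_Mapping.single v 1) E"
    by (simp add: odot_def tp3_Leaf_fun tens_tvec single_pair_tens[symmetric])
  then show ?thesis by (simp add: lin_id)
qed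

lemma odot_unit_right: "odot E (Poly_Mapping.single (Leaf, []) 1) = (E :: 'k::field fvec)"
proof -
  have "odot E (Poly_Mapping.single (Leaf, []) 1) = lin (\<lambda>v. Poly_Mapping.single v 1) E"
    by (simp add: odot_def single_pair_tens[symmetric])
  then show ?thesis by (simp add: lin_id)
qed

definition VF :: "'k::field fvec \<Rightarrow> bool" where
  "VF E \<longleftrightarrow> (\<forall>u\<in>Poly_Mapping.keys E. valid (fst u))"

lemma odot_expand_left: "odot X Y = lin (\<lambda>a. odot (Poly_Mapping.single a 1) Y) X"
proof -
  have "odot X Y = odot (lin (\<lambda>a. Poly_Mapping.single a 1) X) Y" by (simp add: lin_id)
  then show ?thesis by (simp only: odot_lin_left)
qed

lemma odot_expand_right: "odot X Y = lin (\<lambda>b. odot X (Poly_Mapping.single b 1)) Y"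
proof -
  have "odot X Y = odot X (lin (\<lambda>a. Poly_Mapping.single a 1) Y)" by (simp add: lin_id)
  then show ?thesis by (simp only: odot_lin_right)
qed

lemma odot_assoc:
  assumes "VF A" "VF B" "VF (C :: 'k::field fvec)"
  shows "odot (odot A B) C = odot A (odot B C)"
proof -
  let ?s = "\<lambda>a. Poly_Mapping.single a (1::'k)"
  have e1: "odot A B = lin (\<lambda>a. lin (\<lambda>b. odot (?s a) (?s b)) B) A"
    by (simp add: odot_def odot_single)
  have e2: "odot B C = lin (\<lambda>b. lin (\<lambda>c. odot (?s b) (?s c)) C) B"
    by (simp add: odot_def odot_single)
  have "odot (odot A B) C = lin (\<lambda>a. lin (\<lambda>b. odot (odot (?s a) (?s b)) C) B) A"
    unfolding e1 by (simp only: odot_lin_left)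
  also have "\<dots> = lin (\<lambda>a. lin (\<lambda>b. lin (\<lambda>c. odot (odot (?s a) (?s b)) (?s c)) C) B) A"
    by (subst odot_expand_right) (rule refl)
  also have "\<dots> = lin (\<lambda>a. lin (\<lambda>b. lin (\<lambda>c. odot (?s a) (odot (?s b) (?s c))) C) B) A"
  proof (intro lin_cong)
    fix a b c assume abc: "a \<in> Poly_Mapping.keys A" "b \<in> Poly_Mapping.keys B" "c \<in> Poly_Mapping.keys C"
    have v: "valid (fst a)" "valid (fst b)" "valid (fst c)" using assms abc by (auto simp: VF_def)
    show "odot (odot (?s a) (?s b)) (?s c) = odot (?s a) (odot (?s b) (?s c))"
      using assoc_tree[OF v, where 'k='k]
      by (cases a; cases b; cases c) (simp add: single_pair_tens odot_tens)
  qed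
  also have "\<dots> = lin (\<lambda>a. odot (?s a) (odot B C)) A"
    unfolding e2 by (simp only: odot_lin_right)
  also have "\<dots> = odot A (odot B C)"
    by (rule odot_expand_left[symmetric])
  finally show ?thesis .
qed

lemma VF_F: "\<forall>t\<in>set ts. valid t \<Longrightarrow> VF (F ts :: 'k::field fvec)"
  using F_keys(1) by (fastforce simp: VF_def)

lemma VF_Lw: "valid t \<Longrightarrow> VF (Lw (Delta_tree t :: 'k::field vec2))"
  unfolding VF_def using keys_Lw Delta_keys(1) by fastforce

lemma F_append: "\<forall>t\<in>set as. valid t \<Longrightarrow> \<forall>t\<in>set bs. valid t \<Longrightarrow> F (as @ bs) = odot (F as) (F bs :: 'k::field fvec)"
proof (induction as)
  case Nil
  then show ?case by (simp add: odot_unit_left)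
next
  case (Cons a as)
  then show ?case by (simp add: odot_assoc VF_F VF_Lw)
qed

lemma F_hole:
  assumes "\<forall>t\<in>set pre. valid t" "valid t" "\<forall>t\<in>set post. valid t"
  shows "F (pre @ t # post) = odot (odot (F pre) (Lw (Delta_tree t))) (F post :: 'k::field fvec)"
proof -
  have "F (pre @ t # post) = odot (F pre) (odot (Lw (Delta_tree t)) (F post) :: 'k fvec)"
    using assms by (simp add: F_append)
  also have "\<dots> = odot (odot (F pre) (Lw (Delta_tree t))) (F post)"
    using assms by (simp add: odot_assoc VF_F VF_Lw)
  finally show ?thesis .
qed

lemma Delta_cut_lin_vec: "Delta_cut (lin f v) = lin (\<lambda>t. Delta_cut (f t)) v"
  by (simp add: Delta_cut_lin lin_lin)

lemma Delta_cut_tvec [simp]: "Delta_cut (tvec t) = Delta_tree t"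
  by (simp add: Delta_cut_lin)

lemma Lw_lin: "Lw (lin f P) = lin (\<lambda>u. Lw (f u)) P"
  by (simp add: Lw_def lin_lin)

lemma NodeMap_lin: "NodeMap (lin f E) = lin (\<lambda>u. NodeMap (f u)) E"
  by (simp add: NodeMap_def lin_lin)

lemma NodeMap_add: "NodeMap (a + b) = NodeMap a + NodeMap b"
  by (simp add: NodeMap_def lin_add)

lemma barprod_lin_left: "barprod op (lin f P) Q = lin (\<lambda>u. barprod op (f u) Q) P"
  by (simp add: barprod_lin lin_lin)

lemma barprod_lin_right: "barprod op P (lin f Q) = lin (\<lambda>v. barprod op P (f v)) Q"
proof -
  have "barprod op P (lin f Q) = lin (\<lambda>u. lin (\<lambda>v. lin (\<lambda>w. bar_basis op u w) (f v)) Q) P"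
    by (simp add: barprod_lin lin_lin)
  also have "\<dots> = lin (\<lambda>v. lin (\<lambda>u. lin (\<lambda>w. bar_basis op u w) (f v)) P) Q"
    by (rule lin_swap)
  finally show ?thesis by (simp add: barprod_lin)
qed

lemma barprod_add_left: "barprod op (P + P') Q = barprod op P Q + barprod op P' Q"
  by (simp add: barprod_lin lin_add)

lemma barprod_add_right: "barprod op P (Q + Q') = barprod op P Q + barprod op P Q'"
  by (simp add: barprod_lin lin_add lin_fadd)

lemma barprod_single_left: "barprod op (Poly_Mapping.single u 1) Q = lin (\<lambda>v. bar_basis op u v) Q"
  by (simp add: barprod_lin)

lemma barprod_NodeMap_left: "barprod op (NodeMap E) Q = lin (\<lambda>e. lin (\<lambda>v. bar_basis op (fst e, Node (snd e)) v) Q) E"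
  by (simp add: NodeMap_def barprod_lin_left barprod_single_left)

lemma lin_NodeMap: "lin h (NodeMap E) = lin (\<lambda>e. h (fst e, Node (snd e))) E"
  by (simp add: NodeMap_def lin_lin)

lemma bb_LL: "x \<noteq> Leaf \<Longrightarrow> y \<noteq> Leaf \<Longrightarrow> bar_basis op (x, Leaf) (y, Leaf) = tens (tp op x y) unitA"
  by (simp add: bar_basis_def)

lemma bb_gen: "b \<noteq> Leaf \<or> d \<noteq> Leaf \<Longrightarrow> bar_basis op (a, b) (c, d) = tens (tp 3 a c) (tp op b d)"
  by (auto simp: bar_basis_def)

lemma lin_F_Nil: "lin h (F []) = h (Leaf, [])"
  by simp

lemma Delta_hole:
  assumes "\<forall>s\<in>set pre. valid s" "valid t" "\<forall>s\<in>set post. valid s" "1 \<le> length pre + length post"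
  shows "Delta_tree (Node (pre @ t # post)) = Poly_Mapping.single (Node (pre @ t # post), Leaf) 1
     + NodeMap (odot (odot (F pre) (Lw (Delta_tree t))) (F post) :: 'k::field fvec)"
proof -
  have "valid (Node (pre @ t # post))" using assms by auto
  from Delta_rec[OF this, where 'k='k] show ?thesis using F_hole[OF assms(1-3), where 'k='k] by simp
qed

lemma Delta_cut_H1:
  assumes "\<forall>s\<in>set pre. valid s" "v \<in> Aspace" "\<forall>s\<in>set post. valid s" "1 \<le> length pre + length post"
  shows "Delta_cut (H1 pre v post) = tens (H1 pre v post) unitA
     + NodeMap (odot (odot (F pre) (Lw (Delta_cut v))) (F post) :: 'k::field fvec)"
proof -
  have "Delta_cut (H1 pre v post) = lin (\<lambda>t. Delta_tree (Node (pre @ t # post))) v"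
    by (simp add: H1_def Delta_cut_lin_vec)
  also have "\<dots> = lin (\<lambda>t. Poly_Mapping.single (Node (pre @ t # post), Leaf) 1
     + NodeMap (odot (odot (F pre) (Lw (Delta_tree t))) (F post) :: 'k fvec)) v"
    using assms by (intro lin_cong Delta_hole) (auto dest: AspaceD)
  also have "\<dots> = tens (H1 pre v post) unitA + NodeMap (odot (odot (F pre) (Lw (Delta_cut v))) (F post))"
    by (simp add: lin_fadd H1_def tens_lin_left unitA_def Delta_cut_lin Lw_lin odot_lin_left odot_lin_right NodeMap_lin)
  finally show ?thesis .
qed

lemma odot_tens_left: "odot (tens A (Poly_Mapping.single ps 1)) E3 =
   lin (\<lambda>u3. tens (prodA 3 A (tvec (fst u3))) (Poly_Mapping.single (ps @ snd u3) 1)) (E3 :: 'k::field fvec)"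
proof -
  have "odot (tens A (Poly_Mapping.single ps 1)) E3 = lin (\<lambda>u3. odot (tens A (Poly_Mapping.single ps 1)) (Poly_Mapping.single u3 1)) E3"
    by (rule odot_expand_right)
  also have "\<dots> = lin (\<lambda>u3. tens (prodA 3 A (tvec (fst u3))) (Poly_Mapping.single (ps @ snd u3) 1)) E3"
  proof (rule lin_cong)
    fix u3 :: "tree \<times> tree list"
    show "odot (tens A (Poly_Mapping.single ps 1)) (Poly_Mapping.single u3 1) = tens (prodA 3 A (tvec (fst u3))) (Poly_Mapping.single (ps @ snd u3) (1::'k))"
      by (cases u3) (simp add: single_pair_tens odot_tens)
  qed
  finally show ?thesis .
qed

lemma Ex_expand: "odot (odot E (Lw X)) E3 = lin (\<lambda>u1. lin (\<lambda>ux. lin (\<lambda>u3.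
    tens (prodA 3 (tp 3 (fst u1) (fst ux)) (tvec (fst u3))) (Poly_Mapping.single (snd u1 @ snd ux # snd u3) 1)) E3) X) (E :: 'k::field fvec)"
proof -
  have "odot E (Lw X) = lin (\<lambda>u1. lin (\<lambda>ux. tens (tp 3 (fst u1) (fst ux)) (Poly_Mapping.single (snd u1 @ [snd ux]) (1::'k))) X) E"
    by (simp add: odot_def Lw_def lin_lin)
  then show ?thesis by (simp add: odot_lin_left odot_tens_left)
qed

lemma T_expand: "NodeMap (odot (odot E (Lw X)) E3) = lin (\<lambda>u1. lin (\<lambda>ux. lin (\<lambda>u3.
    tens (prodA 3 (tp 3 (fst u1) (fst ux)) (tvec (fst u3))) (tvec (Node (snd u1 @ snd ux # snd u3)))) E3) X) (E :: 'k::field fvec)"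
  by (simp add: Ex_expand NodeMap_lin NodeMap_tens)

lemma lin_prod2: "lin h (prod2 A B) = lin (\<lambda>a. lin (\<lambda>b. lin (\<lambda>G. lin (\<lambda>P. h (G, P)) (tp 3 (snd a) (snd b))) (tp 3 (fst a) (fst b))) B) A"
  by (simp add: prod2_lin lin_lin lin_tens)

lemma inner_swap: "lin (\<lambda>G. lin (\<lambda>P. lin (\<lambda>u3. tens (prodA 3 (tp 3 g1 G) (tvec (fst u3))) (tvec (Node (ps1 @ P # snd u3)))) E3) Pv) Gv
  = lin (\<lambda>u3. tens (prodA 3 (prodA 3 (tvec g1) Gv) (tvec (fst u3))) (H1 ps1 Pv (snd u3))) (E3 :: 'k::field fvec)"
proof -
  have "lin (\<lambda>G. lin (\<lambda>P. lin (\<lambda>u3. tens (prodA 3 (tp 3 g1 G) (tvec (fst u3))) (tvec (Node (ps1 @ P # snd u3)))) E3) Pv) Gv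
     = lin (\<lambda>G. lin (\<lambda>u3. lin (\<lambda>P. tens (prodA 3 (tp 3 g1 G) (tvec (fst u3))) (tvec (Node (ps1 @ P # snd u3)))) Pv) E3) Gv"
    by (intro lin_cong lin_swap)
  also have "\<dots> = lin (\<lambda>u3. lin (\<lambda>G. lin (\<lambda>P. tens (prodA 3 (tp 3 g1 G) (tvec (fst u3))) (tvec (Node (ps1 @ P # snd u3)))) Pv) Gv) E3"
    by (rule lin_swap)
  also have "\<dots> = lin (\<lambda>u3. lin (\<lambda>P. lin (\<lambda>G. tens (prodA 3 (tp 3 g1 G) (tvec (fst u3))) (tvec (Node (ps1 @ P # snd u3)))) Gv) Pv) E3"
    by (intro lin_cong lin_swap)
  also have "\<dots> = lin (\<lambda>u3. tens (prodA 3 (prodA 3 (tvec g1) Gv) (tvec (fst u3))) (H1 ps1 Pv (snd u3))) E3"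
    by (simp add: prodA_tvec_left prodA_lin_left tens_lin_left H1_def tens_lin_right)
  finally show ?thesis .
qed

lemma T_prod2: "NodeMap (odot (odot E (Lw (prod2 A B))) E3) = lin (\<lambda>u1. lin (\<lambda>a. lin (\<lambda>b. lin (\<lambda>u3.
    tens (prodA 3 (prodA 3 (tvec (fst u1)) (tp 3 (fst a) (fst b))) (tvec (fst u3))) (H1 (snd u1) (tp 3 (snd a) (snd b)) (snd u3))) E3) B) A) (E :: 'k::field fvec)"
  by (simp add: T_expand lin_prod2 inner_swap)

lemma star_tvec_Leaf_right [simp]: "prodA 3 a (tvec Leaf) = a"
  using star_unit_right by (simp add: unitA_def)

lemma star_tvec_Leaf_left [simp]: "prodA 3 (tvec Leaf) a = a"
  using star_unit_left by (simp add: unitA_def)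

lemma lin_odot_single_tens: "lin h (lin (\<lambda>u1. lin (\<lambda>ua. tens (A u1 ua) (Poly_Mapping.single (B u1 ua) 1)) X) E)
   = lin (\<lambda>u1. lin (\<lambda>ua. lin (\<lambda>G. h (G, B u1 ua)) (A u1 ua)) X) E"
  by (simp add: lin_lin lin_tens)

lemma Ex_post_Nil: "odot (odot E (Lw X)) (F []) = lin (\<lambda>u1. lin (\<lambda>ux.
    tens (tp 3 (fst u1) (fst ux)) (Poly_Mapping.single (snd u1 @ [snd ux]) 1)) X) (E :: 'k::field fvec)"
  by (simp add: Ex_expand)

lemma Ex_pre_Nil: "odot (odot (F []) (Lw X)) E3 = lin (\<lambda>ux. lin (\<lambda>u3.
    tens (prodA 3 (tvec (fst ux)) (tvec (fst u3))) (Poly_Mapping.single (snd ux # snd u3) 1)) E3) (X :: 'k::field vec2)"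
  by (simp add: Ex_expand)

lemma Ex_pre_Nil': "odot (odot (Poly_Mapping.single (Leaf, []) 1) (Lw X)) E3 = lin (\<lambda>ux. lin (\<lambda>u3.
    tens (prodA 3 (tvec (fst ux)) (tvec (fst u3))) (Poly_Mapping.single (snd ux # snd u3) 1)) E3) (X :: 'k::field vec2)"
  using Ex_pre_Nil by simp

lemma Delta_split:
  assumes "nl y"
  shows "Delta_tree y = Poly_Mapping.single (y, Leaf) 1 + NodeMap (F (kids y) :: 'k::field fvec)"
  using Delta_rec[of "kids y", where 'k='k] nl_Node[OF assms] assms by (simp add: nl_def)

lemma bb0_Node: "ps \<noteq> [] \<Longrightarrow> valid w \<Longrightarrow>
  bar_basis 0 (G, Node ps) (q, w) = tens (tp 3 G q) (H1 (butlast ps) (tp 3 (last ps) w) [] :: 'k::field vec)"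
proof -
  assume ps: "ps \<noteq> []" and w: "valid w"
  have "tp 0 (Node ps) w = (H1 (butlast ps) (tp 3 (last ps) w) [] :: 'k vec)"
  proof (cases "w = Leaf")
    case True
    then show ?thesis using ps by (simp add: tp0_Leaf_right)
  next
    case False
    then have "nl w" using w by (simp add: nl_def)
    then show ?thesis using ps by (simp add: tp0_gen nl_kids_ne nl_not_Leaf)
  qed
  then show ?thesis by (simp add: bb_gen)
qed

lemma compat_prec:
  assumes x: "x = Node (bx @ [xk])" "bx \<noteq> []" "\<forall>s\<in>set bx. valid s" "valid xk" and y: "nl y"
    and IH: "Delta_cut (tp 3 xk y) = prod2 (Delta_tree xk) (Delta_tree y :: 'k::field vec2)"
  shows "Delta_cut (tp 0 x y) = barprod 0 (Delta_tree x) (Delta_tree y :: 'k vec2)"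
proof -
  have vy: "valid y" using y by (simp add: nl_def)
  have lb: "1 \<le> length bx" using x(2) by (cases bx) auto
  have t0: "tp 0 x y = (H1 bx (tp 3 xk y) [] :: 'k vec)"
    using x y by (simp add: tp0_gen nl_kids_ne nl_not_Leaf)
  have L: "Delta_cut (tp 0 x y) = tens (tp 0 x y) unitA + lin (\<lambda>u1. lin (\<lambda>a. lin (\<lambda>b.
      tens (prodA 3 (tvec (fst u1)) (tp 3 (fst a) (fst b))) (H1 (snd u1) (tp 3 (snd a) (snd b)) [])) (Delta_tree y)) (Delta_tree xk)) (F bx :: 'k fvec)"
  proof -
    have "1 \<le> length bx + length ([]::tree list)" using x(2) by (cases bx) auto
    then show ?thesis unfolding t0 using x vy
      by (subst Delta_cut_H1) (auto simp: IH T_prod2 tp_Aspace prodA_tvec_left[symmetric])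
  qed
  have Dx: "Delta_tree x = Poly_Mapping.single (x, Leaf) 1 + NodeMap (odot (odot (F bx) (Lw (Delta_tree xk))) (F []) :: 'k fvec)"
    using Delta_hole[of bx xk "[]", where 'k='k] x lb by simp
  obtain Ey where Dy: "Delta_tree y = Poly_Mapping.single (y, Leaf) 1 + NodeMap (Ey :: 'k fvec)"
    using Delta_split[OF y] by blast
  have P1: "barprod 0 (Poly_Mapping.single (x, Leaf) 1) (Delta_tree y) = tens (tp 0 x y) (unitA :: 'k vec)"
    unfolding Dy using x y
    by (simp add: barprod_single_left lin_add lin_NodeMap bb_LL bb_gen nl_not_Leaf)
  have P2: "barprod 0 (NodeMap (odot (odot (F bx) (Lw (Delta_tree xk))) (F []))) (Delta_tree y) =
     lin (\<lambda>u1. lin (\<lambda>a. lin (\<lambda>G. lin (\<lambda>b. bar_basis 0 (G, Node (snd u1 @ [snd a])) b) (Delta_tree y)) (tp 3 (fst u1) (fst a))) (Delta_tree xk)) (F bx :: 'k fvec)"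
    unfolding barprod_NodeMap_left Ex_post_Nil by (simp add: lin_lin lin_tens)
  also have "\<dots> = lin (\<lambda>u1. lin (\<lambda>a. lin (\<lambda>G. lin (\<lambda>b. tens (tp 3 G (fst b)) (H1 (snd u1) (tp 3 (snd a) (snd b)) [])) (Delta_tree y)) (tp 3 (fst u1) (fst a))) (Delta_tree xk)) (F bx)"
  proof (intro lin_cong)
    fix u1 a G b assume b: "b \<in> Poly_Mapping.keys (Delta_tree y :: 'k vec2)"
    have "valid (snd b)" using Delta_keys(2)[OF vy, of "fst b" "snd b"] b by simp
    then show "bar_basis 0 (G, Node (snd u1 @ [snd a])) b = tens (tp 3 G (fst b)) (H1 (snd u1) (tp 3 (snd a) (snd b)) [] :: 'k vec)"
      by (cases b) (simp add: bb0_Node)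
  qed
  also have "\<dots> = lin (\<lambda>u1. lin (\<lambda>a. lin (\<lambda>b. lin (\<lambda>G. tens (tp 3 G (fst b)) (H1 (snd u1) (tp 3 (snd a) (snd b)) [])) (tp 3 (fst u1) (fst a))) (Delta_tree y)) (Delta_tree xk)) (F bx)"
    by (intro lin_cong lin_swap)
  also have "\<dots> = lin (\<lambda>u1. lin (\<lambda>a. lin (\<lambda>b. tens (prodA 3 (tp 3 (fst u1) (fst a)) (tvec (fst b))) (H1 (snd u1) (tp 3 (snd a) (snd b)) [])) (Delta_tree y)) (Delta_tree xk)) (F bx)"
    by (simp add: prodA_tvec_right tens_lin_left)
  finally have P2': "barprod 0 (NodeMap (odot (odot (F bx) (Lw (Delta_tree xk))) (F []))) (Delta_tree y) =
    lin (\<lambda>u1. lin (\<lambda>a. lin (\<lambda>b. tens (prodA 3 (tp 3 (fst u1) (fst a)) (tvec (fst b))) (H1 (snd u1) (tp 3 (snd a) (snd b)) [])) (Delta_tree y)) (Delta_tree xk)) (F bx :: 'k fvec)" .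
  have R: "barprod 0 (Delta_tree x) (Delta_tree y) = tens (tp 0 x y) unitA +
    lin (\<lambda>u1. lin (\<lambda>a. lin (\<lambda>b. tens (prodA 3 (tp 3 (fst u1) (fst a)) (tvec (fst b))) (H1 (snd u1) (tp 3 (snd a) (snd b)) [])) (Delta_tree y)) (Delta_tree xk)) (F bx :: 'k fvec)"
    by (subst Dx) (simp only: barprod_add_left P1 P2')
  show ?thesis unfolding L R
  proof (intro arg_cong[where f="\<lambda>z. tens (tp 0 x y) unitA + z"] lin_cong)
    fix u1 a b
    assume u1: "u1 \<in> Poly_Mapping.keys (F bx :: 'k fvec)" and a: "a \<in> Poly_Mapping.keys (Delta_tree xk :: 'k vec2)"
      and b: "b \<in> Poly_Mapping.keys (Delta_tree y :: 'k vec2)"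
    have "valid (fst u1)" using F_keys(1)[OF x(3), of "fst u1" "snd u1"] u1 by simp
    moreover have "valid (fst a)" using Delta_keys(1)[OF x(4), of "fst a" "snd a"] a by simp
    moreover have "valid (fst b)" using Delta_keys(1)[OF vy, of "fst b" "snd b"] b by simp
    ultimately show "tens (prodA 3 (tvec (fst u1)) (tp 3 (fst a) (fst b))) (H1 (snd u1) (tp 3 (snd a) (snd b)) []) =
       tens (prodA 3 (tp 3 (fst u1) (fst a)) (tvec (fst b))) (H1 (snd u1) (tp 3 (snd a) (snd b)) [] :: 'k vec)"
      by (simp add: assoc_tree)
  qed
qed

lemma barprod_single_right: "barprod op P (Poly_Mapping.single v 1) = lin (\<lambda>u. bar_basis op u v) P"
  by (simp add: barprod_lin)

lemma barprod_NodeMap_right: "barprod op P (NodeMap E) = lin (\<lambda>u. lin (\<lambda>f. bar_basis op u (fst f, Node (snd f))) E) P"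
  by (simp add: NodeMap_def barprod_lin_right barprod_single_right) (rule lin_swap)

lemma compat_dot:
  assumes x: "x = Node (bx @ [xk])" "bx \<noteq> []" "\<forall>s\<in>set bx. valid s" "valid xk"
    and y: "y = Node (y0 # ty)" "ty \<noteq> []" "valid y0" "\<forall>s\<in>set ty. valid s"
    and IH: "Delta_cut (tp 3 xk y0) = prod2 (Delta_tree xk) (Delta_tree y0 :: 'k::field vec2)"
  shows "Delta_cut (tp 1 x y) = barprod 1 (Delta_tree x) (Delta_tree y :: 'k vec2)"
proof -
  have lb: "1 \<le> length bx" using x(2) by (cases bx) auto
  have lt: "1 \<le> length ty" using y(2) by (cases ty) auto
  have t1: "tp 1 x y = (H1 bx (tp 3 xk y0) ty :: 'k vec)"
    using x y by (simp add: tp1_gen)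
  have L: "Delta_cut (tp 1 x y) = tens (tp 1 x y) unitA + lin (\<lambda>u1. lin (\<lambda>a. lin (\<lambda>b. lin (\<lambda>u3.
      tens (prodA 3 (prodA 3 (tvec (fst u1)) (tp 3 (fst a) (fst b))) (tvec (fst u3))) (H1 (snd u1) (tp 3 (snd a) (snd b)) (snd u3)))
      (F ty)) (Delta_tree y0)) (Delta_tree xk)) (F bx :: 'k fvec)"
    unfolding t1 using x y lb
    by (subst Delta_cut_H1) (auto simp: IH T_prod2 tp_Aspace)
  have Dx: "Delta_tree x = Poly_Mapping.single (x, Leaf) 1 + NodeMap (odot (odot (F bx) (Lw (Delta_tree xk))) (F []) :: 'k fvec)"
    using Delta_hole[of bx xk "[]", where 'k='k] x lb by simp
  have Dy: "Delta_tree y = Poly_Mapping.single (y, Leaf) 1 + NodeMap (odot (odot (F []) (Lw (Delta_tree y0))) (F ty) :: 'k fvec)"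
    using Delta_hole[of "[]" y0 ty, where 'k='k] y lt by simp
  let ?Ex = "odot (odot (F bx) (Lw (Delta_tree xk))) (F []) :: 'k fvec"
  let ?Ey = "odot (odot (F []) (Lw (Delta_tree y0))) (F ty) :: 'k fvec"
  have P1: "barprod 1 (Poly_Mapping.single (x, Leaf) 1) (Delta_tree y) = tens (tp 1 x y) (unitA :: 'k vec)"
    unfolding Dy using x y
    by (simp add: barprod_single_left lin_add lin_NodeMap bb_LL bb_gen)
  have P2: "barprod 1 (NodeMap ?Ex) (Poly_Mapping.single (y, Leaf) 1) = 0"
    by (simp add: barprod_NodeMap_left bb_gen lin_eq_zero)
  have "barprod 1 (NodeMap ?Ex) (NodeMap ?Ey) =
     lin (\<lambda>u1. lin (\<lambda>a. lin (\<lambda>G. lin (\<lambda>b. lin (\<lambda>u3. lin (\<lambda>G'.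
       bar_basis 1 (G, Node (snd u1 @ [snd a])) (G', Node (snd b # snd u3))) (tp 3 (fst b) (fst u3))) (F ty)) (Delta_tree y0))
       (tp 3 (fst u1) (fst a))) (Delta_tree xk)) (F bx)"
    unfolding barprod_NodeMap_left Ex_post_Nil by (simp add: lin_lin lin_tens lin_NodeMap Ex_pre_Nil')
  also have "\<dots> = lin (\<lambda>u1. lin (\<lambda>a. lin (\<lambda>G. lin (\<lambda>b. lin (\<lambda>u3. lin (\<lambda>G'.
       tens (tp 3 G G') (H1 (snd u1) (tp 3 (snd a) (snd b)) (snd u3))) (tp 3 (fst b) (fst u3))) (F ty)) (Delta_tree y0))
       (tp 3 (fst u1) (fst a))) (Delta_tree xk)) (F bx)"
    by (intro lin_cong) (simp add: bb_gen tp1_gen)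
  also have "\<dots> = lin (\<lambda>u1. lin (\<lambda>a. lin (\<lambda>b. lin (\<lambda>G. lin (\<lambda>u3. lin (\<lambda>G'.
       tens (tp 3 G G') (H1 (snd u1) (tp 3 (snd a) (snd b)) (snd u3))) (tp 3 (fst b) (fst u3))) (F ty))
       (tp 3 (fst u1) (fst a))) (Delta_tree y0)) (Delta_tree xk)) (F bx)"
    by (intro lin_cong lin_swap)
  also have "\<dots> = lin (\<lambda>u1. lin (\<lambda>a. lin (\<lambda>b. lin (\<lambda>u3. lin (\<lambda>G. lin (\<lambda>G'.
       tens (tp 3 G G') (H1 (snd u1) (tp 3 (snd a) (snd b)) (snd u3))) (tp 3 (fst b) (fst u3)))
       (tp 3 (fst u1) (fst a))) (F ty)) (Delta_tree y0)) (Delta_tree xk)) (F bx)"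
    by (intro lin_cong lin_swap)
  also have "\<dots> = lin (\<lambda>u1. lin (\<lambda>a. lin (\<lambda>b. lin (\<lambda>u3.
       tens (prodA 3 (tp 3 (fst u1) (fst a)) (tp 3 (fst b) (fst u3))) (H1 (snd u1) (tp 3 (snd a) (snd b)) (snd u3)))
       (F ty)) (Delta_tree y0)) (Delta_tree xk)) (F bx)"
    by (simp add: prodA_lin tens_lin_left)
  finally have P3: "barprod 1 (NodeMap ?Ex) (NodeMap ?Ey) = lin (\<lambda>u1. lin (\<lambda>a. lin (\<lambda>b. lin (\<lambda>u3.
       tens (prodA 3 (tp 3 (fst u1) (fst a)) (tp 3 (fst b) (fst u3))) (H1 (snd u1) (tp 3 (snd a) (snd b)) (snd u3)))
       (F ty)) (Delta_tree y0)) (Delta_tree xk)) (F bx)" .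
  have R: "barprod 1 (Delta_tree x) (Delta_tree y) = tens (tp 1 x y) unitA + lin (\<lambda>u1. lin (\<lambda>a. lin (\<lambda>b. lin (\<lambda>u3.
       tens (prodA 3 (tp 3 (fst u1) (fst a)) (tp 3 (fst b) (fst u3))) (H1 (snd u1) (tp 3 (snd a) (snd b)) (snd u3)))
       (F ty)) (Delta_tree y0)) (Delta_tree xk)) (F bx :: 'k fvec)"
  proof -
    have e1: "barprod 1 (Delta_tree x) (Delta_tree y) = barprod 1 (Poly_Mapping.single (x, Leaf) 1) (Delta_tree y)
      + barprod 1 (NodeMap ?Ex) (Delta_tree y)"
      unfolding Dx by (rule barprod_add_left)
    have e2: "barprod 1 (NodeMap ?Ex) (Delta_tree y) = barprod 1 (NodeMap ?Ex) (Poly_Mapping.single (y, Leaf) 1) + barprod 1 (NodeMap ?Ex) (NodeMap ?Ey)"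
      unfolding Dy by (rule barprod_add_right)
    show ?thesis by (simp only: e1 e2 P1 P2 P3) simp
  qed
  show ?thesis unfolding L R
  proof (intro arg_cong[where f="\<lambda>z. tens (tp 1 x y) unitA + z"] lin_cong)
    fix u1 a b u3
    assume u1: "u1 \<in> Poly_Mapping.keys (F bx :: 'k fvec)" and a: "a \<in> Poly_Mapping.keys (Delta_tree xk :: 'k vec2)"
      and b: "b \<in> Poly_Mapping.keys (Delta_tree y0 :: 'k vec2)" and u3: "u3 \<in> Poly_Mapping.keys (F ty :: 'k fvec)"
    have v1: "valid (fst u1)" using F_keys(1)[OF x(3), of "fst u1" "snd u1"] u1 by simp
    have va: "valid (fst a)" using Delta_keys(1)[OF x(4), of "fst a" "snd a"] a by simp
    have vb: "valid (fst b)" using Delta_keys(1)[OF y(3), of "fst b" "snd b"] b by simp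
    have v3: "valid (fst u3)" using F_keys(1)[OF y(4), of "fst u3" "snd u3"] u3 by simp
    have "prodA 3 (prodA 3 (tvec (fst u1)) (tp 3 (fst a) (fst b))) (tvec (fst u3)) =
          prodA 3 (prodA 3 (tp 3 (fst u1) (fst a)) (tvec (fst b))) (tvec (fst u3) :: 'k vec)"
      using v1 va vb by (simp add: assoc_tree)
    also have "\<dots> = prodA 3 (tp 3 (fst u1) (fst a)) (prodA 3 (tvec (fst b)) (tvec (fst u3)))"
      using v1 va vb v3 by (intro star_assoc tp_Aspace tvec_Aspace)
    finally show "tens (prodA 3 (prodA 3 (tvec (fst u1)) (tp 3 (fst a) (fst b))) (tvec (fst u3))) (H1 (snd u1) (tp 3 (snd a) (snd b)) (snd u3)) =
      tens (prodA 3 (tp 3 (fst u1) (fst a)) (tp 3 (fst b) (fst u3))) (H1 (snd u1) (tp 3 (snd a) (snd b)) (snd u3) :: 'k vec)"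
      by simp
  qed
qed

lemma compat_succ:
  assumes x: "nl x"
    and y: "y = Node (y0 # ty)" "ty \<noteq> []" "valid y0" "\<forall>s\<in>set ty. valid s"
    and IH: "Delta_cut (tp 3 x y0) = prod2 (Delta_tree x) (Delta_tree y0 :: 'k::field vec2)"
  shows "Delta_cut (tp 2 x y) = barprod 2 (Delta_tree x) (Delta_tree y :: 'k vec2)"
proof -
  have vx: "valid x" using x by (simp add: nl_def)
  have lt: "1 \<le> length ty" using y(2) by (cases ty) auto
  have t2: "tp 2 x y = (H1 [] (tp 3 x y0) ty :: 'k vec)"
    using x y by (simp add: tp2_gen nl_kids_ne nl_not_Leaf)
  have L: "Delta_cut (tp 2 x y) = tens (tp 2 x y) unitA + lin (\<lambda>a. lin (\<lambda>b. lin (\<lambda>u3.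
      tens (prodA 3 (tp 3 (fst a) (fst b)) (tvec (fst u3))) (H1 [] (tp 3 (snd a) (snd b)) (snd u3)))
      (F ty)) (Delta_tree y0)) (Delta_tree x :: 'k vec2)"
    unfolding t2 using vx y lt
    by (subst Delta_cut_H1) (auto simp: IH T_prod2 tp_Aspace)
  obtain Ex where Dx: "Delta_tree x = Poly_Mapping.single (x, Leaf) 1 + NodeMap (Ex :: 'k fvec)"
    using Delta_split[OF x] by blast
  have Dy: "Delta_tree y = Poly_Mapping.single (y, Leaf) 1 + NodeMap (odot (odot (F []) (Lw (Delta_tree y0))) (F ty) :: 'k fvec)"
    using Delta_hole[of "[]" y0 ty, where 'k='k] y lt by simp
  let ?Ey = "odot (odot (F []) (Lw (Delta_tree y0))) (F ty) :: 'k fvec"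
  have P1: "barprod 2 (Delta_tree x) (Poly_Mapping.single (y, Leaf) 1) = tens (tp 2 x y) (unitA :: 'k vec)"
    unfolding Dx using x y
    by (simp add: barprod_single_right lin_add lin_NodeMap bb_LL bb_gen nl_not_Leaf lin_eq_zero)
  have "barprod 2 (Delta_tree x) (NodeMap ?Ey) =
     lin (\<lambda>a. lin (\<lambda>b. lin (\<lambda>u3. lin (\<lambda>G'.
       bar_basis 2 a (G', Node (snd b # snd u3))) (tp 3 (fst b) (fst u3))) (F ty)) (Delta_tree y0)) (Delta_tree x)"
    unfolding barprod_NodeMap_right by (simp add: lin_lin lin_tens Ex_pre_Nil')
  also have "\<dots> = lin (\<lambda>a. lin (\<lambda>b. lin (\<lambda>u3. lin (\<lambda>G'.
       tens (tp 3 (fst a) G') (H1 [] (tp 3 (snd a) (snd b)) (snd u3))) (tp 3 (fst b) (fst u3))) (F ty)) (Delta_tree y0)) (Delta_tree x)"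
  proof (intro lin_cong)
    fix a b u3 G' assume a: "a \<in> Poly_Mapping.keys (Delta_tree x :: 'k vec2)"
    have va: "valid (snd a)" using Delta_keys(2)[OF vx, of "fst a" "snd a"] a by simp
    have "tp 2 (snd a) (Node (snd b # snd u3)) = (H1 [] (tp 3 (snd a) (snd b)) (snd u3) :: 'k vec)"
    proof (cases "snd a = Leaf")
      case True
      then show ?thesis by (simp add: tp2_Leaf_left)
    next
      case False
      then have "nl (snd a)" using va by (simp add: nl_def)
      then show ?thesis by (simp add: tp2_gen nl_kids_ne nl_not_Leaf)
    qed
    then show "bar_basis 2 a (G', Node (snd b # snd u3)) = tens (tp 3 (fst a) G') (H1 [] (tp 3 (snd a) (snd b)) (snd u3) :: 'k vec)"
      by (cases a) (simp add: bb_gen)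
  qed
  also have "\<dots> = lin (\<lambda>a. lin (\<lambda>b. lin (\<lambda>u3.
       tens (prodA 3 (tvec (fst a)) (tp 3 (fst b) (fst u3))) (H1 [] (tp 3 (snd a) (snd b)) (snd u3))) (F ty)) (Delta_tree y0)) (Delta_tree x)"
    by (simp add: prodA_tvec_left tens_lin_left)
  finally have P2: "barprod 2 (Delta_tree x) (NodeMap ?Ey) = lin (\<lambda>a. lin (\<lambda>b. lin (\<lambda>u3.
       tens (prodA 3 (tvec (fst a)) (tp 3 (fst b) (fst u3))) (H1 [] (tp 3 (snd a) (snd b)) (snd u3))) (F ty)) (Delta_tree y0)) (Delta_tree x)" .
  have R: "barprod 2 (Delta_tree x) (Delta_tree y) = tens (tp 2 x y) unitA + lin (\<lambda>a. lin (\<lambda>b. lin (\<lambda>u3.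
       tens (prodA 3 (tvec (fst a)) (tp 3 (fst b) (fst u3))) (H1 [] (tp 3 (snd a) (snd b)) (snd u3))) (F ty)) (Delta_tree y0)) (Delta_tree x :: 'k vec2)"
  proof -
    have "barprod 2 (Delta_tree x) (Delta_tree y) = barprod 2 (Delta_tree x) (Poly_Mapping.single (y, Leaf) 1) + barprod 2 (Delta_tree x) (NodeMap ?Ey)"
      unfolding Dy by (rule barprod_add_right)
    then show ?thesis by (simp only: P1 P2)
  qed
  show ?thesis unfolding L R
  proof (intro arg_cong[where f="\<lambda>z. tens (tp 2 x y) unitA + z"] lin_cong)
    fix a b u3
    assume a: "a \<in> Poly_Mapping.keys (Delta_tree x :: 'k vec2)"
      and b: "b \<in> Poly_Mapping.keys (Delta_tree y0 :: 'k vec2)" and u3: "u3 \<in> Poly_Mapping.keys (F ty :: 'k fvec)"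
    have va: "valid (fst a)" using Delta_keys(1)[OF vx, of "fst a" "snd a"] a by simp
    have vb: "valid (fst b)" using Delta_keys(1)[OF y(3), of "fst b" "snd b"] b by simp
    have v3: "valid (fst u3)" using F_keys(1)[OF y(4), of "fst u3" "snd u3"] u3 by simp
    show "tens (prodA 3 (tp 3 (fst a) (fst b)) (tvec (fst u3))) (H1 [] (tp 3 (snd a) (snd b)) (snd u3)) =
      tens (prodA 3 (tvec (fst a)) (tp 3 (fst b) (fst u3))) (H1 [] (tp 3 (snd a) (snd b)) (snd u3) :: 'k vec)"
      using va vb v3 by (simp add: assoc_tree)
  qed
qed

lemma prod2_lin_left: "prod2 (lin f P) Q = lin (\<lambda>u. prod2 (f u) Q) P"
  by (simp add: prod2_lin lin_lin)

lemma prod2_lin_right: "prod2 P (lin f Q) = lin (\<lambda>v. prod2 P (f v)) Q"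
proof -
  have "prod2 P (lin f Q) = lin (\<lambda>u. lin (\<lambda>v. lin (\<lambda>w. tens (tp 3 (fst u) (fst w)) (tp 3 (snd u) (snd w))) (f v)) Q) P"
    by (simp add: prod2_lin lin_lin)
  also have "\<dots> = lin (\<lambda>v. lin (\<lambda>u. lin (\<lambda>w. tens (tp 3 (fst u) (fst w)) (tp 3 (snd u) (snd w))) (f v)) P) Q"
    by (rule lin_swap)
  finally show ?thesis by (simp add: prod2_lin)
qed

lemma nl_leaves: "nl x \<Longrightarrow> 2 \<le> leaves x"
proof -
  assume "nl x"
  then obtain bx xk where x: "x = Node (bx @ [xk])" "bx \<noteq> []" "valid xk" "\<forall>s\<in>set bx. valid s"
    using nl_decomp_last by metis
  have "1 \<le> sum_list (map leaves bx)" using sum_list_leaves_pos[OF x(2) x(4)] .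
  moreover have "1 \<le> leaves xk" using leaves_pos[OF x(3)] .
  ultimately show ?thesis using x(1) by simp
qed

lemma Delta_keys_not_LL: "nl x \<Longrightarrow> (Leaf, Leaf) \<notin> Poly_Mapping.keys (Delta_tree x :: 'k::field vec2)"
  using Delta_keys(3)[of x Leaf Leaf, where 'k='k] nl_leaves[of x] by (auto simp: nl_def)

lemma sum_ops: "b \<noteq> Leaf \<or> d \<noteq> Leaf \<Longrightarrow> tp 0 b d + tp 1 b d + tp 2 b d = (tp 3 b d :: 'k::field vec)"
  by (cases "b = Leaf"; cases "d = Leaf") (auto simp: tp3_split tp2_Leaf_left tp0_Leaf_right)

lemma sum_bb: "u \<noteq> (Leaf, Leaf) \<Longrightarrow> v \<noteq> (Leaf, Leaf) \<Longrightarrow>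
  bar_basis 0 u v + bar_basis 1 u v + bar_basis 2 u v = (tens (tp 3 (fst u) (fst v)) (tp 3 (snd u) (snd v)) :: 'k::field vec2)"
proof -
  assume a: "u \<noteq> (Leaf, Leaf)" "v \<noteq> (Leaf, Leaf)"
  obtain a1 a2 where u: "u = (a1, a2)" by (cases u)
  obtain c1 c2 where v: "v = (c1, c2)" by (cases v)
  show ?thesis
  proof (cases "a2 = Leaf \<and> c2 = Leaf")
    case True
    then have "a1 \<noteq> Leaf" "c1 \<noteq> Leaf" using a u v by auto
    then show ?thesis using True u v
      by (simp add: bb_LL tens_add_left[symmetric] tp3_split unitA_def)
  next
    case False
    then show ?thesis using u v
      by (simp add: bb_gen tens_add_right[symmetric] sum_ops)
  qed
qed

lemma sum_barprod:
  assumes "(Leaf, Leaf) \<notin> Poly_Mapping.keys P" "(Leaf, Leaf) \<notin> Poly_Mapping.keys Q"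
  shows "barprod 0 P Q + barprod 1 P Q + barprod 2 P Q = prod2 P (Q :: 'k::field vec2)"
proof -
  have "barprod 0 P Q + barprod 1 P Q + barprod 2 P Q = lin (\<lambda>u. lin (\<lambda>v. bar_basis 0 u v + bar_basis 1 u v + bar_basis 2 u v) Q) P"
    by (simp add: barprod_lin lin_fadd)
  also have "\<dots> = prod2 P Q"
    unfolding prod2_lin
  proof (intro lin_cong)
    fix u v assume "u \<in> Poly_Mapping.keys P" "v \<in> Poly_Mapping.keys Q"
    then have "u \<noteq> (Leaf, Leaf)" "v \<noteq> (Leaf, Leaf)" using assms by auto
    then show "bar_basis 0 u v + bar_basis 1 u v + bar_basis 2 u v = (tens (tp 3 (fst u) (fst v)) (tp 3 (snd u) (snd v)) :: 'k vec2)"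
      by (rule sum_bb)
  qed
  finally show ?thesis .
qed

lemma Delta_tree_Leaf': "Delta_tree Leaf = Poly_Mapping.single (Leaf, Leaf) (1::'k::field)"
  by (simp add: Delta_tree_Leaf unitA_def)

lemma prod2_Leaf_left: "prod2 (Delta_tree Leaf) Q = (Q :: 'k::field vec2)"
proof -
  have "prod2 (Delta_tree Leaf) Q = lin (\<lambda>u. Poly_Mapping.single u 1) Q"
    by (simp add: Delta_tree_Leaf' prod2_lin)
  then show ?thesis by (simp add: lin_id)
qed

lemma prod2_Leaf_right: "prod2 P (Delta_tree Leaf) = (P :: 'k::field vec2)"
proof -
  have "prod2 P (Delta_tree Leaf) = lin (\<lambda>u. Poly_Mapping.single u 1) P"
    by (simp add: Delta_tree_Leaf' prod2_lin)
  then show ?thesis by (simp add: lin_id)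
qed

lemma compat_mult_aux:
  "\<forall>x y. leaves x + leaves y = n \<longrightarrow> valid x \<longrightarrow> valid y \<longrightarrow>
     Delta_cut (tp 3 x y) = prod2 (Delta_tree x) (Delta_tree y :: 'k::field vec2) \<and>
     (nl x \<and> nl y \<longrightarrow> (\<forall>op<3. Delta_cut (tp op x y) = barprod op (Delta_tree x) (Delta_tree y :: 'k vec2)))"
proof (induction n rule: less_induct)
  case (less n)
  show ?case
  proof (intro allI impI)
    fix x y assume n: "leaves x + leaves y = n" and vx: "valid x" and vy: "valid y"
    have C: "nl x \<Longrightarrow> nl y \<Longrightarrow> Delta_cut (tp op x y) = barprod op (Delta_tree x) (Delta_tree y :: 'k vec2)" if op3: "op < 3" for op
    proof -
      assume nx: "nl x" and ny: "nl y"
      obtain bx xk where x: "x = Node (bx @ [xk])" "bx \<noteq> []" "valid xk" "\<forall>s\<in>set bx. valid s" "leaves xk < leaves x"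
        using nl_decomp_last[OF nx] by metis
      obtain y0 ty where y: "y = Node (y0 # ty)" "ty \<noteq> []" "valid y0" "\<forall>s\<in>set ty. valid s" "leaves y0 < leaves y"
        using nl_decomp_first[OF ny] by metis
      have IH1: "Delta_cut (tp 3 xk y) = prod2 (Delta_tree xk) (Delta_tree y :: 'k vec2)"
        using less.IH[rule_format, OF _ refl x(3) vy] n x(5) by simp
      have IH2: "Delta_cut (tp 3 xk y0) = prod2 (Delta_tree xk) (Delta_tree y0 :: 'k vec2)"
        using less.IH[rule_format, OF _ refl x(3) y(3)] n x(5) y(5) by simp
      have IH3: "Delta_cut (tp 3 x y0) = prod2 (Delta_tree x) (Delta_tree y0 :: 'k vec2)"
        using less.IH[rule_format, OF _ refl vx y(3)] n y(5) by simp
      consider "op = 0" | "op = 1" | "op = 2" using op3 by (auto simp: numeral_3_eq_3 less_Suc_eq)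
      then show ?thesis
      proof cases
        case 1
        then show ?thesis using compat_prec[OF x(1,2,4,3) ny IH1] by simp
      next
        case 2
        then show ?thesis using compat_dot[OF x(1,2,4,3) y(1-4) IH2] by simp
      next
        case 3
        then show ?thesis using compat_succ[OF nx y(1-4) IH3] by simp
      qed
    qed
    show "Delta_cut (tp 3 x y) = prod2 (Delta_tree x) (Delta_tree y :: 'k vec2) \<and>
     (nl x \<and> nl y \<longrightarrow> (\<forall>op<3. Delta_cut (tp op x y) = barprod op (Delta_tree x) (Delta_tree y :: 'k vec2)))"
    proof (intro conjI impI allI)
      show "Delta_cut (tp 3 x y) = prod2 (Delta_tree x) (Delta_tree y :: 'k vec2)"
      proof (cases "x = Leaf \<or> y = Leaf")
        case True
        then show ?thesis by (auto simp: prod2_Leaf_left prod2_Leaf_right)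
      next
        case False
        then have nx: "nl x" and ny: "nl y" using vx vy by (auto simp: nl_def)
        have "Delta_cut (tp 3 x y) = Delta_cut (tp 0 x y) + Delta_cut (tp 1 x y) + (Delta_cut (tp 2 x y) :: 'k vec2)"
          unfolding tp3_nl[OF nx ny] Delta_cut_lin by (simp only: lin_add)
        also have "\<dots> = barprod 0 (Delta_tree x) (Delta_tree y) + barprod 1 (Delta_tree x) (Delta_tree y) + barprod 2 (Delta_tree x) (Delta_tree y)"
          using C[OF _ nx ny] by simp
        also have "\<dots> = prod2 (Delta_tree x) (Delta_tree y)"
          using Delta_keys_not_LL[OF nx] Delta_keys_not_LL[OF ny] by (rule sum_barprod)
        finally show ?thesis .
      qed
    next
      fix op :: nat assume "nl x \<and> nl y" "op < 3"
      then show "Delta_cut (tp op x y) = barprod op (Delta_tree x) (Delta_tree y :: 'k vec2)"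
        using C by blast
    qed
  qed
qed

lemma mult_tree: "valid x \<Longrightarrow> valid y \<Longrightarrow> Delta_cut (tp 3 x y) = prod2 (Delta_tree x) (Delta_tree y :: 'k::field vec2)"
  using compat_mult_aux by blast

lemma compat_tree: "nl x \<Longrightarrow> nl y \<Longrightarrow> op < 3 \<Longrightarrow> Delta_cut (tp op x y) = barprod op (Delta_tree x) (Delta_tree y :: 'k::field vec2)"
  using compat_mult_aux nl_valid by blast

section \<open>Coassociativity\<close>

definition CL :: "tree \<Rightarrow> (tree \<times> (tree \<times> tree)) \<Rightarrow>\<^sub>0 'k::field" where
  "CL t = lin (\<lambda>s. lin (\<lambda>d. Poly_Mapping.single (fst d, (snd d, snd s)) 1) (Delta_tree (fst s))) (Delta_tree t)"

definition CR :: "tree \<Rightarrow> (tree \<times> (tree \<times> tree)) \<Rightarrow>\<^sub>0 'k::field" where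
  "CR t = lin (\<lambda>s. lin (\<lambda>d. Poly_Mapping.single (fst s, (fst d, snd d)) 1) (Delta_tree (snd s))) (Delta_tree t)"

definition XL :: "'k::field fvec \<Rightarrow> (tree \<times> (tree \<times> tree list)) \<Rightarrow>\<^sub>0 'k" where
  "XL E = lin (\<lambda>s. lin (\<lambda>d. Poly_Mapping.single (fst d, (snd d, snd s)) 1) (Delta_tree (fst s))) E"

definition XR :: "'k::field fvec \<Rightarrow> (tree \<times> (tree \<times> tree list)) \<Rightarrow>\<^sub>0 'k" where
  "XR E = lin (\<lambda>s. lin (\<lambda>d. Poly_Mapping.single (fst s, (fst d, snd d)) 1) (F (snd s))) E"

definition T3 :: "'k::field vec \<Rightarrow> 'k vec \<Rightarrow> tree list \<Rightarrow> (tree \<times> (tree \<times> tree list)) \<Rightarrow>\<^sub>0 'k" where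
  "T3 A B ps = lin (\<lambda>h1. lin (\<lambda>h2. Poly_Mapping.single (h1, (h2, ps)) 1) B) A"

definition op3 :: "((tree \<times> (tree \<times> tree)) \<Rightarrow>\<^sub>0 'k::field) \<Rightarrow> ((tree \<times> (tree \<times> tree list)) \<Rightarrow>\<^sub>0 'k) \<Rightarrow> (tree \<times> (tree \<times> tree list)) \<Rightarrow>\<^sub>0 'k" where
  "op3 Z W = lin (\<lambda>z. lin (\<lambda>w. T3 (tp 3 (fst z) (fst w)) (tp 3 (fst (snd z)) (fst (snd w))) (snd (snd z) # snd (snd w))) W) Z"

lemma odot_Lw_expand: "odot (Lw P) E = lin (\<lambda>s. lin (\<lambda>e. tens (tp 3 (fst s) (fst e)) (Poly_Mapping.single (snd s # snd e) 1)) E) (P :: 'k::field vec2)"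
  by (simp add: odot_def Lw_def lin_lin)

lemma Delta_cut_lin_tree: "lin (\<lambda>h. lin f (Delta_tree h)) A = lin f (Delta_cut A)"
  by (simp add: Delta_cut_lin lin_lin)

lemma XL_Cons:
  assumes "valid t" "\<forall>s\<in>set ts. valid s"
  shows "XL (F (t # ts)) = op3 (CL t) (XL (F ts) :: (tree \<times> (tree \<times> tree list)) \<Rightarrow>\<^sub>0 'k::field)"
proof -
  have "XL (F (t # ts)) = lin (\<lambda>s. lin (\<lambda>e. lin (\<lambda>d. Poly_Mapping.single (fst d, (snd d, snd s # snd e)) 1)
      (Delta_cut (tp 3 (fst s) (fst e)))) (F ts)) (Delta_tree t :: 'k vec2)"
    by (simp add: XL_def odot_Lw_expand lin_lin lin_tens Delta_cut_lin_tree)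
  also have "\<dots> = lin (\<lambda>s. lin (\<lambda>e. lin (\<lambda>d. Poly_Mapping.single (fst d, (snd d, snd s # snd e)) 1)
      (prod2 (Delta_tree (fst s)) (Delta_tree (fst e)))) (F ts)) (Delta_tree t)"
  proof (intro lin_cong)
    fix s e assume s: "s \<in> Poly_Mapping.keys (Delta_tree t :: 'k vec2)" and e: "e \<in> Poly_Mapping.keys (F ts :: 'k fvec)"
    have "valid (fst s)" using Delta_keys(1)[OF assms(1), of "fst s" "snd s"] s by simp
    moreover have "valid (fst e)" using F_keys(1)[OF assms(2), of "fst e" "snd e"] e by simp
    ultimately have "Delta_cut (tp 3 (fst s) (fst e)) = prod2 (Delta_tree (fst s)) (Delta_tree (fst e) :: 'k vec2)"
      by (rule mult_tree)
    then show "lin (\<lambda>d. Poly_Mapping.single (fst d, (snd d, snd s # snd e)) 1) (Delta_cut (tp 3 (fst s) (fst e))) =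
      lin (\<lambda>d. Poly_Mapping.single (fst d, (snd d, snd s # snd e)) (1::'k)) (prod2 (Delta_tree (fst s)) (Delta_tree (fst e)))"
      by simp
  qed
  also have "\<dots> = lin (\<lambda>s. lin (\<lambda>e. lin (\<lambda>a. lin (\<lambda>b. T3 (tp 3 (fst a) (fst b)) (tp 3 (snd a) (snd b)) (snd s # snd e))
      (Delta_tree (fst e))) (Delta_tree (fst s))) (F ts)) (Delta_tree t)"
    by (simp add: lin_prod2 T3_def)
  also have "\<dots> = lin (\<lambda>s. lin (\<lambda>a. lin (\<lambda>e. lin (\<lambda>b. T3 (tp 3 (fst a) (fst b)) (tp 3 (snd a) (snd b)) (snd s # snd e))
      (Delta_tree (fst e))) (F ts)) (Delta_tree (fst s))) (Delta_tree t)"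
    by (intro lin_cong lin_swap)
  also have "\<dots> = op3 (CL t) (XL (F ts))"
    by (simp add: op3_def CL_def XL_def lin_lin)
  finally show ?thesis .
qed

lemma XR_Cons:
  assumes "valid t" "\<forall>s\<in>set ts. valid s"
  shows "XR (F (t # ts)) = op3 (CR t) (XR (F ts) :: (tree \<times> (tree \<times> tree list)) \<Rightarrow>\<^sub>0 'k::field)"
proof -
  have "XR (F (t # ts)) = lin (\<lambda>s. lin (\<lambda>e. lin (\<lambda>h. lin (\<lambda>c. lin (\<lambda>f. lin (\<lambda>Q.
      Poly_Mapping.single (h, (Q, snd c # snd f)) 1) (tp 3 (fst c) (fst f))) (F (snd e))) (Delta_tree (snd s)))
      (tp 3 (fst s) (fst e))) (F ts)) (Delta_tree t :: 'k vec2)"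
    by (simp add: XR_def odot_Lw_expand lin_lin lin_tens)
  also have "\<dots> = lin (\<lambda>s. lin (\<lambda>e. lin (\<lambda>c. lin (\<lambda>h. lin (\<lambda>f. lin (\<lambda>Q.
      Poly_Mapping.single (h, (Q, snd c # snd f)) 1) (tp 3 (fst c) (fst f))) (F (snd e)))
      (tp 3 (fst s) (fst e))) (Delta_tree (snd s))) (F ts)) (Delta_tree t)"
    by (intro lin_cong lin_swap)
  also have "\<dots> = lin (\<lambda>s. lin (\<lambda>e. lin (\<lambda>c. lin (\<lambda>f. lin (\<lambda>h. lin (\<lambda>Q.
      Poly_Mapping.single (h, (Q, snd c # snd f)) 1) (tp 3 (fst c) (fst f)))
      (tp 3 (fst s) (fst e))) (F (snd e))) (Delta_tree (snd s))) (F ts)) (Delta_tree t)"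
    by (intro lin_cong lin_swap)
  also have "\<dots> = lin (\<lambda>s. lin (\<lambda>e. lin (\<lambda>c. lin (\<lambda>f. T3 (tp 3 (fst s) (fst e)) (tp 3 (fst c) (fst f)) (snd c # snd f))
      (F (snd e))) (Delta_tree (snd s))) (F ts)) (Delta_tree t)"
    by (simp add: T3_def)
  also have "\<dots> = lin (\<lambda>s. lin (\<lambda>c. lin (\<lambda>e. lin (\<lambda>f. T3 (tp 3 (fst s) (fst e)) (tp 3 (fst c) (fst f)) (snd c # snd f))
      (F (snd e))) (F ts)) (Delta_tree (snd s))) (Delta_tree t)"
    by (intro lin_cong lin_swap)
  also have "\<dots> = op3 (CR t) (XR (F ts))"
    by (simp add: op3_def CR_def XR_def lin_lin)
  finally show ?thesis .
qed

lemma XL_XR: "(\<And>t. t \<in> set ts \<Longrightarrow> valid t \<and> CL t = (CR t :: (tree \<times> (tree \<times> tree)) \<Rightarrow>\<^sub>0 'k::field)) \<Longrightarrow>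
  XL (F ts) = (XR (F ts) :: (tree \<times> (tree \<times> tree list)) \<Rightarrow>\<^sub>0 'k)"
proof (induction ts)
  case Nil
  then show ?case by (simp add: XL_def XR_def Delta_tree_Leaf')
next
  case (Cons t ts)
  then have "valid t" "\<forall>s\<in>set ts. valid s" "CL t = (CR t :: (tree \<times> (tree \<times> tree)) \<Rightarrow>\<^sub>0 'k)"
    "XL (F ts) = (XR (F ts) :: (tree \<times> (tree \<times> tree list)) \<Rightarrow>\<^sub>0 'k)" by auto
  then show ?case using XL_Cons[of t ts, where 'k='k] XR_Cons[of t ts, where 'k='k] by (simp del: F.simps)
qed

definition M3 :: "((tree \<times> (tree \<times> tree list)) \<Rightarrow>\<^sub>0 'k::field) \<Rightarrow> (tree \<times> (tree \<times> tree)) \<Rightarrow>\<^sub>0 'k" where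
  "M3 X = lin (\<lambda>z. Poly_Mapping.single (fst z, (fst (snd z), Node (snd (snd z)))) 1) X"

lemma CL_CR: "valid t \<Longrightarrow> CL t = (CR t :: (tree \<times> (tree \<times> tree)) \<Rightarrow>\<^sub>0 'k::field)"
proof (induction t)
  case Leaf
  then show ?case by (simp add: CL_def CR_def Delta_tree_Leaf')
next
  case (Node ts)
  have D: "Delta_tree (Node ts) = Poly_Mapping.single (Node ts, Leaf) 1 + NodeMap (F ts :: 'k fvec)"
    using Delta_rec[OF Node.prems] .
  have vts: "\<forall>s\<in>set ts. valid s" using Node.prems by simp
  have CLe: "CL (Node ts) = Poly_Mapping.single (Node ts, (Leaf, Leaf)) 1
     + lin (\<lambda>e. Poly_Mapping.single (fst e, (Node (snd e), Leaf)) 1) (F ts) + M3 (XL (F ts) :: (tree \<times> (tree \<times> tree list)) \<Rightarrow>\<^sub>0 'k)"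
    unfolding CL_def by (simp add: D lin_add lin_NodeMap M3_def XL_def lin_lin)
  have "CR (Node ts) = Poly_Mapping.single (Node ts, (Leaf, Leaf)) 1
     + lin (\<lambda>e. lin (\<lambda>d. Poly_Mapping.single (fst e, (fst d, snd d)) 1) (Delta_tree (Node (snd e)))) (F ts :: 'k fvec)"
    unfolding CR_def D by (simp add: lin_add lin_NodeMap Delta_tree_Leaf')
  also have "\<dots> = Poly_Mapping.single (Node ts, (Leaf, Leaf)) 1
     + lin (\<lambda>e. Poly_Mapping.single (fst e, (Node (snd e), Leaf)) 1 +
         lin (\<lambda>f. Poly_Mapping.single (fst e, (fst f, Node (snd f))) 1) (F (snd e))) (F ts :: 'k fvec)"
  proof (intro arg_cong[where f="\<lambda>z. Poly_Mapping.single (Node ts, (Leaf, Leaf)) 1 + z"] lin_cong)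
    fix e assume e: "e \<in> Poly_Mapping.keys (F ts :: 'k fvec)"
    have "length (snd e) = length ts" "\<forall>p\<in>set (snd e). valid p"
      using F_keys(2,3)[OF vts, of "fst e" "snd e"] e by auto
    then have "valid (Node (snd e))" using Node.prems by simp
    from Delta_rec[OF this, where 'k='k]
    show "lin (\<lambda>d. Poly_Mapping.single (fst e, (fst d, snd d)) 1) (Delta_tree (Node (snd e))) =
      Poly_Mapping.single (fst e, (Node (snd e), Leaf)) (1::'k) + lin (\<lambda>f. Poly_Mapping.single (fst e, (fst f, Node (snd f))) 1) (F (snd e))"
      by (simp add: lin_add lin_NodeMap)
  qed
  also have "\<dots> = Poly_Mapping.single (Node ts, (Leaf, Leaf)) 1
     + lin (\<lambda>e. Poly_Mapping.single (fst e, (Node (snd e), Leaf)) 1) (F ts) + M3 (XR (F ts) :: (tree \<times> (tree \<times> tree list)) \<Rightarrow>\<^sub>0 'k)"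
    by (simp add: lin_fadd M3_def XR_def lin_lin add.assoc)
  finally have CRe: "CR (Node ts) = Poly_Mapping.single (Node ts, (Leaf, Leaf)) 1
     + lin (\<lambda>e. Poly_Mapping.single (fst e, (Node (snd e), Leaf)) 1) (F ts) + M3 (XR (F ts) :: (tree \<times> (tree \<times> tree list)) \<Rightarrow>\<^sub>0 'k)" .
  have "XL (F ts) = (XR (F ts) :: (tree \<times> (tree \<times> tree list)) \<Rightarrow>\<^sub>0 'k)"
    using Node.IH Node.prems by (intro XL_XR) auto
  then show ?case by (simp only: CLe CRe)
qed

definition R3 :: "((tree \<times> tree) \<times> tree \<Rightarrow>\<^sub>0 'k::field) \<Rightarrow> (tree \<times> (tree \<times> tree)) \<Rightarrow>\<^sub>0 'k" where
  "R3 X = lin (\<lambda>z. Poly_Mapping.single (fst (fst z), (snd (fst z), snd z)) 1) X"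

lemma lookup_R3: "Poly_Mapping.lookup (R3 X) (u, (v, w)) = Poly_Mapping.lookup X ((u, v), w)"
proof -
  have "Poly_Mapping.lookup (R3 X) (u, (v, w)) = (\<Sum>z\<in>Poly_Mapping.keys X. if z = ((u, v), w) then Poly_Mapping.lookup X z else 0)"
    unfolding R3_def lookup_lin by (intro sum.cong) (auto simp: lookup_single when_def prod_eq_iff)
  also have "\<dots> = Poly_Mapping.lookup X ((u, v), w)"
    by (simp add: sum.delta in_keys_iff)
  finally show ?thesis .
qed

lemma R3_Delta_id: "R3 (Delta_id Delta_cut (Delta_cut a)) = lin CL (a :: 'k::field vec)"
  by (simp add: R3_def Delta_id_lin Delta_cut_lin lin_lin tens_lin CL_def[abs_def])

lemma id_Delta_CR: "id_Delta Delta_cut (Delta_cut a) = lin CR (a :: 'k::field vec)"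
  by (simp add: id_Delta_lin Delta_cut_lin lin_lin tens_lin CR_def[abs_def])

theorem coassoc:
  assumes "a \<in> (Aspace :: 'k::field vec set)"
  shows "Poly_Mapping.lookup (Delta_id Delta_cut (Delta_cut a)) ((u, v), w) = Poly_Mapping.lookup (id_Delta Delta_cut (Delta_cut a)) (u, (v, (w::tree)))"
proof -
  have "lin CL a = (lin CR a :: (tree \<times> (tree \<times> tree)) \<Rightarrow>\<^sub>0 'k)"
    using assms by (intro lin_cong CL_CR) (auto dest: AspaceD)
  then show ?thesis
    by (metis R3_Delta_id id_Delta_CR lookup_R3)
qed

lemma eps_tp3: "valid x \<Longrightarrow> valid y \<Longrightarrow> eps (tp 3 x y :: 'k::field vec) = eps (tvec x :: 'k vec) * eps (tvec y :: 'k vec)"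
proof (cases "x = Leaf \<and> y = Leaf")
  case True
  then show ?thesis by (simp add: eps_tvec)
next
  case False
  assume v: "valid x" "valid y"
  have "Leaf \<notin> Poly_Mapping.keys (tp 3 x y :: 'k vec)"
    using tp_keys(3)[OF v, of Leaf 3, where 'k='k] False by blast
  then have "eps (tp 3 x y :: 'k vec) = 0" by (simp add: eps_def in_keys_iff)
  then show ?thesis using False by (auto simp: eps_tvec)
qed

lemma eps_prodA3:
  assumes "a \<in> Aspace" "b \<in> Aspace"
  shows "eps (prodA 3 a b :: 'k::field vec) = eps a * eps b"
proof -
  have "eps (prodA 3 a b) = (\<Sum>s\<in>Poly_Mapping.keys a. \<Sum>t\<in>Poly_Mapping.keys b.
      Poly_Mapping.lookup a s * (Poly_Mapping.lookup b t * (eps (tvec s :: 'k vec) * eps (tvec t :: 'k vec))))"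
    unfolding prodA_lin eps_lin using assms
    by (intro sum.cong refl) (simp add: sum_distrib_left eps_tp3 AspaceD)
  also have "\<dots> = (\<Sum>s\<in>Poly_Mapping.keys a. Poly_Mapping.lookup a s * eps (tvec s :: 'k vec)) *
      (\<Sum>t\<in>Poly_Mapping.keys b. Poly_Mapping.lookup b t * eps (tvec t :: 'k vec))"
    by (simp add: sum_product algebra_simps)
  also have "\<dots> = eps a * eps b"
    by (subst (3) lin_id_tvec[symmetric], subst (4) lin_id_tvec[symmetric]) (simp only: eps_lin)
  finally show ?thesis .
qed

lemma eps_id_lin_vec: "eps_id (lin f a) = lin (\<lambda>t. eps_id (f t)) a"
  by (simp add: eps_id_lin lin_lin)

lemma id_eps_lin_vec: "id_eps (lin f a) = lin (\<lambda>t. id_eps (f t)) a"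
  by (simp add: id_eps_lin lin_lin)

lemma id_eps_Delta_tree: "valid t \<Longrightarrow> id_eps (Delta_tree t) = (tvec t :: 'k::field vec)"
proof (cases t)
  case Leaf
  then show ?thesis by (simp add: Delta_tree_Leaf' id_eps_lin eps_tvec)
next
  case (Node ts)
  assume "valid t"
  then have "Delta_tree t = Poly_Mapping.single (t, Leaf) 1 + NodeMap (F ts :: 'k fvec)"
    using Delta_rec Node by blast
  then show ?thesis
    by (simp add: id_eps_lin lin_add lin_NodeMap eps_tvec Node)
qed

lemma forest_nonleaf: "C \<subseteq> ipos t \<Longrightarrow> s \<in> set (forest C t) \<Longrightarrow> s \<noteq> Leaf"
proof (induction C t rule: forest.induct)
  case (1 C t)
  show ?case
  proof (cases "[] \<in> C")
    case True
    then have "[] \<in> ipos t" using 1(2) by auto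
    then show ?thesis using 1(3) True by (auto simp: forest_top ipos_def)
  next
    case False
    show ?thesis
    proof (cases t)
      case Leaf
      then show ?thesis using 1 False by (simp add: forest_Leaf)
    next
      case (Node ts)
      with 1(3) False obtain i where i: "i < length ts" "s \<in> set (forest {p. i # p \<in> C} (ts ! i))"
        by (auto simp: forest_Node)
      have "{p. i # p \<in> C} \<subseteq> ipos (ts ! i)" using 1(2) Node by (auto simp: ipos_Node)
      have ii: "i \<in> set [0..<length ts]" using i by simp
      show ?thesis using 1(1)[OF False Node ii \<open>{p. i # p \<in> C} \<subseteq> ipos (ts ! i)\<close> i(2)] .
    qed
  qed
qed

lemma forest_ne: "C \<subseteq> ipos t \<Longrightarrow> p \<in> C \<Longrightarrow> forest C t \<noteq> []"
proof (induction C t arbitrary: p rule: forest.induct)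
  case (1 C t)
  show ?case
  proof (cases "[] \<in> C")
    case True
    then show ?thesis by (simp add: forest_top)
  next
    case False
    show ?thesis
    proof (cases t)
      case Leaf
      then show ?thesis using 1 by auto
    next
      case (Node ts)
      with 1(2,3) False obtain i p' where p: "p = i # p'" "i < length ts" "p' \<in> ipos (ts ! i)"
        by (auto simp: ipos_Node)
      have sub: "{q. i # q \<in> C} \<subseteq> ipos (ts ! i)" using 1(2) Node by (auto simp: ipos_Node)
      have ii: "i \<in> set [0..<length ts]" using p by simp
      have pp: "p' \<in> {q. i # q \<in> C}" using p 1(3) by simp
      have "forest {q. i # q \<in> C} (ts ! i) \<noteq> []"
        using 1(1)[OF False Node ii sub pp] .
      then show ?thesis using Node False p(2) by (auto simp: forest_Node)
    qed
  qed
qed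

lemma eps_Pi: "\<forall>s\<in>set l. valid s \<Longrightarrow> eps (PiL l :: 'k::field vec) = (\<Prod>s\<leftarrow>l. eps (tvec s :: 'k vec))"
  by (induction l) (simp_all add: Pi_Cons eps_prodA3 tvec_Aspace Pi_Aspace unitA_def eps_tvec)

lemma eps_Gcut:
  assumes "valid t" "C \<in> admissible_cuts t"
  shows "eps (Gcut C t :: 'k::field vec) = (if C = {} then 1 else 0)"
proof -
  have sub: "C \<subseteq> ipos t" using assms(2) by (simp add: adm_iff)
  have v: "\<forall>s\<in>set (forest C t). valid s" using forest_valid assms(1) by blast
  have "eps (Gcut C t :: 'k vec) = (\<Prod>s\<leftarrow>forest C t. eps (tvec s :: 'k vec))"
    by (simp add: Gcut_Pi eps_Pi v)
  also have "\<dots> = (if C = {} then 1 else 0)"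
  proof (cases "C = {}")
    case True
    then show ?thesis by simp
  next
    case False
    then obtain p where "p \<in> C" by blast
    then obtain s l where "forest C t = s # l" using forest_ne[OF sub] by (cases "forest C t") auto
    moreover have "s \<noteq> Leaf" using forest_nonleaf[OF sub, of s] calculation by simp
    ultimately show ?thesis using False by (simp add: eps_tvec)
  qed
  finally show ?thesis .
qed

lemma scale_sum_left: "scale (sum c I) v = (\<Sum>i\<in>I. scale (c i) v)"
  by (rule poly_mapping_eqI) (simp add: lookup_sum sum_distrib_right)

lemma lin_scale_const: "lin (\<lambda>s. scale (eps (tvec s :: 'k::field vec)) v) A = scale (eps A) (v :: 'a \<Rightarrow>\<^sub>0 'k)"
proof -
  have e: "eps A = (\<Sum>x\<in>Poly_Mapping.keys A. Poly_Mapping.lookup A x * eps (tvec x :: 'k vec))"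
    using eps_lin[of tvec A] lin_id_tvec[of A] by simp
  show ?thesis unfolding lin_def e by (simp add: scale_sum_left)
qed

lemma eps_id_Delta_tree: "valid t \<Longrightarrow> eps_id (Delta_tree t) = (tvec t :: 'k::field vec)"
proof -
  assume v: "valid t"
  have "eps_id (Delta_tree t :: 'k vec2) = (\<Sum>C\<in>admissible_cuts t. eps_id (tens (Gcut C t) (tvec (Pcut C t)) :: 'k vec2))"
    by (simp add: Delta_tree_CS CS_def eps_id_lin lin_sum)
  also have "\<dots> = (\<Sum>C\<in>admissible_cuts t. if C = {} then tvec t else 0)"
  proof (rule sum.cong[OF refl])
    fix C assume C: "C \<in> admissible_cuts t"
    have "eps_id (tens (Gcut C t) (tvec (Pcut C t)) :: 'k vec2) = scale (eps (Gcut C t :: 'k vec)) (tvec (Pcut C t))"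
      by (simp add: eps_id_lin lin_tens lin_scale_const)
    also have "\<dots> = (if C = {} then tvec t else 0)"
      using eps_Gcut[OF v C, where 'k='k] by (simp add: Pcut_def)
    finally show "eps_id (tens (Gcut C t) (tvec (Pcut C t)) :: 'k vec2) = (if C = {} then tvec t else 0)" .
  qed
  also have "\<dots> = tvec t"
    by (simp add: sum.delta finite_adm adm_iff acut_def)
  finally show ?thesis .
qed

lemma Delta_cut_A2: "a \<in> Aspace \<Longrightarrow> Delta_cut (a :: 'k::field vec) \<in> A2space"
  unfolding A2space_def mem_Collect_eq Delta_cut_lin
proof (rule keys_linI)
  fix t assume "a \<in> Aspace" "t \<in> Poly_Mapping.keys a"
  then have "valid t" by (rule AspaceD)
  then show "Poly_Mapping.keys (Delta_tree t :: 'k vec2) \<subseteq> {(s, t). valid s \<and> valid t}"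
    using Delta_keys(1,2) by fastforce
qed

lemma linear_Delta: "linear_A (Delta_cut :: 'k::field vec \<Rightarrow> 'k vec2)"
  unfolding linear_A_def using Delta_cut_A2[where 'k='k] by (simp add: Delta_cut_lin lin_add lin_scale)

lemma Delta_mult:
  assumes "a \<in> Aspace" "b \<in> Aspace"
  shows "Delta_cut (prodA 3 a b) = prod2 (Delta_cut a) (Delta_cut (b :: 'k::field vec))"
proof -
  have "Delta_cut (prodA 3 a b) = lin (\<lambda>s. lin (\<lambda>t. Delta_cut (tp 3 s t)) b) a"
    by (simp add: prodA_lin Delta_cut_lin_vec)
  also have "\<dots> = lin (\<lambda>s. lin (\<lambda>t. prod2 (Delta_tree s) (Delta_tree t)) b) a"
    using assms by (intro lin_cong mult_tree) (auto dest: AspaceD)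
  also have "\<dots> = prod2 (Delta_cut a) (Delta_cut b)"
    by (simp add: Delta_cut_lin prod2_lin_left prod2_lin_right) (rule lin_swap)
  finally show ?thesis .
qed

lemma AplusD: "a \<in> Aplus \<Longrightarrow> t \<in> Poly_Mapping.keys a \<Longrightarrow> nl t"
  by (auto simp: Aplus_def nl_def)

lemma Delta_compat: "tridendriform_compatible (Delta_cut :: 'k::field vec \<Rightarrow> 'k vec2)"
  unfolding tridendriform_compatible_def
proof (intro ballI allI impI)
  fix x y :: "'k vec" and op :: nat assume xy: "x \<in> Aplus" "y \<in> Aplus" and op: "op < 3"
  have "Delta_cut (prodA op x y) = lin (\<lambda>s. lin (\<lambda>t. Delta_cut (tp op s t)) y) x"
    by (simp add: prodA_lin Delta_cut_lin_vec)
  also have "\<dots> = lin (\<lambda>s. lin (\<lambda>t. barprod op (Delta_tree s) (Delta_tree t)) y) x"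
    using xy op by (intro lin_cong compat_tree) (auto dest: AplusD)
  also have "\<dots> = barprod op (Delta_cut x) (Delta_cut y)"
    by (simp add: Delta_cut_lin barprod_lin_left barprod_lin_right) (rule lin_swap)
  finally show "Delta_cut (prodA op x y) = barprod op (Delta_cut x) (Delta_cut y)" .
qed

lemma deg_tp: "valid x \<Longrightarrow> valid y \<Longrightarrow> w \<in> Poly_Mapping.keys (tp op x y :: 'k::field vec) \<Longrightarrow> deg w = deg x + deg y"
  using tp_keys(2)[of x y w op, where 'k='k] leaves_pos[of x] leaves_pos[of y] leaves_pos[of w] tp_keys(1)[of x y w op, where 'k='k]
  by (simp add: deg_def)

lemma homog_star:
  assumes "a \<in> Aspace" "b \<in> Aspace" "homog n a" "homog m b"
  shows "homog (n + m) (prodA 3 a (b :: 'k::field vec))"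
  unfolding homog_def
proof
  fix w assume "w \<in> Poly_Mapping.keys (prodA 3 a b)"
  then have "w \<in> (\<Union>s\<in>Poly_Mapping.keys a. Poly_Mapping.keys (lin (\<lambda>t. tp 3 s t) b :: 'k vec))"
    unfolding prodA_lin by (rule keys_lin[THEN subsetD])
  then obtain s where s: "s \<in> Poly_Mapping.keys a" "w \<in> Poly_Mapping.keys (lin (\<lambda>t. tp 3 s t) b :: 'k vec)"
    by (rule UN_E)
  then have "w \<in> (\<Union>t\<in>Poly_Mapping.keys b. Poly_Mapping.keys (tp 3 s t :: 'k vec))"
    by (intro keys_lin[THEN subsetD])
  then obtain t where t: "t \<in> Poly_Mapping.keys b" "w \<in> Poly_Mapping.keys (tp 3 s t :: 'k vec)"
    by (rule UN_E)
  have "deg w = deg s + deg t" using deg_tp[OF AspaceD[OF assms(1) s(1)] AspaceD[OF assms(2) t(1)] t(2)] .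
  then show "deg w = n + m" using assms(3,4) s(1) t(1) by (simp add: homog_def)
qed

lemma homog_Delta:
  assumes "a \<in> Aspace" "homog n (a :: 'k::field vec)"
  shows "\<forall>(s, t)\<in>Poly_Mapping.keys (Delta_cut a). deg s + deg t = n"
proof
  fix u assume "u \<in> Poly_Mapping.keys (Delta_cut a)"
  then have "u \<in> (\<Union>t0\<in>Poly_Mapping.keys a. Poly_Mapping.keys (Delta_tree t0 :: 'k vec2))"
    unfolding Delta_cut_lin by (rule keys_lin[THEN subsetD])
  then obtain t0 where t0: "t0 \<in> Poly_Mapping.keys a" "u \<in> Poly_Mapping.keys (Delta_tree t0 :: 'k vec2)"
    by (rule UN_E)
  have v: "valid t0" using AspaceD[OF assms(1) t0(1)] .
  obtain s t where u: "u = (s, t)" by (cases u)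
  have "valid s" "valid t" "leaves s + leaves t = leaves t0 + 1"
    using Delta_keys[OF v, of s t, where 'k='k] t0(2) u by auto
  moreover have "deg t0 = n" using assms(2) t0(1) by (simp add: homog_def)
  ultimately show "case u of (s, t) \<Rightarrow> deg s + deg t = n"
    using u leaves_pos[of s] leaves_pos[of t] by (auto simp: deg_def)
qed

lemma valid_leaves_1: "valid t \<Longrightarrow> leaves t \<le> 1 \<Longrightarrow> t = Leaf"
  using nl_leaves[of t] by (cases "t = Leaf") (auto simp: nl_def)

lemma connected: "{a \<in> (Aspace :: 'k::field vec set). homog 0 a} = range (\<lambda>c. scale c unitA)"
proof (intro set_eqI iffI)
  fix a :: "'k vec" assume "a \<in> {a \<in> Aspace. homog 0 a}"
  then have k: "Poly_Mapping.keys a \<subseteq> {Leaf}"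
    using valid_leaves_1 by (auto simp: homog_def Aspace_def deg_def)
  have "a = scale (Poly_Mapping.lookup a Leaf) unitA"
  proof (rule poly_mapping_eqI)
    fix t show "Poly_Mapping.lookup a t = Poly_Mapping.lookup (scale (Poly_Mapping.lookup a Leaf) unitA) t"
      using k by (cases "t = Leaf") (auto simp: unitA_def lookup_tvec in_keys_iff)
  qed
  then show "a \<in> range (\<lambda>c. scale c unitA)" by blast
next
  fix a :: "'k vec" assume "a \<in> range (\<lambda>c. scale c unitA)"
  then obtain c where a: "a = scale c unitA" by blast
  have "Poly_Mapping.keys a \<subseteq> {Leaf}" using keys_scale[of c "unitA :: 'k vec"] a by (simp add: unitA_def)
  then show "a \<in> {a \<in> Aspace. homog 0 a}" by (auto simp: Aspace_def homog_def deg_def)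
qed

lemma eps_homog: "a \<in> Aspace \<Longrightarrow> homog n a \<Longrightarrow> 0 < n \<Longrightarrow> eps (a :: 'k::field vec) = 0"
proof -
  assume h: "homog n a" "0 < n"
  have "Leaf \<notin> Poly_Mapping.keys a"
  proof
    assume "Leaf \<in> Poly_Mapping.keys a"
    then have "deg Leaf = n" using h(1) by (simp add: homog_def)
    then show False using h(2) by (simp add: deg_def)
  qed
  then show ?thesis by (simp add: eps_def in_keys_iff)
qed

lemma eps_id_Delta: "a \<in> Aspace \<Longrightarrow> eps_id (Delta_cut a) = (a :: 'k::field vec)"
proof -
  assume a: "a \<in> Aspace"
  have "eps_id (Delta_cut a) = lin (\<lambda>t. eps_id (Delta_tree t)) a" by (simp add: Delta_cut_lin eps_id_lin_vec)
  also have "\<dots> = lin tvec a" using a by (intro lin_cong eps_id_Delta_tree) (auto dest: AspaceD)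
  finally show ?thesis by (simp add: lin_id_tvec)
qed

lemma id_eps_Delta: "a \<in> Aspace \<Longrightarrow> id_eps (Delta_cut a) = (a :: 'k::field vec)"
proof -
  assume a: "a \<in> Aspace"
  have "id_eps (Delta_cut a) = lin (\<lambda>t. id_eps (Delta_tree t)) a" by (simp add: Delta_cut_lin id_eps_lin_vec)
  also have "\<dots> = lin tvec a" using a by (intro lin_cong id_eps_Delta_tree) (auto dest: AspaceD)
  finally show ?thesis by (simp add: lin_id_tvec)
qed

theorem gcb_Delta: "graded_connected_bialgebra (Delta_cut :: 'k::field vec \<Rightarrow> 'k vec2)"
  unfolding graded_connected_bialgebra_def
  by (auto simp: star_assoc coassoc eps_id_Delta id_eps_Delta Delta_mult Delta_tree_Leaf unitA_def[symmetric]
      eps_prodA3 homog_star homog_Delta eps_homog connected)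
     (simp_all add: unitA_def eps_tvec Delta_tree_Leaf')

section \<open>Uniqueness\<close>

lemma valid_leaves_2: "valid t \<Longrightarrow> leaves t = 2 \<Longrightarrow> t = Node [Leaf, Leaf]"
proof -
  assume v: "valid t" and l: "leaves t = 2"
  then obtain ts where t: "t = Node ts" by (cases t) auto
  with v obtain a b rest where ts: "ts = a # b # rest" "valid a" "valid b" "\<forall>s\<in>set rest. valid s"
    by (cases ts rule: remdups_adj.cases) auto
  have la: "1 \<le> leaves a" "1 \<le> leaves b" using ts leaves_pos by auto
  have s2: "leaves a + leaves b + sum_list (map leaves rest) = 2" using l t ts by simp
  have "leaves a = 1" using s2 la by linarith
  moreover have "leaves b = 1" using s2 la by linarith
  moreover have s0: "sum_list (map leaves rest) = 0" using s2 la by linarith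
  moreover have "rest = []"
  proof (rule ccontr)
    assume "rest \<noteq> []"
    then have "1 \<le> sum_list (map leaves rest)" using sum_list_leaves_pos ts(4) by blast
    then show False using s0 by simp
  qed
  ultimately show ?thesis using t ts valid_leaves_1 by auto
qed

lemma two_key_vec:
  assumes "Poly_Mapping.keys P \<subseteq> {u, v}" "u \<noteq> v"
  shows "P = Poly_Mapping.single u (Poly_Mapping.lookup P u) + Poly_Mapping.single v (Poly_Mapping.lookup P v)"
proof (rule poly_mapping_eqI)
  fix w show "Poly_Mapping.lookup P w = Poly_Mapping.lookup (Poly_Mapping.single u (Poly_Mapping.lookup P u) + Poly_Mapping.single v (Poly_Mapping.lookup P v)) w"
    using assms by (cases "w = u"; cases "w = v") (auto simp: lookup_add lookup_single in_keys_iff)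
qed

abbreviation "Yt \<equiv> Node [Leaf, Leaf]"

lemma Y_determined:
  assumes k: "Poly_Mapping.keys P \<subseteq> {(Leaf, Yt), (Yt, Leaf)}"
    and e1: "eps_id P = tvec Yt" and e2: "id_eps P = (tvec Yt :: 'k::field vec)"
  shows "P = Poly_Mapping.single (Leaf, Yt) 1 + Poly_Mapping.single (Yt, Leaf) 1"
proof -
  define \<alpha> where "\<alpha> = Poly_Mapping.lookup P (Leaf, Yt)"
  define \<beta> where "\<beta> = Poly_Mapping.lookup P (Yt, Leaf)"
  have P: "P = Poly_Mapping.single (Leaf, Yt) \<alpha> + Poly_Mapping.single (Yt, Leaf) \<beta>"
    unfolding \<alpha>_def \<beta>_def using k by (rule two_key_vec) simp
  have "eps_id P = scale \<alpha> (tvec Yt)"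
    by (subst P) (simp add: eps_id_lin lin_add eps_tvec)
  then have "\<alpha> = 1" using e1 by (metis lookup_scale lookup_tvec mult.right_neutral)
  have "id_eps P = scale \<beta> (tvec Yt)"
    by (subst P) (simp add: id_eps_lin lin_add eps_tvec)
  then have "\<beta> = 1" using e2 by (metis lookup_scale lookup_tvec mult.right_neutral)
  show ?thesis using P \<open>\<alpha> = 1\<close> \<open>\<beta> = 1\<close> by simp
qed

lemma Y_keys:
  assumes "valid s" "valid t" "leaves s + leaves t = 3"
  shows "(s, t) \<in> {(Leaf, Yt), (Yt, Leaf)}"
proof -
  have "1 \<le> leaves s" "1 \<le> leaves t" using assms leaves_pos by auto
  then consider "leaves s = 1" "leaves t = 2" | "leaves s = 2" "leaves t = 1" using assms(3) by linarith
  then show ?thesis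
    by cases (use assms valid_leaves_1 valid_leaves_2 in auto)
qed

lemma decompose_tree:
  assumes v: "valid t" and l: "3 \<le> leaves t"
  shows "\<exists>x y op. op < 3 \<and> nl x \<and> nl y \<and> leaves x < leaves t \<and> leaves y < leaves t \<and> tp op x y = (tvec t :: 'k::field vec)"
proof -
  from v l obtain ts where t: "t = Node ts" by (cases t) auto
  with v have ts: "2 \<le> length ts" "\<forall>s\<in>set ts. valid s" by auto
  show ?thesis
  proof (cases "3 \<le> length ts")
    case True
    then obtain bts lt where e: "ts = bts @ [lt]" by (cases ts rule: rev_cases) auto
    with True have lb: "2 \<le> length bts" by simp
    then have bne: "bts \<noteq> []" by auto
    have vb: "\<forall>s\<in>set bts. valid s" "valid lt" using ts e by auto
    let ?x = "Node bts" and ?y = "Node [Leaf, lt]"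
    have nx: "nl ?x" using lb vb by (simp add: nl_def)
    have ny: "nl ?y" using vb by (simp add: nl_def)
    have sb: "2 \<le> sum_list (map leaves bts)"
    proof -
      obtain a b r where "bts = a # b # r" using lb by (cases bts rule: remdups_adj.cases) auto
      then show ?thesis using vb leaves_pos[of a] leaves_pos[of b] by auto
    qed
    have "tp 1 ?x ?y = (H1 (butlast bts) (tp 3 (last bts) Leaf) [lt] :: 'k vec)"
      using bne by (simp add: tp1_gen)
    also have "\<dots> = tvec t"
    proof -
      obtain bb lb where "bts = bb @ [lb]" using bne by (cases bts rule: rev_cases) auto
      then show ?thesis using t e by simp
    qed
    finally have "tp 1 ?x ?y = (tvec t :: 'k vec)" .
    moreover have "leaves ?x < leaves t" "leaves ?y < leaves t"
      using t e sb leaves_pos[OF vb(2)] by auto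
    ultimately show ?thesis using nx ny by (intro exI[of _ ?x] exI[of _ ?y] exI[of _ 1]) auto
  next
    case False
    with ts have "length ts = 2" by simp
    then obtain a b where ab: "ts = [a, b]" by (auto simp: numeral_2_eq_2 length_Suc_conv)
    have va: "valid a" "valid b" using ts ab by auto
    show ?thesis
    proof (cases "b = Leaf")
      case False
      let ?x = "Node [a, Leaf]"
      have nx: "nl ?x" using va by (simp add: nl_def)
      have ny: "nl b" using va False by (simp add: nl_def)
      have "tp 0 ?x b = (H1 [a] (tp 3 Leaf b) [] :: 'k vec)"
        using ny by (simp add: tp0_gen nl_kids_ne nl_not_Leaf)
      then have "tp 0 ?x b = (tvec t :: 'k vec)" using t ab by simp
      moreover have "leaves ?x < leaves t" "leaves b < leaves t"
        using t ab nl_leaves[OF ny] leaves_pos[OF va(1)] by auto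
      ultimately show ?thesis using nx ny by (intro exI[of _ ?x] exI[of _ b] exI[of _ 0]) auto
    next
      case True
      then have "a \<noteq> Leaf" using l t ab by auto
      then have nx: "nl a" using va by (simp add: nl_def)
      have ny: "nl Yt" by (simp add: nl_def)
      have "tp 2 a Yt = (H1 [] (tp 3 a Leaf) [Leaf] :: 'k vec)"
        using nx by (simp add: tp2_gen nl_kids_ne nl_not_Leaf)
      then have "tp 2 a Yt = (tvec t :: 'k vec)" using t ab True by simp
      moreover have "leaves a < leaves t" "leaves Yt < leaves t"
        using t ab True nl_leaves[OF nx] by auto
      ultimately show ?thesis using nx ny by (intro exI[of _ a] exI[of _ Yt] exI[of _ 2]) auto
    qed
  qed
qed

lemma uniq_tree:
  assumes lin: "linear_A D" and g: "graded_connected_bialgebra D" and c: "tridendriform_compatible (D :: 'k::field vec \<Rightarrow> 'k vec2)"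
  shows "valid t \<Longrightarrow> D (tvec t) = Delta_tree t"
proof (induction "leaves t" arbitrary: t rule: less_induct)
  case less
  have D1: "D unitA = tens unitA unitA" using g by (simp add: graded_connected_bialgebra_def)
  have De: "\<And>a. a \<in> Aspace \<Longrightarrow> eps_id (D a) = a \<and> id_eps (D a) = a" using g by (simp add: graded_connected_bialgebra_def)
  have Dg: "\<And>n a. a \<in> Aspace \<Longrightarrow> homog n a \<Longrightarrow> (\<forall>(s, t)\<in>Poly_Mapping.keys (D a). deg s + deg t = n)"
    using g unfolding graded_connected_bialgebra_def by blast
  have DA: "\<And>a. a \<in> Aspace \<Longrightarrow> D a \<in> A2space" using lin by (simp add: linear_A_def)
  consider "t = Leaf" | "t = Yt" | "3 \<le> leaves t"
  proof -
    have "1 \<le> leaves t" using leaves_pos[OF less.prems] .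
    then consider "leaves t = 1" | "leaves t = 2" | "3 \<le> leaves t" by linarith
    then show ?thesis
    proof cases
      case 1
      then have "t = Leaf" using valid_leaves_1[OF less.prems] by simp
      then show ?thesis by (rule that(1))
    next
      case 2
      then have "t = Yt" using valid_leaves_2[OF less.prems] by simp
      then show ?thesis by (rule that(2))
    next
      case 3
      then show ?thesis by (rule that(3))
    qed
  qed
  then show ?case
  proof cases
    case 1
    then show ?thesis using D1 by (simp add: Delta_tree_Leaf unitA_def)
  next
    case 2
    have vY: "valid Yt" by simp
    have hY: "homog 1 (tvec Yt :: 'k vec)" by (simp add: homog_def deg_def)
    have kD: "Poly_Mapping.keys (D (tvec Yt)) \<subseteq> {(Leaf, Yt), (Yt, Leaf)}"
    proof
      fix u assume u: "u \<in> Poly_Mapping.keys (D (tvec Yt))"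
      obtain s r where ur: "u = (s, r)" by (cases u)
      have "valid s" "valid r" using DA[OF tvec_Aspace[OF vY]] u ur by (auto simp: A2space_def)
      moreover have "deg s + deg r = 1" using Dg[OF tvec_Aspace[OF vY] hY] u ur by auto
      ultimately have "leaves s + leaves r = 3" using leaves_pos[of s] leaves_pos[of r] by (simp add: deg_def)
      then show "u \<in> {(Leaf, Yt), (Yt, Leaf)}" using Y_keys \<open>valid s\<close> \<open>valid r\<close> ur by blast
    qed
    have kT: "Poly_Mapping.keys (Delta_tree Yt :: 'k vec2) \<subseteq> {(Leaf, Yt), (Yt, Leaf)}"
    proof
      fix u assume u: "u \<in> Poly_Mapping.keys (Delta_tree Yt :: 'k vec2)"
      obtain s r where ur: "u = (s, r)" by (cases u)
      have "valid s" "valid r" "leaves s + leaves r = 3" using Delta_keys[OF vY, of s r, where 'k='k] u ur by auto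
      then show "u \<in> {(Leaf, Yt), (Yt, Leaf)}" using Y_keys ur by blast
    qed
    have "D (tvec Yt) = Poly_Mapping.single (Leaf, Yt) 1 + Poly_Mapping.single (Yt, Leaf) 1"
      using Y_determined[OF kD] De[OF tvec_Aspace[OF vY]] by blast
    moreover have "Delta_tree Yt = Poly_Mapping.single (Leaf, Yt) 1 + (Poly_Mapping.single (Yt, Leaf) 1 :: 'k vec2)"
      using Y_determined[OF kT] eps_id_Delta_tree[OF vY] id_eps_Delta_tree[OF vY] by blast
    ultimately show ?thesis using 2 by simp
  next
    case 3
    obtain x y op where d: "op < 3" "nl x" "nl y" "leaves x < leaves t" "leaves y < leaves t" "tp op x y = (tvec t :: 'k vec)"
      using decompose_tree[OF less.prems 3] by blast
    have Ax: "tvec x \<in> Aplus" and Ay: "tvec y \<in> Aplus" using d(2,3) by (auto simp: Aplus_def nl_def)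
    have "D (tvec t) = D (prodA op (tvec x) (tvec y))" using d(6) by simp
    also have "\<dots> = barprod op (D (tvec x)) (D (tvec y))"
      using c Ax Ay d(1) unfolding tridendriform_compatible_def by blast
    also have "\<dots> = barprod op (Delta_tree x) (Delta_tree y)"
      using less.hyps[OF d(4)] less.hyps[OF d(5)] d(2,3) by (simp add: nl_def)
    also have "\<dots> = Delta_cut (tp op x y)"
      using compat_tree[OF d(2,3,1), where 'k='k] by simp
    also have "\<dots> = Delta_tree t" using d(6) by simp
    finally show ?thesis .
  qed
qed

lemma lin_sum_D:
  assumes lin: "linear_A D"
  shows "finite K \<Longrightarrow> (\<forall>t\<in>K. valid t) \<Longrightarrow> D (\<Sum>t\<in>K. scale (c t) (tvec t)) = (\<Sum>t\<in>K. scale (c t) (D (tvec t :: 'k::field vec)) :: 'k vec2)"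
proof (induction K rule: finite_induct)
  case empty
  have z: "(0::'k vec) \<in> Aspace" by (simp add: Aspace_def)
  have "D (scale 0 0) = scale 0 (D 0)" using lin z unfolding linear_A_def by blast
  then show ?case by simp
next
  case (insert t K)
  have A1: "scale (c t) (tvec t) \<in> Aspace" using insert keys_scale[of "c t" "tvec t :: 'k vec"]
    by (auto simp: Aspace_def)
  have A2: "(\<Sum>t\<in>K. scale (c t) (tvec t)) \<in> (Aspace :: 'k vec set)"
  proof -
    have "Poly_Mapping.keys (\<Sum>t\<in>K. scale (c t) (tvec t) :: 'k vec) \<subseteq> K"
    proof
      fix w assume "w \<in> Poly_Mapping.keys (\<Sum>t\<in>K. scale (c t) (tvec t) :: 'k vec)"
      then have "(\<Sum>t\<in>K. c t * Poly_Mapping.lookup (tvec t :: 'k vec) w) \<noteq> 0" by (simp add: in_keys_iff lookup_sum)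
      then obtain t where "t \<in> K" "Poly_Mapping.lookup (tvec t :: 'k vec) w \<noteq> 0"
        by (metis (mono_tags, lifting) mult_zero_right sum.neutral)
      then show "w \<in> K" by (auto simp: lookup_tvec split: if_splits)
    qed
    then show ?thesis using insert by (auto simp: Aspace_def)
  qed
  have "D (\<Sum>t\<in>insert t K. scale (c t) (tvec t)) = D (scale (c t) (tvec t) + (\<Sum>t\<in>K. scale (c t) (tvec t)))"
    using insert by simp
  also have "\<dots> = D (scale (c t) (tvec t)) + D (\<Sum>t\<in>K. scale (c t) (tvec t))"
    using lin A1 A2 by (simp add: linear_A_def)
  also have "\<dots> = scale (c t) (D (tvec t)) + (\<Sum>t\<in>K. scale (c t) (D (tvec t)))"
    using lin insert by (simp add: linear_A_def tvec_Aspace)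
  finally show ?case using insert by simp
qed

theorem uniqueness:
  assumes "linear_A D" "graded_connected_bialgebra D" "tridendriform_compatible (D :: 'k::field vec \<Rightarrow> 'k vec2)"
  shows "\<forall>a\<in>Aspace. D a = Delta_cut a"
proof
  fix a :: "'k vec" assume a: "a \<in> Aspace"
  have "a = (\<Sum>t\<in>Poly_Mapping.keys a. scale (Poly_Mapping.lookup a t) (tvec t))"
    using lin_id_tvec[of a] by (simp add: lin_def)
  then have "D a = (\<Sum>t\<in>Poly_Mapping.keys a. scale (Poly_Mapping.lookup a t) (D (tvec t)))"
    using lin_sum_D[OF assms(1), of "Poly_Mapping.keys a" "Poly_Mapping.lookup a"] a by (auto simp: Aspace_def)
  also have "\<dots> = (\<Sum>t\<in>Poly_Mapping.keys a. scale (Poly_Mapping.lookup a t) (Delta_tree t))"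
    using uniq_tree[OF assms] a by (intro sum.cong refl) (auto dest: AspaceD)
  also have "\<dots> = Delta_cut a" by (simp add: Delta_cut_def)
  finally show "D a = Delta_cut a" .
qed

theorem mainTheorem6:
  shows "linear_A (Delta_cut :: 'k::field vec \<Rightarrow> 'k vec2) \<and>
         graded_connected_bialgebra (Delta_cut :: 'k vec \<Rightarrow> 'k vec2) \<and>
         tridendriform_compatible (Delta_cut :: 'k vec \<Rightarrow> 'k vec2) \<and>
         (\<forall>D :: 'k vec \<Rightarrow> 'k vec2. linear_A D \<and> graded_connected_bialgebra D \<and>
            tridendriform_compatible D \<longrightarrow> (\<forall>a\<in>Aspace. D a = Delta_cut a))"
  using linear_Delta gcb_Delta Delta_compat uniqueness by blast

end
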